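(* Fix a psi-calculus with inputs of the form $\underline{M}(x).P$ (no pattern matching). A ternary relation $\mathcal R$ between assertions and pairs of agents is a (late-semantics) bisimulation in the sense defined below if and only if it is an early-semantics bisimulation in the sense defined below.
   Context: Names, nominal sets, support $\mathrm n(X)$, freshness $a\#X$, equivariance and substitution $X[\tilde a:=\tilde Y]$ are as usual in nominal logic. A psi-calculus is given by nominal data types ${\rm T}$ (terms), ${\rm C}$ (conditions), ${\rm A}$ (assertions), equivariant $\leftrightarrow:{\rm T}\times{\rm T}\to{\rm C}$, $\otimes:{\rm A}\times{\rm A}\to{\rm A}$, $\mathbf 1\in{\rm A}$, $\vdash\subseteq{\rm A}\times{\rm C}$, with $\Psi\simeq\Psi'$ iff they entail the same conditions, satisfying: $\leftrightarrow$ symmetric and transitive under every $\Psi$; weakening $\Psi\vdash\varphi\Rightarrow\Psi\otimes\Psi'\vdash\varphi$; $\Psi\simeq\Psi'\Rightarrow\Psi\otimes\Psi''\simeq\Psi'\otimes\Psi''$; $\Psi\otimes\mathbf 1\simeq\Psi$; associativity and commutativity of $\otimes$ up to $\simeq$. Frames $(\nu\tilde b)\Psi$ (names $\tilde b$ bound in $\Psi$), with composition $(\nu\tilde b_1)\Psi_1\otimes(\nu\tilde b_2)\Psi_2=(\nu\tilde b_1\tilde b_2)(\Psi_1\otimes\Psi_2)$ (bound names chosen fresh); $F\vdash\varphi$ iff some alpha-variant $(\nu\tilde b)\Psi$ of $F$ has $\tilde b\#\varphi$ and $\Psi\vdash\varphi$; $F\simeq G$ iff $\forall\varphi.\ F\vdash\varphi\Leftrightarrow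 G\vdash\varphi$. Agents: $\overline MN.P$, $\underline M(x).P$, $\mathbf{case}\ \varphi_1:P_1[]\cdots[]\varphi_n:P_n$, $(\nu a)P$, $P\mid Q$, $!P$ (no unguarded assertions in $P$), $(\!|\Psi|\!)$; frame $\mathcal F(P)$: $\mathbf 1$ for prefixes, case and replication, $\Psi$ for $(\!|\Psi|\!)$, $\mathcal F(P)\otimes\mathcal F(Q)$ for $P\mid Q$, $(\nu b)\mathcal F(P)$ for $(\nu b)P$. Late semantics $\Psi\rhd P\xrightarrow{\alpha}P'$ with actions $\overline M(\nu\tilde a)N$, $\underline M(x)$, $\tau$: In: $\Psi\vdash M\leftrightarrow K\Rightarrow\Psi\rhd\underline M(x).P\xrightarrow{\underline K(x)}P$; Out: $\Psi\vdash M\leftrightarrow K\Rightarrow\Psi\rhd\overline MN.P\xrightarrow{\overline KN}P$; Case: $\Psi\rhd P_i\xrightarrow{\alpha}P'$, $\Psi\vdash\varphi_i\Rightarrow\Psi\rhd\mathbf{case}\,\tilde\varphi:\tilde P\xrightarrow{\alpha}P'$; Com: with $\mathcal F(P)=(\nu\tilde b_P)\Psi_P$, $\mathcal F(Q)=(\nu\tilde b_Q)\Psi_Q$ suitably fresh, $\Psi_Q\otimes\Psi\rhd P\xrightarrow{\overline M(\nu\tilde a)N}P'$, $\Psi_P\otimes\Psi\rhd Q\xrightarrow{\underline K(x)}Q'$, $\Psi\otimes\Psi_P\otimes\Psi_Q\vdash M\leftrightarrow K$, $\tilde a\#Q$ $\Rightarrow$ $\Psi\rhd P\mid Q\xrightarrow{\tau}(\nu\tilde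 a)(P'\mid Q'[x:=N])$ (and symmetric); Par: $\Psi_Q\otimes\Psi\rhd P\xrightarrow{\alpha}P'$, $\mathrm{bn}(\alpha)\#Q$ ($\tilde b_Q\#\Psi,P,\alpha$) $\Rightarrow\Psi\rhd P\mid Q\xrightarrow{\alpha}P'\mid Q$ (and symmetric); Scope: $b\#\alpha,\Psi$; Open: $\Psi\rhd P\xrightarrow{\overline M(\nu\tilde a)N}P'$, $b\#\tilde a,\Psi,M$, $b\in\mathrm n(N)\Rightarrow\Psi\rhd(\nu b)P\xrightarrow{\overline M(\nu\tilde a\cup\{b\})N}P'$; Rep: $\Psi\rhd P\mid !P\xrightarrow{\alpha}P'\Rightarrow\Psi\rhd !P\xrightarrow{\alpha}P'$. Here $\mathrm{bn}(\overline M(\nu\tilde a)N)=\tilde a$, $\mathrm{bn}(\underline M(x))=\{x\}$, $\mathrm{bn}(\tau)=\emptyset$; transitions are identified up to alpha-conversion of bound names. The early semantics is the same except In gives $\Psi\rhd\underline M(x).P\xrightarrow{\underline KN}P[x:=N]$ for all $N$, and Com uses $\Psi_P\otimes\Psi\rhd Q\xrightarrow{\underline KN}Q'$ yielding $(\nu\tilde a)(P'\mid Q')$. (Late-semantics) bisimulation: a ternary relation $\mathcal R$ such that $\mathcal R(\Psi,P,Q)$ implies (1) $\Psi\otimes\mathcal F(P)\simeq\Psi\otimes\mathcal F(Q)$; (2) $\mathcal R(\Psi,Q,P)$; (3) $\mathcal R(\Psi\otimes\Psi',P,Q)$ for all $\Psi'$; (4) for all $\alpha,P'$ with $\mathrm{bn}(\alpha)\#\Psi,Q$: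 (a) if $\alpha=\underline M(x)$ and $\Psi\rhd P\xrightarrow{\alpha}P'$ (late) then for all $L$ there is $Q'$ with $\Psi\rhd Q\xrightarrow{\alpha}Q'$ (late) and $\mathcal R(\Psi,P'[x:=L],Q'[x:=L])$; (b) otherwise, $\Psi\rhd P\xrightarrow{\alpha}P'$ (late) implies some $Q'$ with $\Psi\rhd Q\xrightarrow{\alpha}Q'$ (late) and $\mathcal R(\Psi,P',Q')$. Early-semantics bisimulation: the same conditions (1)–(3), and (4') for all early actions $\alpha$ (outputs, $\underline MN$, $\tau$) and $P'$ with $\mathrm{bn}(\alpha)\#\Psi,Q$: $\Psi\rhd P\xrightarrow{\alpha}P'$ (early) implies there is $Q'$ with $\Psi\rhd Q\xrightarrow{\alpha}Q'$ (early) and $\mathcal R(\Psi,P',Q')$. *)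

theory Defs
  imports Main
begin

type_synonym name = nat

definition swap_name :: "name \<Rightarrow> name \<Rightarrow> name \<Rightarrow> name" where
  "swap_name a b c = (if c = a then b else if c = b then a else c)"

text \<open>Types carrying a name-swapping action (the nominal-set axioms are
  imposed separately, in the psi-calculus predicate, for the parameter types).\<close>
class pt =
  fixes swp :: "name \<Rightarrow> name \<Rightarrow> 'a \<Rightarrow> 'a"

instantiation nat :: pt begin
definition "swp a b (c::nat) = swap_name a b c"
instance ..
end

instantiation list :: (pt) pt begin
definition "swp a b (xs::'a list) = map (swp a b) xs"
instance ..
end

instantiation prod :: (pt, pt) pt begin
definition "swp a b (p::'a \<times> 'b) = (swp a b (fst p), swp a b (snd p))"
instance ..
end

definition supp :: "'x::pt \<Rightarrow> name set" where
  "supp x = {a. infinite {b. swp a b x \<noteq> x}}"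

definition fresh :: "name \<Rightarrow> 'x::pt \<Rightarrow> bool" where
  "fresh a x \<longleftrightarrow> a \<notin> supp x"

definition fresh_star :: "name set \<Rightarrow> 'x::pt \<Rightarrow> bool" where
  "fresh_star A x \<longleftrightarrow> (\<forall>a\<in>A. fresh a x)"

definition nominal_type :: "'x::pt itself \<Rightarrow> bool" where
  "nominal_type _ \<longleftrightarrow>
     (\<forall>a (x::'x). swp a a x = x) \<and>
     (\<forall>a b (x::'x). swp a b (swp a b x) = x) \<and>
     (\<forall>a b c d (x::'x). swp a b (swp c d x) = swp (swap_name a b c) (swap_name a b d) (swp a b x)) \<and>
     (\<forall>x::'x. finite (supp x))"

text \<open>Permutation (b1 a1)...(bn an) given by a list of pairs.\<close>
definition perm_swaps :: "(name \<times> name) list \<Rightarrow> 'x::pt \<Rightarrow> 'x" where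
  "perm_swaps ps x = foldr (\<lambda>(b, a) y. swp b a y) ps x"

record ('t, 'c, 'a) psi =
  chan_eq :: "'t \<Rightarrow> 't \<Rightarrow> 'c"
  acomp :: "'a \<Rightarrow> 'a \<Rightarrow> 'a"
  aunit :: 'a
  entails :: "'a \<Rightarrow> 'c \<Rightarrow> bool"
  subT :: "'t \<Rightarrow> name list \<Rightarrow> 't list \<Rightarrow> 't"
  subC :: "'c \<Rightarrow> name list \<Rightarrow> 't list \<Rightarrow> 'c"
  subA :: "'a \<Rightarrow> name list \<Rightarrow> 't list \<Rightarrow> 'a"

text \<open>Standard requirements on a substitution function X[xs:=Ts]
  (defined for distinct xs of the same length as Ts).\<close>
definition subst_ok :: "('x::pt \<Rightarrow> name list \<Rightarrow> 't::pt list \<Rightarrow> 'x) \<Rightarrow> bool" where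
  "subst_ok sb \<longleftrightarrow>
     (\<forall>a b X xs Ts. swp a b (sb X xs Ts) = sb (swp a b X) (swp a b xs) (swp a b Ts)) \<and>
     (\<forall>X xs Ts b. distinct xs \<and> length xs = length Ts \<and> set xs \<subseteq> supp X \<and> b \<in> supp Ts
         \<longrightarrow> b \<in> supp (sb X xs Ts)) \<and>
     (\<forall>X xs bs Ts. distinct xs \<and> distinct bs \<and> length xs = length Ts \<and> length bs = length xs \<and>
         fresh_star (set bs) X \<and> set bs \<inter> set xs = {}
         \<longrightarrow> sb X xs Ts = sb (perm_swaps (zip bs xs) X) bs Ts) \<and>
     (\<forall>X xs Ts. distinct xs \<and> length xs = length Ts \<and> fresh_star (set xs) X \<longrightarrow> sb X xs Ts = X)"

definition aequiv :: "('t, 'c, 'a) psi \<Rightarrow> 'a \<Rightarrow> 'a \<Rightarrow> bool" where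
  "aequiv S \<Psi> \<Psi>' \<longleftrightarrow> (\<forall>\<phi>. entails S \<Psi> \<phi> \<longleftrightarrow> entails S \<Psi>' \<phi>)"

definition psi_calculus :: "('t::pt, 'c::pt, 'a::pt) psi \<Rightarrow> bool" where
  "psi_calculus S \<longleftrightarrow>
     nominal_type TYPE('t) \<and> nominal_type TYPE('c) \<and> nominal_type TYPE('a) \<and>
     \<comment> \<open>equivariance\<close>
     (\<forall>a b M N. swp a b (chan_eq S M N) = chan_eq S (swp a b M) (swp a b N)) \<and>
     (\<forall>a b \<Psi> \<Psi>'. swp a b (acomp S \<Psi> \<Psi>') = acomp S (swp a b \<Psi>) (swp a b \<Psi>')) \<and>
     (\<forall>a b. swp a b (aunit S) = aunit S) \<and>
     (\<forall>a b \<Psi> \<phi>. entails S \<Psi> \<phi> \<longrightarrow> entails S (swp a b \<Psi>) (swp a b \<phi>)) \<and>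
     subst_ok (subT S) \<and> subst_ok (subC S) \<and> subst_ok (subA S) \<and>
     \<comment> \<open>channel equivalence symmetric and transitive\<close>
     (\<forall>\<Psi> M N. entails S \<Psi> (chan_eq S M N) \<longrightarrow> entails S \<Psi> (chan_eq S N M)) \<and>
     (\<forall>\<Psi> M N L. entails S \<Psi> (chan_eq S M N) \<and> entails S \<Psi> (chan_eq S N L)
        \<longrightarrow> entails S \<Psi> (chan_eq S M L)) \<and>
     \<comment> \<open>weakening\<close>
     (\<forall>\<Psi> \<Psi>' \<phi>. entails S \<Psi> \<phi> \<longrightarrow> entails S (acomp S \<Psi> \<Psi>') \<phi>) \<and>
     \<comment> \<open>compositionality, identity, associativity, commutativity\<close>
     (\<forall>\<Psi> \<Psi>' \<Psi>''. aequiv S \<Psi> \<Psi>' \<longrightarrow> aequiv S (acomp S \<Psi> \<Psi>'') (acomp S \<Psi>' \<Psi>'')) \<and>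
     (\<forall>\<Psi>. aequiv S (acomp S \<Psi> (aunit S)) \<Psi>) \<and>
     (\<forall>\<Psi> \<Psi>' \<Psi>''. aequiv S (acomp S (acomp S \<Psi> \<Psi>') \<Psi>'') (acomp S \<Psi> (acomp S \<Psi>' \<Psi>''))) \<and>
     (\<forall>\<Psi> \<Psi>'. aequiv S (acomp S \<Psi> \<Psi>') (acomp S \<Psi>' \<Psi>))"

datatype ('t, 'c, 'a) ragent =
    ROut 't 't "('t, 'c, 'a) ragent"
  | RIn 't name "('t, 'c, 'a) ragent"
  | RCase "('c \<times> ('t, 'c, 'a) ragent) list"
  | RRes name "('t, 'c, 'a) ragent"
  | RPar "('t, 'c, 'a) ragent" "('t, 'c, 'a) ragent"
  | RBang "('t, 'c, 'a) ragent"
  | RAss 'a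

primrec rswp :: "name \<Rightarrow> name \<Rightarrow> ('t::pt, 'c::pt, 'a::pt) ragent \<Rightarrow> ('t, 'c, 'a) ragent" where
  "rswp a b (ROut M N P) = ROut (swp a b M) (swp a b N) (rswp a b P)"
| "rswp a b (RIn M x P) = RIn (swp a b M) (swap_name a b x) (rswp a b P)"
| "rswp a b (RCase cs) = RCase (map (map_prod (swp a b) (rswp a b)) cs)"
| "rswp a b (RRes x P) = RRes (swap_name a b x) (rswp a b P)"
| "rswp a b (RPar P Q) = RPar (rswp a b P) (rswp a b Q)"
| "rswp a b (RBang P) = RBang (rswp a b P)"
| "rswp a b (RAss \<Psi>) = RAss (swp a b \<Psi>)"

instantiation ragent :: (pt, pt, pt) pt begin
definition "swp a b (P::('a,'b,'c) ragent) = rswp a b P"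
instance ..
end

inductive ralpha :: "('t::pt, 'c::pt, 'a::pt) ragent \<Rightarrow> ('t, 'c, 'a) ragent \<Rightarrow> bool" where
  al_refl: "ralpha P P"
| al_sym: "ralpha P Q \<Longrightarrow> ralpha Q P"
| al_trans: "ralpha P Q \<Longrightarrow> ralpha Q R \<Longrightarrow> ralpha P R"
| al_res: "fresh b P \<Longrightarrow> ralpha (RRes a P) (RRes b (swp a b P))"
| al_in: "fresh b P \<Longrightarrow> ralpha (RIn M a P) (RIn M b (swp a b P))"
| al_cout: "ralpha P Q \<Longrightarrow> ralpha (ROut M N P) (ROut M N Q)"
| al_cin: "ralpha P Q \<Longrightarrow> ralpha (RIn M x P) (RIn M x Q)"
| al_ccase: "ralpha P Q \<Longrightarrow> ralpha (RCase (xs @ (\<phi>, P) # ys)) (RCase (xs @ (\<phi>, Q) # ys))"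
| al_cres: "ralpha P Q \<Longrightarrow> ralpha (RRes x P) (RRes x Q)"
| al_cpar1: "ralpha P Q \<Longrightarrow> ralpha (RPar P R) (RPar Q R)"
| al_cpar2: "ralpha P Q \<Longrightarrow> ralpha (RPar R P) (RPar R Q)"
| al_cbang: "ralpha P Q \<Longrightarrow> ralpha (RBang P) (RBang Q)"

quotient_type (overloaded) ('t, 'c, 'a) agent = "('t::pt, 'c::pt, 'a::pt) ragent" / ralpha
  by (rule equivpI) (auto simp: reflp_def symp_def transp_def intro: ralpha.intros)

definition Out :: "'t \<Rightarrow> 't \<Rightarrow> ('t::pt, 'c::pt, 'a::pt) agent \<Rightarrow> ('t, 'c, 'a) agent" where
  "Out M N P = abs_agent (ROut M N (rep_agent P))"
definition In :: "'t \<Rightarrow> name \<Rightarrow> ('t::pt, 'c::pt, 'a::pt) agent \<Rightarrow> ('t, 'c, 'a) agent" where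
  "In M x P = abs_agent (RIn M x (rep_agent P))"
definition Case :: "('c \<times> ('t::pt, 'c::pt, 'a::pt) agent) list \<Rightarrow> ('t, 'c, 'a) agent" where
  "Case cs = abs_agent (RCase (map (map_prod id rep_agent) cs))"
definition Res :: "name \<Rightarrow> ('t::pt, 'c::pt, 'a::pt) agent \<Rightarrow> ('t, 'c, 'a) agent" where
  "Res x P = abs_agent (RRes x (rep_agent P))"
definition Par :: "('t::pt, 'c::pt, 'a::pt) agent \<Rightarrow> ('t, 'c, 'a) agent \<Rightarrow> ('t, 'c, 'a) agent" where
  "Par P Q = abs_agent (RPar (rep_agent P) (rep_agent Q))"
definition Bang :: "('t::pt, 'c::pt, 'a::pt) agent \<Rightarrow> ('t, 'c, 'a) agent" where
  "Bang P = abs_agent (RBang (rep_agent P))"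
definition Ass :: "'a \<Rightarrow> ('t::pt, 'c::pt, 'a::pt) agent" where
  "Ass \<Psi> = abs_agent (RAss \<Psi>)"

instantiation agent :: (pt, pt, pt) pt begin
definition "swp a b (P::('a,'b,'c) agent) = abs_agent (swp a b (rep_agent P))"
instance ..
end

primrec resl :: "name list \<Rightarrow> ('t::pt, 'c::pt, 'a::pt) agent \<Rightarrow> ('t, 'c, 'a) agent" where
  "resl [] P = P"
| "resl (a # as) P = Res a (resl as P)"

text \<open>Well-formedness: replicated agents contain no unguarded assertions
  (an assertion is guarded when it occurs under an input or output prefix).\<close>
primrec rnoass :: "('t, 'c, 'a) ragent \<Rightarrow> bool" where
  "rnoass (ROut M N P) = True"
| "rnoass (RIn M x P) = True"
| "rnoass (RCase cs) = list_all snd (map (map_prod id rnoass) cs)"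
| "rnoass (RRes x P) = rnoass P"
| "rnoass (RPar P Q) = (rnoass P \<and> rnoass Q)"
| "rnoass (RBang P) = rnoass P"
| "rnoass (RAss \<Psi>) = False"

primrec rwf :: "('t, 'c, 'a) ragent \<Rightarrow> bool" where
  "rwf (ROut M N P) = rwf P"
| "rwf (RIn M x P) = rwf P"
| "rwf (RCase cs) = list_all snd (map (map_prod id rwf) cs)"
| "rwf (RRes x P) = rwf P"
| "rwf (RPar P Q) = (rwf P \<and> rwf Q)"
| "rwf (RBang P) = (rnoass P \<and> rwf P)"
| "rwf (RAss \<Psi>) = True"

definition wf_agent :: "('t::pt, 'c::pt, 'a::pt) agent \<Rightarrow> bool" where
  "wf_agent P \<longleftrightarrow> rwf (rep_agent P)"

text \<open>rframe S r bs \<Psi>: the raw agent r has frame (\<nu>bs)\<Psi>, where bound names of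
  the frames of parallel components are kept apart (capture avoidance).\<close>
inductive rframe :: "('t::pt, 'c::pt, 'a::pt) psi \<Rightarrow> ('t, 'c, 'a) ragent \<Rightarrow> name list \<Rightarrow> 'a \<Rightarrow> bool"
  for S where
  "rframe S (ROut M N P) [] (aunit S)"
| "rframe S (RIn M x P) [] (aunit S)"
| "rframe S (RCase cs) [] (aunit S)"
| "rframe S (RBang P) [] (aunit S)"
| "rframe S (RAss \<Psi>) [] \<Psi>"
| "rframe S P bs \<Psi> \<Longrightarrow> rframe S (RRes x P) (x # bs) \<Psi>"
| "rframe S P bs1 \<Psi>1 \<Longrightarrow> rframe S Q bs2 \<Psi>2 \<Longrightarrow> fresh_star (set bs1) Q \<Longrightarrow>
   fresh_star (set bs2) P \<Longrightarrow> set bs1 \<inter> set bs2 = {} \<Longrightarrow>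
   rframe S (RPar P Q) (bs1 @ bs2) (acomp S \<Psi>1 \<Psi>2)"

text \<open>frame_of S P bs \<Psi>: (\<nu>bs)\<Psi> is an alpha-variant of the frame F(P).\<close>
definition frame_of :: "('t::pt, 'c::pt, 'a::pt) psi \<Rightarrow> ('t, 'c, 'a) agent \<Rightarrow> name list \<Rightarrow> 'a \<Rightarrow> bool" where
  "frame_of S P bs \<Psi> \<longleftrightarrow> (\<exists>r. abs_agent r = P \<and> rframe S r bs \<Psi>)"

definition frame_ent :: "('t::pt, 'c::pt, 'a::pt) psi \<Rightarrow> 'a \<Rightarrow> ('t, 'c, 'a) agent \<Rightarrow> 'c \<Rightarrow> bool" where
  "frame_ent S \<Psi> P \<phi> \<longleftrightarrow>
     (\<exists>bs \<Psi>P. frame_of S P bs \<Psi>P \<and> fresh_star (set bs) \<Psi> \<and> fresh_star (set bs) \<phi> \<and>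
        entails S (acomp S \<Psi> \<Psi>P) \<phi>)"

definition static_eq :: "('t::pt, 'c::pt, 'a::pt) psi \<Rightarrow> 'a \<Rightarrow> ('t, 'c, 'a) agent \<Rightarrow> ('t, 'c, 'a) agent \<Rightarrow> bool" where
  "static_eq S \<Psi> P Q \<longleftrightarrow> (\<forall>\<phi>. frame_ent S \<Psi> P \<phi> \<longleftrightarrow> frame_ent S \<Psi> Q \<phi>)"

inductive asubst :: "('t::pt, 'c::pt, 'a::pt) psi \<Rightarrow> ('t, 'c, 'a) agent \<Rightarrow> name \<Rightarrow> 't \<Rightarrow> ('t, 'c, 'a) agent \<Rightarrow> bool"
  for S where
  "asubst S P x L P' \<Longrightarrow> asubst S (Out M N P) x L (Out (subT S M [x] [L]) (subT S N [x] [L]) P')"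
| "asubst S P x L P' \<Longrightarrow> y \<noteq> x \<Longrightarrow> fresh y L \<Longrightarrow>
   asubst S (In M y P) x L (In (subT S M [x] [L]) y P')"
| "length cs' = length cs \<Longrightarrow>
   (\<forall>i < length cs. fst (cs' ! i) = subC S (fst (cs ! i)) [x] [L] \<and> asubst S (snd (cs ! i)) x L (snd (cs' ! i))) \<Longrightarrow>
   asubst S (Case cs) x L (Case cs')"
| "asubst S P x L P' \<Longrightarrow> y \<noteq> x \<Longrightarrow> fresh y L \<Longrightarrow> asubst S (Res y P) x L (Res y P')"
| "asubst S P x L P' \<Longrightarrow> asubst S Q x L Q' \<Longrightarrow> asubst S (Par P Q) x L (Par P' Q')"
| "asubst S P x L P' \<Longrightarrow> asubst S (Bang P) x L (Bang P')"
| "asubst S (Ass \<Psi>) x L (Ass (subA S \<Psi> [x] [L]))"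

definition subst_agent :: "('t::pt, 'c::pt, 'a::pt) psi \<Rightarrow> ('t, 'c, 'a) agent \<Rightarrow> name \<Rightarrow> 't \<Rightarrow> ('t, 'c, 'a) agent" where
  "subst_agent S P x L = (THE P'. asubst S P x L P')"

text \<open>AOut M as N: output  M(\<nu>as)N;  AIn M x: late input M(x);
  AInE M N: early input  M N;  ATau: \<tau>.\<close>
datatype 't act = AOut 't "name list" 't | AIn 't name | AInE 't 't | ATau

instantiation act :: (pt) pt begin
primrec swp_act :: "name \<Rightarrow> name \<Rightarrow> 'a act \<Rightarrow> 'a act" where
  "swp_act a b (AOut M as N) = AOut (swp a b M) (swp a b as) (swp a b N)"
| "swp_act a b (AIn M x) = AIn (swp a b M) (swap_name a b x)"
| "swp_act a b (AInE M N) = AInE (swp a b M) (swp a b N)"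
| "swp_act a b ATau = ATau"
instance ..
end

primrec bn :: "'t act \<Rightarrow> name set" where
  "bn (AOut M as N) = set as"
| "bn (AIn M x) = {x}"
| "bn (AInE M N) = {}"
| "bn ATau = {}"

inductive ltrans :: "('t::pt, 'c::pt, 'a::pt) psi \<Rightarrow> 'a \<Rightarrow> ('t, 'c, 'a) agent \<Rightarrow> 't act \<Rightarrow> ('t, 'c, 'a) agent \<Rightarrow> bool"
  for S where
  l_in: "entails S \<Psi> (chan_eq S M K) \<Longrightarrow> ltrans S \<Psi> (In M x P) (AIn K x) P"
| l_out: "entails S \<Psi> (chan_eq S M K) \<Longrightarrow> ltrans S \<Psi> (Out M N P) (AOut K [] N) P"
| l_case: "ltrans S \<Psi> P \<alpha> P' \<Longrightarrow> (\<phi>, P) \<in> set cs \<Longrightarrow> entails S \<Psi> \<phi> \<Longrightarrow> ltrans S \<Psi> (Case cs) \<alpha> P'"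
| l_com1: "frame_of S P bsP \<Psi>P \<Longrightarrow> frame_of S Q bsQ \<Psi>Q \<Longrightarrow>
   fresh_star (set bsP) (\<Psi>, \<Psi>Q, P, Q, M, bsQ) \<Longrightarrow> fresh_star (set bsQ) (\<Psi>, \<Psi>P, P, Q, K) \<Longrightarrow>
   ltrans S (acomp S \<Psi>Q \<Psi>) P (AOut M as N) P' \<Longrightarrow>
   ltrans S (acomp S \<Psi>P \<Psi>) Q (AIn K x) Q' \<Longrightarrow>
   entails S (acomp S (acomp S \<Psi> \<Psi>P) \<Psi>Q) (chan_eq S M K) \<Longrightarrow> fresh_star (set as) Q \<Longrightarrow>
   ltrans S \<Psi> (Par P Q) ATau (resl as (Par P' (subst_agent S Q' x N)))"
| l_com2: "frame_of S P bsP \<Psi>P \<Longrightarrow> frame_of S Q bsQ \<Psi>Q \<Longrightarrow>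
   fresh_star (set bsP) (\<Psi>, \<Psi>Q, P, Q, M, bsQ) \<Longrightarrow> fresh_star (set bsQ) (\<Psi>, \<Psi>P, P, Q, K) \<Longrightarrow>
   ltrans S (acomp S \<Psi>Q \<Psi>) P (AIn M x) P' \<Longrightarrow>
   ltrans S (acomp S \<Psi>P \<Psi>) Q (AOut K as N) Q' \<Longrightarrow>
   entails S (acomp S (acomp S \<Psi> \<Psi>P) \<Psi>Q) (chan_eq S M K) \<Longrightarrow> fresh_star (set as) P \<Longrightarrow>
   ltrans S \<Psi> (Par P Q) ATau (resl as (Par (subst_agent S P' x N) Q'))"
| l_par1: "frame_of S Q bsQ \<Psi>Q \<Longrightarrow> fresh_star (set bsQ) (\<Psi>, P, \<alpha>) \<Longrightarrow>
   ltrans S (acomp S \<Psi>Q \<Psi>) P \<alpha> P' \<Longrightarrow> fresh_star (bn \<alpha>) Q \<Longrightarrow>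
   ltrans S \<Psi> (Par P Q) \<alpha> (Par P' Q)"
| l_par2: "frame_of S P bsP \<Psi>P \<Longrightarrow> fresh_star (set bsP) (\<Psi>, Q, \<alpha>) \<Longrightarrow>
   ltrans S (acomp S \<Psi>P \<Psi>) Q \<alpha> Q' \<Longrightarrow> fresh_star (bn \<alpha>) P \<Longrightarrow>
   ltrans S \<Psi> (Par P Q) \<alpha> (Par P Q')"
| l_scope: "ltrans S \<Psi> P \<alpha> P' \<Longrightarrow> fresh b \<alpha> \<Longrightarrow> fresh b \<Psi> \<Longrightarrow> ltrans S \<Psi> (Res b P) \<alpha> (Res b P')"
| l_open: "ltrans S \<Psi> P (AOut M (as @ cs) N) P' \<Longrightarrow> b \<notin> set as \<Longrightarrow> b \<notin> set cs \<Longrightarrow>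
   fresh b \<Psi> \<Longrightarrow> fresh b M \<Longrightarrow> b \<in> supp N \<Longrightarrow>
   ltrans S \<Psi> (Res b P) (AOut M (as @ b # cs) N) P'"
| l_rep: "ltrans S \<Psi> (Par P (Bang P)) \<alpha> P' \<Longrightarrow> ltrans S \<Psi> (Bang P) \<alpha> P'"

inductive etrans :: "('t::pt, 'c::pt, 'a::pt) psi \<Rightarrow> 'a \<Rightarrow> ('t, 'c, 'a) agent \<Rightarrow> 't act \<Rightarrow> ('t, 'c, 'a) agent \<Rightarrow> bool"
  for S where
  e_in: "entails S \<Psi> (chan_eq S M K) \<Longrightarrow> etrans S \<Psi> (In M x P) (AInE K N) (subst_agent S P x N)"
| e_out: "entails S \<Psi> (chan_eq S M K) \<Longrightarrow> etrans S \<Psi> (Out M N P) (AOut K [] N) P"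
| e_case: "etrans S \<Psi> P \<alpha> P' \<Longrightarrow> (\<phi>, P) \<in> set cs \<Longrightarrow> entails S \<Psi> \<phi> \<Longrightarrow> etrans S \<Psi> (Case cs) \<alpha> P'"
| e_com1: "frame_of S P bsP \<Psi>P \<Longrightarrow> frame_of S Q bsQ \<Psi>Q \<Longrightarrow>
   fresh_star (set bsP) (\<Psi>, \<Psi>Q, P, Q, M, bsQ) \<Longrightarrow> fresh_star (set bsQ) (\<Psi>, \<Psi>P, P, Q, K) \<Longrightarrow>
   etrans S (acomp S \<Psi>Q \<Psi>) P (AOut M as N) P' \<Longrightarrow>
   etrans S (acomp S \<Psi>P \<Psi>) Q (AInE K N) Q' \<Longrightarrow>
   entails S (acomp S (acomp S \<Psi> \<Psi>P) \<Psi>Q) (chan_eq S M K) \<Longrightarrow> fresh_star (set as) Q \<Longrightarrow>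
   etrans S \<Psi> (Par P Q) ATau (resl as (Par P' Q'))"
| e_com2: "frame_of S P bsP \<Psi>P \<Longrightarrow> frame_of S Q bsQ \<Psi>Q \<Longrightarrow>
   fresh_star (set bsP) (\<Psi>, \<Psi>Q, P, Q, M, bsQ) \<Longrightarrow> fresh_star (set bsQ) (\<Psi>, \<Psi>P, P, Q, K) \<Longrightarrow>
   etrans S (acomp S \<Psi>Q \<Psi>) P (AInE M N) P' \<Longrightarrow>
   etrans S (acomp S \<Psi>P \<Psi>) Q (AOut K as N) Q' \<Longrightarrow>
   entails S (acomp S (acomp S \<Psi> \<Psi>P) \<Psi>Q) (chan_eq S M K) \<Longrightarrow> fresh_star (set as) P \<Longrightarrow>
   etrans S \<Psi> (Par P Q) ATau (resl as (Par P' Q'))"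
| e_par1: "frame_of S Q bsQ \<Psi>Q \<Longrightarrow> fresh_star (set bsQ) (\<Psi>, P, \<alpha>) \<Longrightarrow>
   etrans S (acomp S \<Psi>Q \<Psi>) P \<alpha> P' \<Longrightarrow> fresh_star (bn \<alpha>) Q \<Longrightarrow>
   etrans S \<Psi> (Par P Q) \<alpha> (Par P' Q)"
| e_par2: "frame_of S P bsP \<Psi>P \<Longrightarrow> fresh_star (set bsP) (\<Psi>, Q, \<alpha>) \<Longrightarrow>
   etrans S (acomp S \<Psi>P \<Psi>) Q \<alpha> Q' \<Longrightarrow> fresh_star (bn \<alpha>) P \<Longrightarrow>
   etrans S \<Psi> (Par P Q) \<alpha> (Par P Q')"
| e_scope: "etrans S \<Psi> P \<alpha> P' \<Longrightarrow> fresh b \<alpha> \<Longrightarrow> fresh b \<Psi> \<Longrightarrow> etrans S \<Psi> (Res b P) \<alpha> (Res b P')"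
| e_open: "etrans S \<Psi> P (AOut M (as @ cs) N) P' \<Longrightarrow> b \<notin> set as \<Longrightarrow> b \<notin> set cs \<Longrightarrow>
   fresh b \<Psi> \<Longrightarrow> fresh b M \<Longrightarrow> b \<in> supp N \<Longrightarrow>
   etrans S \<Psi> (Res b P) (AOut M (as @ b # cs) N) P'"
| e_rep: "etrans S \<Psi> (Par P (Bang P)) \<alpha> P' \<Longrightarrow> etrans S \<Psi> (Bang P) \<alpha> P'"

definition late_bisim :: "('t::pt, 'c::pt, 'a::pt) psi \<Rightarrow> ('a \<times> ('t, 'c, 'a) agent \<times> ('t, 'c, 'a) agent) set \<Rightarrow> bool" where
  "late_bisim S R \<longleftrightarrow> (\<forall>\<Psi> P Q. (\<Psi>, P, Q) \<in> R \<longrightarrow>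
     static_eq S \<Psi> P Q \<and>
     (\<Psi>, Q, P) \<in> R \<and>
     (\<forall>\<Psi>'. (acomp S \<Psi> \<Psi>', P, Q) \<in> R) \<and>
     (\<forall>\<alpha> P'. fresh_star (bn \<alpha>) \<Psi> \<and> fresh_star (bn \<alpha>) Q \<longrightarrow>
        (case \<alpha> of
           AIn M x \<Rightarrow> ltrans S \<Psi> P \<alpha> P' \<longrightarrow>
              (\<forall>L. \<exists>Q'. ltrans S \<Psi> Q \<alpha> Q' \<and>
                   (\<Psi>, subst_agent S P' x L, subst_agent S Q' x L) \<in> R)
         | _ \<Rightarrow> ltrans S \<Psi> P \<alpha> P' \<longrightarrow> (\<exists>Q'. ltrans S \<Psi> Q \<alpha> Q' \<and> (\<Psi>, P', Q') \<in> R))))"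

definition early_bisim :: "('t::pt, 'c::pt, 'a::pt) psi \<Rightarrow> ('a \<times> ('t, 'c, 'a) agent \<times> ('t, 'c, 'a) agent) set \<Rightarrow> bool" where
  "early_bisim S R \<longleftrightarrow> (\<forall>\<Psi> P Q. (\<Psi>, P, Q) \<in> R \<longrightarrow>
     static_eq S \<Psi> P Q \<and>
     (\<Psi>, Q, P) \<in> R \<and>
     (\<forall>\<Psi>'. (acomp S \<Psi> \<Psi>', P, Q) \<in> R) \<and>
     (\<forall>\<alpha> P'. fresh_star (bn \<alpha>) \<Psi> \<and> fresh_star (bn \<alpha>) Q \<longrightarrow>
        etrans S \<Psi> P \<alpha> P' \<longrightarrow> (\<exists>Q'. etrans S \<Psi> Q \<alpha> Q' \<and> (\<Psi>, P', Q') \<in> R)))"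

end

theory Submission
  imports Defs
begin

lemma swap_name_simps[simp]:
  "swap_name a b a = b" "swap_name a b b = a"
  "c \<noteq> a \<Longrightarrow> c \<noteq> b \<Longrightarrow> swap_name a b c = c"
  "swap_name a a c = c"
  "swap_name a b (swap_name a b c) = c"
  by (auto simp: swap_name_def)

lemma swap_name_sym: "swap_name a b c = swap_name b a c" by (auto simp: swap_name_def)

lemma swap_name_inj[simp]: "(swap_name a b c = swap_name a b d) = (c = d)" by (auto simp: swap_name_def)

lemma swap_name_comp: "swap_name a b (swap_name c d e) = swap_name (swap_name a b c) (swap_name a b d) (swap_name a b e)"
  by (auto simp: swap_name_def)

lemma swap_name_eq_iff: "(swap_name a b c = d) = (c = swap_name a b d)"
  by (auto simp: swap_name_def)

lemma fresh_name_ex: "finite (A::nat set) \<Longrightarrow> \<exists>d. d \<notin> A"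
  by (metis infinite_UNIV_nat ex_new_if_finite UNIV_I)

lemma fresh_def2: "fresh a x \<longleftrightarrow> finite {b. swp a b x \<noteq> x}"
  by (simp add: fresh_def supp_def)

context
  fixes dummy :: "'x::pt itself"
  assumes NT: "nominal_type TYPE('x)"
begin

lemma swp_id[simp]: "swp a a (x::'x) = x"
  using NT unfolding nominal_type_def by auto
lemma swp_inv[simp]: "swp a b (swp a b (x::'x)) = x"
  using NT unfolding nominal_type_def by auto
lemma swp_comp: "swp a b (swp c d (x::'x)) = swp (swap_name a b c) (swap_name a b d) (swp a b x)"
  using NT unfolding nominal_type_def by blast
lemma finite_supp[simp]: "finite (supp (x::'x))"
  using NT unfolding nominal_type_def by auto

lemma swp_sym: "swp a b (x::'x) = swp b a x"
proof -
  have "swp a b (swp a b x) = swp b a (swp a b x)" using swp_comp[of a b a b x] by simp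
  hence e: "x = swp b a (swp a b x)" by simp
  have "swp b a x = swp b a (swp b a (swp a b x))" using e by metis
  thus ?thesis by simp
qed

lemma swp_eq_iff[simp]: "(swp a b (x::'x) = swp a b y) = (x = y)"
  by (metis swp_inv)

lemma swp_eq_conv: "(swp a b (x::'x) = y) = (x = swp a b y)"
  by (metis swp_inv)

lemma supp_eqvt: "(a \<in> supp (swp c d (x::'x))) = (swap_name c d a \<in> supp x)"
proof -
  have eq: "{b. swp a b (swp c d x) \<noteq> swp c d x} = swap_name c d ` {b. swp (swap_name c d a) b x \<noteq> x}"
  proof -
    have k: "swp a b (swp c d x) = swp c d (swp (swap_name c d a) (swap_name c d b) x)" for b
      using swp_comp[of c d "swap_name c d a" "swap_name c d b" x] by simp
    show ?thesis
    proof (rule set_eqI, rule iffI)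
      fix b assume "b \<in> {b. swp a b (swp c d x) \<noteq> swp c d x}"
      hence "swp (swap_name c d a) (swap_name c d b) x \<noteq> x" using k by auto
      thus "b \<in> swap_name c d ` {b. swp (swap_name c d a) b x \<noteq> x}"
        by (intro image_eqI[of _ _ "swap_name c d b"]) auto
    next
      fix b assume "b \<in> swap_name c d ` {b. swp (swap_name c d a) b x \<noteq> x}"
      then obtain b' where "b = swap_name c d b'" "swp (swap_name c d a) b' x \<noteq> x" by auto
      thus "b \<in> {b. swp a b (swp c d x) \<noteq> swp c d x}" using k by auto
    qed
  qed
  have inj: "inj_on (swap_name c d) A" for A by (auto simp: inj_on_def)
  show ?thesis unfolding supp_def using eq finite_image_iff[OF inj] by auto
qed

lemma supp_swp: "supp (swp c d (x::'x)) = swap_name c d ` supp x"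
proof (rule set_eqI)
  fix a show "a \<in> supp (swp c d x) \<longleftrightarrow> a \<in> swap_name c d ` supp x"
    unfolding supp_eqvt by (metis image_iff swap_name_simps(5))
qed

lemma fresh_eqvt[simp]: "fresh (swap_name c d a) (swp c d (x::'x)) = fresh a x"
  by (simp only: fresh_def supp_eqvt swap_name_simps(5))

lemma fresh_eqvt2: "fresh a (swp c d (x::'x)) = fresh (swap_name c d a) x"
  by (metis fresh_eqvt swap_name_simps(5))

lemma fresh_swp_id: "fresh a (x::'x) \<Longrightarrow> fresh b x \<Longrightarrow> swp a b x = x"
proof -
  assume fa: "fresh a x" and fb: "fresh b x"
  show ?thesis
  proof (cases "a = b")
    case True thus ?thesis by simp
  next
    case False
    have "finite ({d. swp a d x \<noteq> x} \<union> {d. swp b d x \<noteq> x} \<union> {a, b})"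
      using fa fb by (simp add: fresh_def2)
    from fresh_name_ex[OF this] obtain d where d: "d \<notin> {d. swp a d x \<noteq> x} \<union> {d. swp b d x \<noteq> x} \<union> {a, b}" ..
    hence d1: "swp a d x = x" "swp b d x = x" "d \<noteq> a" "d \<noteq> b" by auto
    have "swp a d (swp b d (swp a d x)) = swp (swap_name a d b) (swap_name a d d) (swp a d (swp a d x))"
      by (rule swp_comp)
    also have "\<dots> = swp b a x" using d1 False by simp
    finally have "swp b a x = x" using d1 by simp
    thus ?thesis using swp_sym by metis
  qed
qed

lemma fresh_star_eqvt[simp]: "fresh_star (swap_name c d ` A) (swp c d (x::'x)) = fresh_star A x"
  unfolding fresh_star_def by auto

lemma fresh_star_swp_id: "fresh_star A (x::'x) \<Longrightarrow> a \<in> A \<Longrightarrow> b \<in> A \<Longrightarrow> swp a b x = x"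
  unfolding fresh_star_def by (blast intro: fresh_swp_id)

lemma obtain_fresh: "finite A \<Longrightarrow> \<exists>c. c \<notin> A \<and> fresh c (x::'x)"
proof -
  assume "finite A"
  hence "finite (A \<union> supp x)" by simp
  thus ?thesis using fresh_name_ex unfolding fresh_def by blast
qed

end

lemma supp_via: "(\<And>a b. (swp a b x = x) = (swp a b y = y)) \<Longrightarrow> supp x = supp y"
  unfolding supp_def by auto

lemma supp_pair[simp]: "supp (x, y) = supp x \<union> supp y"
proof -
  have "{b. swp a b (x, y) \<noteq> (x, y)} = {b. swp a b x \<noteq> x} \<union> {b. swp a b y \<noteq> y}" for a
    by (auto simp: swp_prod_def)
  thus ?thesis unfolding supp_def by auto
qed

lemma swp_pair[simp]: "swp a b (x, y) = (swp a b x, swp a b y)"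
  by (simp add: swp_prod_def)

lemma swp_list_simps[simp]: "swp a b [] = []" "swp a b (x # xs) = swp a b x # swp a b xs"
  by (simp_all add: swp_list_def)

lemma swp_append[simp]: "swp a b (xs @ ys) = swp a b xs @ swp a b ys"
  by (simp add: swp_list_def)

lemma supp_nil[simp]: "supp [] = {}"
  unfolding supp_def by simp

lemma supp_cons[simp]: "supp (x # xs) = supp x \<union> supp xs"
proof -
  have "{b. swp a b (x # xs) \<noteq> x # xs} = {b. swp a b x \<noteq> x} \<union> {b. swp a b xs \<noteq> xs}" for a
    by auto
  thus ?thesis unfolding supp_def by auto
qed

lemma supp_append[simp]: "supp (xs @ ys) = supp xs \<union> supp ys"
  by (induct xs) auto

lemma supp_list: "supp xs = \<Union> (supp ` set xs)"
  by (induct xs) auto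

lemma swp_nat[simp]: "swp a b (c::nat) = swap_name a b c"
  by (simp add: swp_nat_def)

lemma supp_nat[simp]: "supp (c::nat) = {c}"
proof -
  have "infinite {b. swap_name c b c \<noteq> c}"
  proof -
    have "{b. swap_name c b c \<noteq> c} = UNIV - {c}" by (auto simp: swap_name_def)
    thus ?thesis by (simp add: infinite_UNIV_nat)
  qed
  moreover have "a \<noteq> c \<Longrightarrow> finite {b. swap_name a b c \<noteq> c}" for a
  proof -
    assume "a \<noteq> c"
    hence "{b. swap_name a b c \<noteq> c} \<subseteq> {c}" by (auto simp: swap_name_def)
    thus ?thesis by (rule finite_subset) simp
  qed
  ultimately show ?thesis unfolding supp_def swp_nat by auto
qed

lemma fresh_nat[simp]: "fresh a (c::nat) = (a \<noteq> c)"
  by (simp add: fresh_def)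

lemma supp_names[simp]: "supp (xs::name list) = set xs"
  by (induct xs) auto

lemma swp_names: "swp a b (xs::name list) = map (swap_name a b) xs"
  by (induct xs) auto

lemma nominal_nat[simp]: "nominal_type TYPE(nat)"
proof -
  have "\<forall>a b c d (x::nat). swp a b (swp c d x) = swp (swap_name a b c) (swap_name a b d) (swp a b x)"
    by (simp only: swp_nat) (blast intro: swap_name_comp)
  thus ?thesis unfolding nominal_type_def by simp
qed

lemma nominal_prod[simp]:
  assumes "nominal_type TYPE('x::pt)" "nominal_type TYPE('y::pt)"
  shows "nominal_type TYPE('x \<times> 'y)"
  using assms unfolding nominal_type_def by (auto simp: swp_prod_def)

lemma nominal_list[simp]:
  assumes A: "nominal_type TYPE('x::pt)"
  shows "nominal_type TYPE('x list)"
proof -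
  have "\<forall>a (x::'x list). swp a a x = x"
  proof (intro allI) fix a and x :: "'x list" show "swp a a x = x" using A by (induct x) auto qed
  moreover have "\<forall>a b (x::'x list). swp a b (swp a b x) = x"
  proof (intro allI) fix a b and x :: "'x list" show "swp a b (swp a b x) = x" using A by (induct x) auto qed
  moreover have "\<forall>a b c d (x::'x list). swp a b (swp c d x) = swp (swap_name a b c) (swap_name a b d) (swp a b x)"
  proof (intro allI) fix a b c d and x :: "'x list" show "swp a b (swp c d x) = swp (swap_name a b c) (swap_name a b d) (swp a b x)"
      using swp_comp[OF A] by (induct x) auto qed
  moreover have "\<forall>x::'x list. finite (supp x)"
  proof
    fix x :: "'x list" show "finite (supp x)" using A by (induct x) auto
  qed
  ultimately show ?thesis unfolding nominal_type_def by blast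
qed

lemma fresh_pair[simp]: "fresh a (x, y) = (fresh a x \<and> fresh a y)"
  by (simp add: fresh_def)
lemma fresh_cons[simp]: "fresh a (x # xs) = (fresh a x \<and> fresh a xs)"
  by (simp add: fresh_def)
lemma fresh_nil[simp]: "fresh a []"
  by (simp add: fresh_def)
lemma fresh_append[simp]: "fresh a (xs @ ys) = (fresh a xs \<and> fresh a ys)"
  by (simp add: fresh_def)
lemma fresh_names[simp]: "fresh a (xs::name list) = (a \<notin> set xs)"
  by (simp add: fresh_def)

lemma fresh_star_pair[simp]: "fresh_star A (x, y) = (fresh_star A x \<and> fresh_star A y)"
  by (auto simp: fresh_star_def)
lemma fresh_star_names[simp]: "fresh_star A (xs::name list) = (A \<inter> set xs = {})"
  by (auto simp: fresh_star_def)
lemma fresh_star_nat[simp]: "fresh_star A (x::name) = (x \<notin> A)"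
  by (auto simp: fresh_star_def)
lemma fresh_star_empty[simp]: "fresh_star {} x"
  by (simp add: fresh_star_def)
lemma fresh_star_insert[simp]: "fresh_star (insert a A) x = (fresh a x \<and> fresh_star A x)"
  by (simp add: fresh_star_def)
lemma fresh_star_union[simp]: "fresh_star (A \<union> B) x = (fresh_star A x \<and> fresh_star B x)"
  by (auto simp: fresh_star_def)
lemma fresh_star_supp: "fresh_star A x = (A \<inter> supp x = {})"
  by (auto simp: fresh_star_def fresh_def)

lemma swp_act_simps[simp]:
  "swp a b (AOut M as N) = AOut (swp a b M) (swp a b as) (swp a b N)"
  "swp a b (AIn M x) = AIn (swp a b M) (swap_name a b x)"
  "swp a b (AInE M N) = AInE (swp a b M) (swp a b N)"
  "swp a b (ATau :: 't::pt act) = ATau"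
  by simp_all

lemma supp_act[simp]:
  "supp (AOut M as N) = supp M \<union> set as \<union> supp N"
  "supp (AIn M x) = supp M \<union> {x}"
  "supp (AInE M N) = supp M \<union> supp N"
  "supp (ATau :: 't::pt act) = {}"
proof -
  have "supp (AOut M as N) = supp (M, as, N)" by (rule supp_via) auto
  thus "supp (AOut M as N) = supp M \<union> set as \<union> supp N" by auto
  have "supp (AIn M x) = supp (M, x)" by (rule supp_via) auto
  thus "supp (AIn M x) = supp M \<union> {x}" by auto
  have "supp (AInE M N) = supp (M, N)" by (rule supp_via) auto
  thus "supp (AInE M N) = supp M \<union> supp N" by auto
  show "supp (ATau :: 't::pt act) = {}" unfolding supp_def by simp
qed

lemma nominal_act[simp]:
  assumes A: "nominal_type TYPE('t::pt)"
  shows "nominal_type TYPE('t act)"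
proof -
  have "\<forall>a (x::'t act). swp a a x = x"
  proof (intro allI) fix a and x :: "'t act" show "swp a a x = x" using A nominal_list[OF nominal_nat]
      by (cases x) auto qed
  moreover have "\<forall>a b (x::'t act). swp a b (swp a b x) = x"
  proof (intro allI) fix a b and x :: "'t act" show "swp a b (swp a b x) = x" using A nominal_list[OF nominal_nat]
      by (cases x) auto qed
  moreover have "\<forall>a b c d (x::'t act). swp a b (swp c d x) = swp (swap_name a b c) (swap_name a b d) (swp a b x)"
  proof (intro allI) fix a b c d and x :: "'t act" show "swp a b (swp c d x) = swp (swap_name a b c) (swap_name a b d) (swp a b x)"
      using swp_comp[OF A] swp_comp[OF nominal_list[OF nominal_nat]] swap_name_comp[of a b c d]
      by (cases x) (simp_all del: swp_nat) qed
  moreover have "\<forall>x::'t act. finite (supp x)"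
  proof fix x :: "'t act" show "finite (supp x)" using A by (cases x) auto qed
  ultimately show ?thesis unfolding nominal_type_def by blast
qed

lemma bn_eqvt: "bn (swp a b \<alpha>) = swap_name a b ` bn \<alpha>"
  by (cases \<alpha>) (auto simp: swp_names)

lemma bn_supp: "bn \<alpha> \<subseteq> supp \<alpha>"
  by (cases \<alpha>) auto

lemma swp_ragent[simp]: "swp a b (P::('t::pt,'c::pt,'a::pt) ragent) = rswp a b P"
  by (simp add: swp_ragent_def)

lemma map_swp_cs: "map (map_prod (swp a b) (rswp a b)) cs = swp a b cs"
  by (induct cs) (auto simp: map_prod_def split_def)

lemma rswp_case_eq: "rswp a b (RCase cs) = RCase (swp a b cs)"
  by (simp add: map_swp_cs)

lemma supp_ragent[simp]:
  "supp (ROut M N P) = supp M \<union> supp N \<union> supp P"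
  "supp (RIn M x P) = supp M \<union> {x} \<union> supp P"
  "supp (RCase cs) = supp cs"
  "supp (RRes x P) = {x} \<union> supp P"
  "supp (RPar P Q) = supp P \<union> supp Q"
  "supp (RBang P) = supp P"
  "supp (RAss \<Psi>) = supp \<Psi>"
proof -
  have "supp (ROut M N P) = supp (M, N, P)" by (rule supp_via) auto
  thus "supp (ROut M N P) = supp M \<union> supp N \<union> supp P" by auto
  have "supp (RIn M x P) = supp (M, x, P)" by (rule supp_via) auto
  thus "supp (RIn M x P) = supp M \<union> {x} \<union> supp P" by auto
  show "supp (RCase cs) = supp cs" by (rule supp_via) (simp add: map_swp_cs)
  have "supp (RRes x P) = supp (x, P)" by (rule supp_via) auto
  thus "supp (RRes x P) = {x} \<union> supp P" by auto
  have "supp (RPar P Q) = supp (P, Q)" by (rule supp_via) auto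
  thus "supp (RPar P Q) = supp P \<union> supp Q" by auto
  show "supp (RBang P) = supp P" by (rule supp_via) auto
  show "supp (RAss \<Psi>) = supp \<Psi>" by (rule supp_via) auto
qed

context
  fixes d1 :: "'t::pt itself" and d2 :: "'c::pt itself" and d3 :: "'a::pt itself"
  assumes NTt: "nominal_type TYPE('t)" and NTc: "nominal_type TYPE('c)" and NTa: "nominal_type TYPE('a)"
begin

lemma rswp_id: "rswp a a (P::('t,'c,'a) ragent) = P"
proof (induction P)
  case (RCase cs) thus ?case using NTc by (auto intro!: map_idI)
qed (use NTt NTc NTa in auto)

lemma rswp_inv: "rswp a b (rswp a b (P::('t,'c,'a) ragent)) = P"
proof (induction P)
  case (RCase cs) thus ?case using NTc by (auto intro!: map_idI)
qed (use NTt NTc NTa in auto)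

lemma rswp_comp: "rswp a b (rswp c d (P::('t,'c,'a) ragent)) = rswp (swap_name a b c) (swap_name a b d) (rswp a b P)"
proof (induction P)
  case (RCase cs) thus ?case using swp_comp[OF NTc] by (auto)
qed (use swp_comp[OF NTt] swp_comp[OF NTc] swp_comp[OF NTa] swap_name_comp[of a b c d] in auto)

lemma rfinite: "finite (supp (P::('t,'c,'a) ragent))"
proof (induction P)
  case (RCase cs)
  have "finite (supp cs)" unfolding supp_list using RCase NTc
    by (auto simp: fresh_def)
  thus ?case by simp
qed (use NTt NTa in auto)

lemma nominal_ragent[simp]: "nominal_type TYPE(('t,'c,'a) ragent)"
  unfolding nominal_type_def using rswp_id rswp_inv rswp_comp rfinite by auto

end

primrec rfv :: "('t::pt,'c::pt,'a::pt) ragent \<Rightarrow> name set" where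
  "rfv (ROut M N P) = supp M \<union> supp N \<union> rfv P"
| "rfv (RIn M x P) = supp M \<union> (rfv P - {x})"
| "rfv (RCase cs) = \<Union> (set (map (\<lambda>(\<phi>, X). supp \<phi> \<union> X) (map (map_prod id rfv) cs)))"
| "rfv (RRes x P) = rfv P - {x}"
| "rfv (RPar P Q) = rfv P \<union> rfv Q"
| "rfv (RBang P) = rfv P"
| "rfv (RAss \<Psi>) = supp \<Psi>"

lemma rfv_case: "rfv (RCase cs) = (\<Union>(\<phi>, P)\<in>set cs. supp \<phi> \<union> rfv P)"
  by (auto simp: split_def)

declare rfv.simps(3)[simp del]
declare rfv_case[simp]

lemma swap_image_diff: "b \<notin> A \<Longrightarrow> swap_name a b ` A - {b} = A - {a}"
  by (auto simp: swap_name_def image_iff split: if_splits)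

lemma swap_image_diff2: "swap_name a b ` (A - {x}) = swap_name a b ` A - {swap_name a b x}"
  by (auto simp: image_iff)

lemma size_list_cong: "(\<And>x. x \<in> set xs \<Longrightarrow> f x = g x) \<Longrightarrow> size_list f xs = size_list g xs"
  by (induct xs) auto

lemma snd_in_snds[simp]: "P \<in> Basic_BNFs.snds (\<phi>, P)"
  using snds.intros[of "(\<phi>, P)"] by simp

lemma size_rswp[simp]: "size (rswp a b P) = size P"
proof (induction P)
  case (RCase cs)
  thus ?case by (auto simp: size_list_map intro!: size_list_cong)
qed auto

lemma size_case_lt: "(\<phi>, p) \<in> set cs \<Longrightarrow> size p < size (RCase cs)"
proof -
  assume "(\<phi>, p) \<in> set cs"
  hence "size p < size_list (size_prod (\<lambda>x. 0) size) cs + 1"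
    using size_list_estimation[of "(\<phi>, p)" cs "size p" "size_prod (\<lambda>x. 0) size"] by auto
  thus ?thesis by simp
qed

lemma ralpha_refl[simp]: "ralpha P P" by (rule al_refl)

lemma ralpha_case_list_aux:
  "list_all2 (\<lambda>(\<phi>, p) (\<psi>, q). \<phi> = \<psi> \<and> ralpha p q) xs ys \<Longrightarrow> ralpha (RCase (zs @ xs)) (RCase (zs @ ys))"
proof (induction xs ys arbitrary: zs rule: list_all2_induct)
  case Nil thus ?case by simp
next
  case (Cons x xs y ys)
  obtain \<phi> p where x: "x = (\<phi>, p)" by (cases x)
  obtain \<psi> q where y: "y = (\<psi>, q)" by (cases y)
  have "ralpha (RCase (zs @ (\<phi>, p) # xs)) (RCase (zs @ (\<phi>, q) # xs))" using Cons x y by (auto intro: al_ccase)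
  moreover have "ralpha (RCase ((zs @ [(\<phi>, q)]) @ xs)) (RCase ((zs @ [(\<phi>, q)]) @ ys))" using Cons by blast
  ultimately show ?case using x y Cons by (auto intro: al_trans)
qed

lemma ralpha_case_list:
  "list_all2 (\<lambda>(\<phi>, p) (\<psi>, q). \<phi> = \<psi> \<and> ralpha p q) xs ys \<Longrightarrow> ralpha (RCase xs) (RCase ys)"
  using ralpha_case_list_aux[of xs ys "[]"] by simp

lemma list_all2_choose:
  "(\<And>\<phi> p. (\<phi>, p) \<in> set cs \<Longrightarrow> \<exists>q. Pr p q) \<Longrightarrow>
   \<exists>cs'. list_all2 (\<lambda>(\<phi>, p) (\<psi>, q). \<phi> = \<psi> \<and> Pr p q) cs cs'"
proof (induction cs)
  case Nil thus ?case by simp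
next
  case (Cons c cs)
  obtain \<phi> p where c: "c = (\<phi>, p)" by (cases c)
  then obtain q where "Pr p q" using Cons.prems by auto
  moreover obtain cs' where "list_all2 (\<lambda>(\<phi>, p) (\<psi>, q). \<phi> = \<psi> \<and> Pr p q) cs cs'" using Cons by auto
  ultimately show ?case using c by (intro exI[of _ "(\<phi>, q) # cs'"]) auto
qed

context
  fixes d1 :: "'t::pt itself" and d2 :: "'c::pt itself" and d3 :: "'a::pt itself"
  assumes NTt: "nominal_type TYPE('t)" and NTc: "nominal_type TYPE('c)" and NTa: "nominal_type TYPE('a)"
begin

lemmas nt_base[simp] = NTt NTc NTa

lemma rfv_rswp: "rfv (rswp a b (P::('t,'c,'a) ragent)) = swap_name a b ` rfv P"
proof (induction P)
  case (ROut M N P) thus ?case by (simp add: supp_swp image_Un)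
next
  case (RIn M x P) thus ?case by (simp add: supp_swp image_Un swap_image_diff2)
next
  case (RCase cs) thus ?case
    by (auto simp: supp_swp image_Un image_UN split_def)
next
  case (RRes x P) thus ?case by (simp add: swap_image_diff2)
next
  case (RPar P Q) thus ?case by (simp add: image_Un)
next
  case (RAss \<Psi>) thus ?case by (simp add: supp_swp)
qed simp

lemma rfv_supp: "rfv (P::('t,'c,'a) ragent) \<subseteq> supp P"
proof (induction P)
  case (RCase cs)
  have h: "\<And>\<phi> P. (\<phi>, P) \<in> set cs \<Longrightarrow> rfv P \<subseteq> supp P" using RCase by (metis snd_in_snds)
  show ?case
  proof
    fix e assume "e \<in> rfv (RCase cs)"
    then obtain \<phi> P where i: "(\<phi>, P) \<in> set cs" "e \<in> supp \<phi> \<union> rfv P" by auto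
    hence "e \<in> supp (\<phi>, P)" using h by auto
    moreover have "supp (\<phi>, P) \<subseteq> supp cs" unfolding supp_list using i(1) by blast
    ultimately show "e \<in> supp (RCase cs)" by auto
  qed
qed auto

lemma ralpha_eqvt: "ralpha (P::('t,'c,'a) ragent) Q \<Longrightarrow> ralpha (rswp a b P) (rswp a b Q)"
proof (induction rule: ralpha.induct)
  case (al_res b' P a')
  have "fresh (swap_name a b b') (rswp a b P)" using al_res fresh_eqvt[OF nominal_ragent[OF NTt NTc NTa]] by (metis swp_ragent)
  hence "ralpha (RRes (swap_name a b a') (rswp a b P)) (RRes (swap_name a b b') (swp (swap_name a b a') (swap_name a b b') (rswp a b P)))"
    by (rule ralpha.al_res)
  thus ?case using rswp_comp[of a b a' b' P] by simp
next
  case (al_in b' P M a')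
  have "fresh (swap_name a b b') (rswp a b P)" using al_in fresh_eqvt[OF nominal_ragent[OF NTt NTc NTa]] by (metis swp_ragent)
  hence "ralpha (RIn (swp a b M) (swap_name a b a') (rswp a b P)) (RIn (swp a b M) (swap_name a b b') (swp (swap_name a b a') (swap_name a b b') (rswp a b P)))"
    by (rule ralpha.al_in)
  thus ?case using rswp_comp[of a b a' b' P] by simp
next
  case (al_ccase P Q xs \<phi> ys)
  thus ?case by (simp add: ralpha.al_ccase)
qed (auto intro: ralpha.intros)

lemma ralpha_rfv: "ralpha (P::('t,'c,'a) ragent) Q \<Longrightarrow> rfv P = rfv Q"
proof (induction rule: ralpha.induct)
  case (al_res b P a)
  have "b \<notin> rfv P" using al_res rfv_supp unfolding fresh_def by blast
  thus ?case by (simp add: rfv_rswp swap_image_diff)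
next
  case (al_in b P M a)
  have "b \<notin> rfv P" using al_in rfv_supp unfolding fresh_def by blast
  thus ?case by (simp add: rfv_rswp swap_image_diff)
qed auto

lemma rename_raw: "finite A \<Longrightarrow> \<exists>Q. ralpha (P::('t,'c,'a) ragent) Q \<and> supp Q \<inter> A \<subseteq> rfv P"
proof (induction P arbitrary: A)
  case (ROut M N P)
  then obtain Q where "ralpha P Q" "supp Q \<inter> A \<subseteq> rfv P" by blast
  thus ?case by (intro exI[of _ "ROut M N Q"]) (auto intro: al_cout)
next
  case (RIn M x P)
  then obtain Q where Q: "ralpha P Q" "supp Q \<inter> A \<subseteq> rfv P" by blast
  obtain x' where x': "x' \<notin> A" "x' \<notin> supp Q"
    using fresh_name_ex[of "A \<union> supp Q"] RIn.prems rfinite[OF NTt NTc NTa] by auto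
  have "ralpha (RIn M x P) (RIn M x Q)" using Q(1) by (rule al_cin)
  moreover have "ralpha (RIn M x Q) (RIn M x' (swp x x' Q))" using x' by (intro al_in) (simp add: fresh_def)
  moreover have "supp (RIn M x' (rswp x x' Q)) \<inter> A \<subseteq> rfv (RIn M x P)"
  proof
    fix e assume e: "e \<in> supp (RIn M x' (rswp x x' Q)) \<inter> A"
    show "e \<in> rfv (RIn M x P)"
    proof (cases "e \<in> supp M")
      case True thus ?thesis by simp
    next
      case False
      with e x' have "e \<in> supp (rswp x x' Q)" by auto
      then obtain e' where e': "e' \<in> supp Q" "e = swap_name x x' e'"
        using supp_swp[OF nominal_ragent[OF NTt NTc NTa], of x x' Q] by auto
      have "e' \<noteq> x" using e' e x' by auto
      moreover have "e' \<noteq> x'" using e' x' by auto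
      ultimately have "e = e'" using e' by simp
      thus ?thesis using e e' Q \<open>e' \<noteq> x\<close> by auto
    qed
  qed
  ultimately show ?case by (intro exI[of _ "RIn M x' (rswp x x' Q)"]) (auto intro: al_trans)
next
  case (RCase cs)
  have "\<And>\<phi> p. (\<phi>, p) \<in> set cs \<Longrightarrow> \<exists>q. ralpha p q \<and> supp q \<inter> A \<subseteq> rfv p"
    using RCase by (metis snd_in_snds)
  then obtain cs' where cs': "list_all2 (\<lambda>(\<phi>, p) (\<psi>, q). \<phi> = \<psi> \<and> (ralpha p q \<and> supp q \<inter> A \<subseteq> rfv p)) cs cs'"
    using list_all2_choose[of cs "\<lambda>p q. ralpha p q \<and> supp q \<inter> A \<subseteq> rfv p"] by blast
  have "list_all2 (\<lambda>(\<phi>, p) (\<psi>, q). \<phi> = \<psi> \<and> ralpha p q) cs cs'"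
    using cs' by (rule list_all2_mono) auto
  hence "ralpha (RCase cs) (RCase cs')" by (rule ralpha_case_list)
  moreover have "supp (RCase cs') \<inter> A \<subseteq> rfv (RCase cs)"
  proof
    fix e assume e: "e \<in> supp (RCase cs') \<inter> A"
    then obtain \<psi> q where "(\<psi>, q) \<in> set cs'" "e \<in> supp \<psi> \<union> supp q" by (auto simp: supp_list)
    then obtain i where i: "i < length cs'" "cs' ! i = (\<psi>, q)" by (auto simp: in_set_conv_nth)
    obtain \<phi> p where p: "cs ! i = (\<phi>, p)" by (cases "cs ! i")
    have "i < length cs" using list_all2_lengthD[OF cs'] i(1) by simp
    hence pin: "(\<phi>, p) \<in> set cs" using p by (metis nth_mem)
    have "\<phi> = \<psi> \<and> (ralpha p q \<and> supp q \<inter> A \<subseteq> rfv p)"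
      using list_all2_nthD[OF cs' \<open>i < length cs\<close>] p i by auto
    thus "e \<in> rfv (RCase cs)" using pin e \<open>e \<in> supp \<psi> \<union> supp q\<close> by auto
  qed
  ultimately show ?case by blast
next
  case (RRes x P)
  then obtain Q where Q: "ralpha P Q" "supp Q \<inter> A \<subseteq> rfv P" by blast
  obtain x' where x': "x' \<notin> A" "x' \<notin> supp Q"
    using fresh_name_ex[of "A \<union> supp Q"] RRes.prems rfinite[OF NTt NTc NTa] by auto
  have "ralpha (RRes x P) (RRes x Q)" using Q(1) by (rule al_cres)
  moreover have "ralpha (RRes x Q) (RRes x' (swp x x' Q))" using x' by (intro al_res) (simp add: fresh_def)
  moreover have "supp (RRes x' (rswp x x' Q)) \<inter> A \<subseteq> rfv (RRes x P)"
  proof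
    fix e assume e: "e \<in> supp (RRes x' (rswp x x' Q)) \<inter> A"
    with x' have "e \<in> supp (rswp x x' Q)" by auto
    then obtain e' where e': "e' \<in> supp Q" "e = swap_name x x' e'"
      using supp_swp[OF nominal_ragent[OF NTt NTc NTa], of x x' Q] by auto
    have "e' \<noteq> x" using e' e x' by auto
    moreover have "e' \<noteq> x'" using e' x' by auto
    ultimately have "e = e'" using e' by simp
    thus "e \<in> rfv (RRes x P)" using e e' Q \<open>e' \<noteq> x\<close> by auto
  qed
  ultimately show ?case by (intro exI[of _ "RRes x' (rswp x x' Q)"]) (auto intro: al_trans)
next
  case (RPar P1 P2)
  obtain Q1 where Q1: "ralpha P1 Q1" "supp Q1 \<inter> A \<subseteq> rfv P1" using RPar.IH(1)[OF RPar.prems] by blast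
  obtain Q2 where Q2: "ralpha P2 Q2" "supp Q2 \<inter> A \<subseteq> rfv P2" using RPar.IH(2)[OF RPar.prems] by blast
  have "ralpha (RPar P1 P2) (RPar Q1 P2)" using Q1(1) by (rule al_cpar1)
  moreover have "ralpha (RPar Q1 P2) (RPar Q1 Q2)" using Q2(1) by (rule al_cpar2)
  ultimately have "ralpha (RPar P1 P2) (RPar Q1 Q2)" by (rule al_trans)
  thus ?case using Q1 Q2 by (intro exI[of _ "RPar Q1 Q2"]) auto
next
  case (RBang P)
  then obtain Q where "ralpha P Q" "supp Q \<inter> A \<subseteq> rfv P" by blast
  thus ?case by (intro exI[of _ "RBang Q"]) (auto intro: al_cbang)
next
  case (RAss \<Psi>) thus ?case by (intro exI[of _ "RAss \<Psi>"]) auto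
qed

lemma ralpha_fresh_swp: "a \<notin> rfv (P::('t,'c,'a) ragent) \<Longrightarrow> b \<notin> rfv P \<Longrightarrow> ralpha (rswp a b P) P"
proof -
  assume a: "a \<notin> rfv P" and b: "b \<notin> rfv P"
  obtain Q where Q: "ralpha P Q" "supp Q \<inter> {a, b} \<subseteq> rfv P" using rename_raw[of "{a, b}" P] by auto
  hence "fresh a Q" "fresh b Q" using a b unfolding fresh_def by auto
  hence "rswp a b Q = Q" using fresh_swp_id[OF nominal_ragent[OF NTt NTc NTa]] by (metis swp_ragent)
  moreover have "ralpha (rswp a b P) (rswp a b Q)" using Q ralpha_eqvt by blast
  ultimately show ?thesis using Q by (metis al_sym al_trans)
qed

end

lemma ralpha_abs_eq: "(abs_agent r = abs_agent s) = ralpha r s"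
  using Quotient3_rel[OF Quotient3_agent, of r s] by (auto intro: al_refl)
lemma abs_rep[simp]: "abs_agent (rep_agent P) = P"
  by (rule Quotient3_abs_rep[OF Quotient3_agent])
lemma rep_abs: "ralpha (rep_agent (abs_agent r)) r"
  by (rule Quotient3_rep_abs[OF Quotient3_agent]) (rule al_refl)

lemma abs_ROut: "abs_agent (ROut M N r) = Out M N (abs_agent r)"
  unfolding Out_def ralpha_abs_eq by (rule al_cout, rule al_sym, rule rep_abs)
lemma abs_RIn: "abs_agent (RIn M x r) = In M x (abs_agent r)"
  unfolding In_def ralpha_abs_eq by (rule al_cin, rule al_sym, rule rep_abs)
lemma abs_RRes: "abs_agent (RRes x r) = Res x (abs_agent r)"
  unfolding Res_def ralpha_abs_eq by (rule al_cres, rule al_sym, rule rep_abs)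
lemma abs_RBang: "abs_agent (RBang r) = Bang (abs_agent r)"
  unfolding Bang_def ralpha_abs_eq by (rule al_cbang, rule al_sym, rule rep_abs)
lemma abs_RAss: "abs_agent (RAss \<Psi>) = Ass \<Psi>"
  unfolding Ass_def ..
lemma abs_RPar: "abs_agent (RPar r s) = Par (abs_agent r) (abs_agent s)"
  unfolding Par_def ralpha_abs_eq
  by (rule al_trans, rule al_cpar1, rule al_sym, rule rep_abs, rule al_cpar2, rule al_sym, rule rep_abs)
lemma abs_RCase: "abs_agent (RCase cs) = Case (map (map_prod id abs_agent) cs)"
  unfolding Case_def ralpha_abs_eq
proof (rule ralpha_case_list)
  show "list_all2 (\<lambda>(\<phi>, p) (\<psi>, q). \<phi> = \<psi> \<and> ralpha p q) cs (map (map_prod id rep_agent) (map (map_prod id abs_agent) cs))"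
    unfolding list_all2_map2 by (rule list.rel_refl_strong) (auto intro: al_sym[OF rep_abs])
qed

primrec rshape :: "('t,'c,'a) ragent \<Rightarrow> nat" where
  "rshape (ROut M N P) = 0" | "rshape (RIn M x P) = 1" | "rshape (RCase cs) = 2" | "rshape (RRes x P) = 3"
| "rshape (RPar P Q) = 4" | "rshape (RBang P) = 5" | "rshape (RAss \<Psi>) = 6"

lemma ralpha_shape: "ralpha p q \<Longrightarrow> rshape p = rshape q"
  by (induct rule: ralpha.induct) auto

definition ashape :: "('t::pt,'c::pt,'a::pt) agent \<Rightarrow> nat" where "ashape P = rshape (rep_agent P)"

lemma ashape_abs: "ashape (abs_agent r) = rshape r"
  unfolding ashape_def using ralpha_shape[OF rep_abs] .

lemma ashape_simps[simp]: "ashape (Out M N P) = 0" "ashape (In M x P) = 1" "ashape (Case cs) = 2"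
  "ashape (Res x P) = 3" "ashape (Par P Q) = 4" "ashape (Bang P) = 5" "ashape (Ass \<Psi>) = 6"
  by (simp_all add: Out_def In_def Case_def Res_def Par_def Bang_def Ass_def ashape_abs)

lemma agent_distinct[simp]:
  "Out M N P \<noteq> In M' y P'" "Out M N P \<noteq> Case cs" "Out M N P \<noteq> Res y P'" "Out M N P \<noteq> Par P1 P2" "Out M N P \<noteq> Bang P'" "Out M N P \<noteq> Ass \<Psi>"
  "In M x P \<noteq> Out M' N' P'" "In M x P \<noteq> Case cs" "In M x P \<noteq> Res y P'" "In M x P \<noteq> Par P1 P2" "In M x P \<noteq> Bang P'" "In M x P \<noteq> Ass \<Psi>"
  "Case cs \<noteq> Out M' N' P'" "Case cs \<noteq> In M' y P'" "Case cs \<noteq> Res y P'" "Case cs \<noteq> Par P1 P2" "Case cs \<noteq> Bang P'" "Case cs \<noteq> Ass \<Psi>"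
  "Res x P \<noteq> Out M' N' P'" "Res x P \<noteq> In M' y P'" "Res x P \<noteq> Case cs" "Res x P \<noteq> Par P1 P2" "Res x P \<noteq> Bang P'" "Res x P \<noteq> Ass \<Psi>"
  "Par Q1 Q2 \<noteq> Out M' N' P'" "Par Q1 Q2 \<noteq> In M' y P'" "Par Q1 Q2 \<noteq> Case cs" "Par Q1 Q2 \<noteq> Res y P'" "Par Q1 Q2 \<noteq> Bang P'" "Par Q1 Q2 \<noteq> Ass \<Psi>"
  "Bang Q \<noteq> Out M' N' P'" "Bang Q \<noteq> In M' y P'" "Bang Q \<noteq> Case cs" "Bang Q \<noteq> Res y P'" "Bang Q \<noteq> Par P1 P2" "Bang Q \<noteq> Ass \<Psi>"
  "Ass \<Phi> \<noteq> Out M' N' P'" "Ass \<Phi> \<noteq> In M' y P'" "Ass \<Phi> \<noteq> Case cs" "Ass \<Phi> \<noteq> Res y P'" "Ass \<Phi> \<noteq> Par P1 P2" "Ass \<Phi> \<noteq> Bang P'"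
  by (rule notI, drule arg_cong[where f=ashape], simp)+

fun rinv :: "('t::pt,'c::pt,'a::pt) ragent \<Rightarrow> ('t,'c,'a) ragent \<Rightarrow> bool" where
  "rinv (ROut M N p) (ROut M' N' q) = (M = M' \<and> N = N' \<and> ralpha p q)"
| "rinv (RIn M x p) (RIn M' y q) = (M = M' \<and> rfv p - {x} = rfv q - {y} \<and> (\<forall>c. c \<notin> rfv p - {x} \<longrightarrow> ralpha (rswp x c p) (rswp y c q)))"
| "rinv (RCase xs) (RCase ys) = list_all2 (\<lambda>(\<phi>, p) (\<psi>, q). \<phi> = \<psi> \<and> ralpha p q) xs ys"
| "rinv (RRes x p) (RRes y q) = (rfv p - {x} = rfv q - {y} \<and> (\<forall>c. c \<notin> rfv p - {x} \<longrightarrow> ralpha (rswp x c p) (rswp y c q)))"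
| "rinv (RPar p p') (RPar q q') = (ralpha p q \<and> ralpha p' q')"
| "rinv (RBang p) (RBang q) = ralpha p q"
| "rinv (RAss \<Psi>) (RAss \<Psi>') = (\<Psi> = \<Psi>')"
| "rinv _ _ = False"

context
  fixes d1 :: "'t::pt itself" and d2 :: "'c::pt itself" and d3 :: "'a::pt itself"
  assumes NTt: "nominal_type TYPE('t)" and NTc: "nominal_type TYPE('c)" and NTa: "nominal_type TYPE('a)"
begin

lemmas nt_base_p3[simp] = NTt NTc NTa
lemmas NTr[simp] = nominal_ragent[OF NTt NTc NTa]
lemmas rfv_rswp_p3 = rfv_rswp[OF NTt NTc NTa]
lemmas rfv_supp_p3 = rfv_supp[OF NTt NTc NTa]
lemmas ralpha_eqvt_p3 = ralpha_eqvt[OF NTt NTc NTa]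
lemmas ralpha_rfv_p3 = ralpha_rfv[OF NTt NTc NTa]
lemmas rename_raw_p3 = rename_raw[OF NTt NTc NTa]
lemmas ralpha_fresh_swp_p3 = ralpha_fresh_swp[OF NTt NTc NTa]
lemmas rswp_id_p3 = rswp_id[OF NTt NTc NTa]
lemmas rswp_inv_p3 = rswp_inv[OF NTt NTc NTa]
lemmas rswp_comp_p3 = rswp_comp[OF NTt NTc NTa]
lemmas rfinite_p3 = rfinite[OF NTt NTc NTa]

lemma ralpha_commute: "ralpha p q = ralpha q p"
  by (metis al_sym)

lemma list_all2_ralpha_sym:
  "list_all2 (\<lambda>(\<phi>, p) (\<psi>, q). \<phi> = \<psi> \<and> ralpha p q) xs ys \<Longrightarrow> list_all2 (\<lambda>(\<phi>, p) (\<psi>, q). \<phi> = \<psi> \<and> ralpha p q) ys xs"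
  by (induct rule: list_all2_induct) (auto simp: ralpha_commute)

lemma rinv_sym: "rinv (p::('t,'c,'a) ragent) q \<Longrightarrow> rinv q p"
proof (induct p q rule: rinv.induct)
  case (3 xs ys)
  thus ?case by (simp add: list_all2_ralpha_sym)
qed (auto simp: ralpha_commute)

lemma list_all2_ralpha_trans:
  "list_all2 (\<lambda>(\<phi>, p) (\<psi>, q). \<phi> = \<psi> \<and> ralpha p q) xs ys \<Longrightarrow> list_all2 (\<lambda>(\<phi>, p) (\<psi>, q). \<phi> = \<psi> \<and> ralpha p q) ys zs
   \<Longrightarrow> list_all2 (\<lambda>(\<phi>, p) (\<psi>, q). \<phi> = \<psi> \<and> ralpha p q) xs zs"
  by (induct xs ys arbitrary: zs rule: list_all2_induct) (auto simp: list_all2_Cons1 intro: al_trans)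

lemma rinv_trans: "rinv (p::('t,'c,'a) ragent) q \<Longrightarrow> rinv q r \<Longrightarrow> rinv p r"
proof (induct p q arbitrary: r rule: rinv.induct)
  case (1 M N p M' N' q) thus ?case by (cases r; simp; blast intro: al_trans)
next
  case (2 M x p M' y q) thus ?case by (cases r; simp; blast intro: al_trans)
next
  case (3 xs ys) thus ?case by (cases r; simp; blast intro: list_all2_ralpha_trans)
next
  case (4 x p y q) thus ?case by (cases r; simp; blast intro: al_trans)
next
  case (5 p p' q q') thus ?case by (cases r; simp; blast intro: al_trans)
next
  case (6 p q) thus ?case by (cases r; simp; blast intro: al_trans)
next
  case (7 \<Psi> \<Psi>') thus ?case by (cases r) auto
qed auto

lemma binder_alpha_aux:
  assumes "fresh b (P::('t,'c,'a) ragent)" "c \<notin> rfv P - {a}"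
  shows "ralpha (rswp a c P) (rswp b c (rswp a b P))"
proof -
  have bP: "b \<notin> rfv P" using assms(1) rfv_supp_p3 unfolding fresh_def by blast
  show ?thesis
  proof (cases "c = a")
    case True
    have "rswp b a (rswp a b P) = P" using swp_sym[OF NTr, of b a "rswp a b P"] rswp_inv_p3 by simp
    thus ?thesis using True by (simp add: rswp_id_p3)
  next
    case ca: False
    show ?thesis
    proof (cases "a = b")
      case True thus ?thesis by (simp add: rswp_id_p3)
    next
      case ab: False
      show ?thesis
      proof (cases "c = b")
        case True thus ?thesis by (simp add: rswp_id_p3)
      next
        case cb: False
        have "rswp b c (rswp a b P) = rswp (swap_name b c a) (swap_name b c b) (rswp b c P)" by (rule rswp_comp_p3)
        also have "\<dots> = rswp a c (rswp b c P)" using ca ab cb by simp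
        finally have e: "rswp b c (rswp a b P) = rswp a c (rswp b c P)" .
        have "c \<notin> rfv P" using assms(2) ca by auto
        hence "ralpha (rswp b c P) P" using bP by (intro ralpha_fresh_swp_p3) auto
        hence "ralpha (rswp a c (rswp b c P)) (rswp a c P)" by (rule ralpha_eqvt_p3)
        thus ?thesis using e by (simp add: al_sym)
      qed
    qed
  qed
qed

lemma ralpha_rinv: "ralpha (p::('t,'c,'a) ragent) q \<Longrightarrow> rinv p q"
proof (induction rule: ralpha.induct)
  case (al_refl P)
  show ?case by (cases P) (auto intro: list.rel_refl_strong)
next
  case (al_sym P Q) thus ?case by (blast intro: rinv_sym)
next
  case (al_trans P Q R) thus ?case by (blast intro: rinv_trans)
next
  case (al_res b P a)
  have "b \<notin> rfv P" using al_res rfv_supp_p3 unfolding fresh_def by blast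
  hence "rfv (rswp a b P) - {b} = rfv P - {a}" by (simp add: rfv_rswp_p3 swap_image_diff)
  thus ?case using binder_alpha_aux[OF al_res] by simp
next
  case (al_in b P M a)
  have "b \<notin> rfv P" using al_in rfv_supp_p3 unfolding fresh_def by blast
  hence "rfv (rswp a b P) - {b} = rfv P - {a}" by (simp add: rfv_rswp_p3 swap_image_diff)
  thus ?case using binder_alpha_aux[OF al_in] by simp
next
  case (al_cin P Q M x) thus ?case using ralpha_rfv_p3[OF al_cin(1)] by (auto intro: ralpha_eqvt_p3)
next
  case (al_cres P Q x) thus ?case using ralpha_rfv_p3[OF al_cres(1)] by (auto intro: ralpha_eqvt_p3)
next
  case (al_ccase P Q xs \<phi> ys)
  thus ?case by (auto intro!: list_all2_appendI list.rel_refl_strong)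
qed auto

lemma swp_abs: "swp a b (abs_agent r :: ('t,'c,'a) agent) = abs_agent (rswp a b r)"
  unfolding swp_agent_def swp_ragent ralpha_abs_eq by (rule ralpha_eqvt_p3, rule rep_abs)

lemma rfv_rep_swp: "rfv (rep_agent (swp a b (P::('t,'c,'a) agent))) = swap_name a b ` rfv (rep_agent P)"
  unfolding swp_agent_def by (simp add: ralpha_rfv_p3[OF rep_abs] rfv_rswp_p3)

lemma supp_abs: "supp (abs_agent r :: ('t,'c,'a) agent) = rfv r"
proof (rule set_eqI)
  fix a
  have fin: "finite (rfv r)" using finite_subset[OF rfv_supp_p3 rfinite_p3] .
  show "a \<in> supp (abs_agent r) \<longleftrightarrow> a \<in> rfv r"
  proof
    assume a: "a \<in> supp (abs_agent r)"
    show "a \<in> rfv r"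
    proof (rule ccontr)
      assume na: "a \<notin> rfv r"
      have "{b. swp a b (abs_agent r) \<noteq> abs_agent r} \<subseteq> rfv r"
      proof
        fix b assume "b \<in> {b. swp a b (abs_agent r) \<noteq> abs_agent r}"
        hence "\<not> ralpha (rswp a b r) r" by (simp add: swp_abs ralpha_abs_eq)
        thus "b \<in> rfv r" using ralpha_fresh_swp_p3[OF na] by blast
      qed
      hence "finite {b. swp a b (abs_agent r) \<noteq> abs_agent r}" using fin finite_subset by blast
      thus False using a unfolding supp_def by simp
    qed
  next
    assume a: "a \<in> rfv r"
    have "- rfv r \<subseteq> {b. swp a b (abs_agent r) \<noteq> abs_agent r}"
    proof
      fix b assume b: "b \<in> - rfv r"
      have "b \<in> rfv (rswp a b r)" using a by (auto simp: rfv_rswp_p3 intro!: image_eqI[where x=a])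
      hence "\<not> ralpha (rswp a b r) r" using b ralpha_rfv_p3 by blast
      thus "b \<in> {b. swp a b (abs_agent r) \<noteq> abs_agent r}" by (simp add: swp_abs ralpha_abs_eq)
    qed
    moreover have "infinite (- rfv r)" using fin by (simp add: Compl_eq_Diff_UNIV infinite_UNIV_nat)
    ultimately have "infinite {b. swp a b (abs_agent r) \<noteq> abs_agent r}" using finite_subset by blast
    thus "a \<in> supp (abs_agent r)" unfolding supp_def by simp
  qed
qed

lemma supp_agent: "supp (P::('t,'c,'a) agent) = rfv (rep_agent P)"
  by (metis abs_rep supp_abs)

lemma nominal_agent[simp]: "nominal_type TYPE(('t,'c,'a) agent)"
proof -
  have "\<forall>a (x::('t,'c,'a) agent). swp a a x = x"
    by (simp add: swp_agent_def rswp_id_p3)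
  moreover have "\<forall>a b (x::('t,'c,'a) agent). swp a b (swp a b x) = x"
  proof (intro allI)
    fix a b and x :: "('t,'c,'a) agent"
    have "swp a b (swp a b x) = swp a b (abs_agent (rswp a b (rep_agent x)))" by (simp add: swp_agent_def)
    also have "\<dots> = abs_agent (rswp a b (rswp a b (rep_agent x)))" by (rule swp_abs)
    also have "\<dots> = abs_agent (rep_agent x)" by (simp only: rswp_inv_p3)
    finally show "swp a b (swp a b x) = x" by (simp only: abs_rep)
  qed
  moreover have "\<forall>a b c d (x::('t,'c,'a) agent). swp a b (swp c d x) = swp (swap_name a b c) (swap_name a b d) (swp a b x)"
  proof (intro allI)
    fix a b c d and x :: "('t,'c,'a) agent"
    have "swp a b (swp c d x) = swp a b (abs_agent (rswp c d (rep_agent x)))" by (simp add: swp_agent_def)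
    also have "\<dots> = abs_agent (rswp a b (rswp c d (rep_agent x)))" by (rule swp_abs)
    also have "\<dots> = abs_agent (rswp (swap_name a b c) (swap_name a b d) (rswp a b (rep_agent x)))" using rswp_comp_p3[of a b c d "rep_agent x"] by (rule arg_cong)
    also have "\<dots> = swp (swap_name a b c) (swap_name a b d) (abs_agent (rswp a b (rep_agent x)))" by (rule swp_abs[symmetric])
    also have "\<dots> = swp (swap_name a b c) (swap_name a b d) (swp a b x)" by (simp add: swp_agent_def)
    finally show "swp a b (swp c d x) = swp (swap_name a b c) (swap_name a b d) (swp a b x)" .
  qed
  moreover have "\<forall>x::('t,'c,'a) agent. finite (supp x)"
    by (simp add: supp_agent finite_subset[OF rfv_supp_p3 rfinite_p3])
  ultimately show ?thesis unfolding nominal_type_def by blast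
qed

end

lemma ralpha_size: "ralpha p q \<Longrightarrow> size p = size q"
  by (induct rule: ralpha.induct) auto

definition asize :: "('t::pt,'c::pt,'a::pt) agent \<Rightarrow> nat" where "asize P = size (rep_agent P)"

lemma asize_abs: "asize (abs_agent r) = size r"
  unfolding asize_def using ralpha_size[OF rep_abs] .

lemma asize_simps[simp]:
  "asize (Out M N P) = Suc (asize P)"
  "asize (In M x P) = Suc (asize P)"
  "asize (Res x P) = Suc (asize P)"
  "asize (Par P Q) = Suc (asize P + asize Q)"
  "asize (Bang P) = Suc (asize P)"
  by (simp_all only: Out_def In_def Res_def Par_def Bang_def asize_abs) (simp_all add: asize_def)

lemma asize_case: "(\<phi>, P) \<in> set cs \<Longrightarrow> asize P < asize (Case cs)"
proof -
  assume "(\<phi>, P) \<in> set cs"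
  hence "(\<phi>, rep_agent P) \<in> set (map (map_prod id rep_agent) cs)" by force
  hence "size (rep_agent P) < size (RCase (map (map_prod id rep_agent) cs))" by (rule size_case_lt)
  moreover have "asize (Case cs) = size (RCase (map (map_prod id rep_agent) cs))" unfolding Case_def by (rule asize_abs)
  ultimately show ?thesis unfolding asize_def[of P] by simp
qed

lemma agent_exhaust:
  obtains (Out) M N P0 where "P = Out M N P0"
  | (In) M x P0 where "P = In M x P0"
  | (Case) cs where "P = Case cs"
  | (Res) x P0 where "P = Res x P0"
  | (Par) P1 P2 where "P = Par P1 P2"
  | (Bang) P0 where "P = Bang P0"
  | (Ass) \<Psi> where "P = Ass \<Psi>"
proof (cases "rep_agent P")
  case (ROut M N r) thus ?thesis using Out by (metis abs_rep abs_ROut)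
next
  case (RIn M x r) thus ?thesis using In by (metis abs_rep abs_RIn)
next
  case (RCase cs) thus ?thesis using Case by (metis abs_rep abs_RCase)
next
  case (RRes x r) thus ?thesis using Res by (metis abs_rep abs_RRes)
next
  case (RPar r s) thus ?thesis using Par by (metis abs_rep abs_RPar)
next
  case (RBang r) thus ?thesis using Bang by (metis abs_rep abs_RBang)
next
  case (RAss \<Psi>) thus ?thesis using Ass by (metis abs_rep abs_RAss)
qed

lemma resl_append: "resl (as @ bs) P = resl as (resl bs P)"
  by (induct as) auto

context
  fixes d1 :: "'t::pt itself" and d2 :: "'c::pt itself" and d3 :: "'a::pt itself"
  assumes NTt: "nominal_type TYPE('t)" and NTc: "nominal_type TYPE('c)" and NTa: "nominal_type TYPE('a)"
begin

lemmas nt_base_p4[simp] = NTt NTc NTa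
lemmas NTr_p4[simp] = nominal_ragent[OF NTt NTc NTa]
lemmas NTag[simp] = nominal_agent[OF NTt NTc NTa]
lemmas rfv_rswp_p4 = rfv_rswp_p3[OF NTt NTc NTa]
lemmas rfv_supp_p4 = rfv_supp_p3[OF NTt NTc NTa]
lemmas ralpha_eqvt_p4 = ralpha_eqvt_p3[OF NTt NTc NTa]
lemmas ralpha_rfv_p4 = ralpha_rfv_p3[OF NTt NTc NTa]
lemmas rename_raw_p4 = rename_raw_p3[OF NTt NTc NTa]
lemmas ralpha_fresh_swp_p4 = ralpha_fresh_swp_p3[OF NTt NTc NTa]
lemmas ralpha_rinv_p4 = ralpha_rinv[OF NTt NTc NTa]
lemmas swp_abs_p4 = swp_abs[OF NTt NTc NTa]
lemmas supp_abs_p4 = supp_abs[OF NTt NTc NTa]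
lemmas supp_agent_p4 = supp_agent[OF NTt NTc NTa]

lemma rep_swp: "ralpha (rep_agent (swp a b (P::('t,'c,'a) agent))) (rswp a b (rep_agent P))"
  unfolding swp_agent_def swp_ragent by (rule rep_abs)

lemma swp_Out[simp]: "swp a b (Out M N (P::('t,'c,'a) agent)) = Out (swp a b M) (swp a b N) (swp a b P)"
  unfolding Out_def swp_abs_p4 ralpha_abs_eq by (simp add: al_cout al_sym[OF rep_swp])
lemma swp_In[simp]: "swp a b (In M x (P::('t,'c,'a) agent)) = In (swp a b M) (swap_name a b x) (swp a b P)"
  unfolding In_def swp_abs_p4 ralpha_abs_eq by (simp add: al_cin al_sym[OF rep_swp])
lemma swp_Res[simp]: "swp a b (Res x (P::('t,'c,'a) agent)) = Res (swap_name a b x) (swp a b P)"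
  unfolding Res_def swp_abs_p4 ralpha_abs_eq by (simp add: al_cres al_sym[OF rep_swp])
lemma swp_Bang[simp]: "swp a b (Bang (P::('t,'c,'a) agent)) = Bang (swp a b P)"
  unfolding Bang_def swp_abs_p4 ralpha_abs_eq by (simp add: al_cbang al_sym[OF rep_swp])
lemma swp_Ass[simp]: "swp a b (Ass \<Psi> :: ('t,'c,'a) agent) = Ass (swp a b \<Psi>)"
  unfolding Ass_def swp_abs_p4 by simp
lemma swp_Par[simp]: "swp a b (Par P (Q::('t,'c,'a) agent)) = Par (swp a b P) (swp a b Q)"
  unfolding Par_def swp_abs_p4 ralpha_abs_eq
  by simp (rule al_trans[OF al_cpar1[OF al_sym[OF rep_swp]] al_cpar2[OF al_sym[OF rep_swp]]])
lemma swp_Case[simp]: "swp a b (Case (cs::('c \<times> ('t,'c,'a) agent) list)) = Case (swp a b cs)"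
proof -
  have "list_all2 (\<lambda>(\<phi>, p) (\<psi>, q). \<phi> = \<psi> \<and> ralpha p q) (swp a b (map (map_prod id rep_agent) cs))
     (map (map_prod id rep_agent) (swp a b cs))"
    by (induct cs) (auto intro: al_sym[OF rep_swp])
  hence "ralpha (RCase (swp a b (map (map_prod id rep_agent) cs))) (RCase (map (map_prod id rep_agent) (swp a b cs)))"
    by (rule ralpha_case_list)
  thus ?thesis unfolding Case_def swp_abs_p4 ralpha_abs_eq rswp_case_eq .
qed

lemma swp_resl[simp]: "swp a b (resl as (P::('t,'c,'a) agent)) = resl (swp a b as) (swp a b P)"
  by (induct as) auto

lemma supp_Out[simp]: "supp (Out M N (P::('t,'c,'a) agent)) = supp M \<union> supp N \<union> supp P"
  unfolding Out_def supp_abs_p4 by (simp add: supp_agent_p4)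
lemma supp_In[simp]: "supp (In M x (P::('t,'c,'a) agent)) = supp M \<union> (supp P - {x})"
  unfolding In_def supp_abs_p4 by (simp add: supp_agent_p4)
lemma supp_Res[simp]: "supp (Res x (P::('t,'c,'a) agent)) = supp P - {x}"
  unfolding Res_def supp_abs_p4 by (simp add: supp_agent_p4)
lemma supp_Par[simp]: "supp (Par P (Q::('t,'c,'a) agent)) = supp P \<union> supp Q"
  unfolding Par_def supp_abs_p4 by (simp add: supp_agent_p4)
lemma supp_Bang[simp]: "supp (Bang (P::('t,'c,'a) agent)) = supp P"
  unfolding Bang_def supp_abs_p4 by (simp add: supp_agent_p4)
lemma supp_Ass[simp]: "supp (Ass \<Psi> :: ('t,'c,'a) agent) = supp \<Psi>"
  unfolding Ass_def supp_abs_p4 by simp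
lemma supp_Case[simp]: "supp (Case (cs::('c \<times> ('t,'c,'a) agent) list)) = (\<Union>(\<phi>, P)\<in>set cs. supp \<phi> \<union> supp P)"
  unfolding Case_def supp_abs_p4 by (force simp: supp_agent_p4)
lemma supp_resl[simp]: "supp (resl as (P::('t,'c,'a) agent)) = supp P - set as"
  by (induct as) auto

lemma rep_Out: "rinv (ROut M N (rep_agent P)) (rep_agent (Out M N (P::('t,'c,'a) agent)))"
  unfolding Out_def by (rule ralpha_rinv_p4, rule al_sym, rule rep_abs)

lemma Out_eq[simp]: "(Out M N (P::('t,'c,'a) agent) = Out M' N' P') = (M = M' \<and> N = N' \<and> P = P')"
proof
  assume "Out M N P = Out M' N' P'"
  hence "ralpha (ROut M N (rep_agent P)) (ROut M' N' (rep_agent P'))" unfolding Out_def ralpha_abs_eq .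
  hence "rinv (ROut M N (rep_agent P)) (ROut M' N' (rep_agent P'))" by (rule ralpha_rinv_p4)
  thus "M = M' \<and> N = N' \<and> P = P'" by (simp add: ralpha_abs_eq[symmetric])
qed auto

lemma Par_eq[simp]: "(Par P (Q::('t,'c,'a) agent) = Par P' Q') = (P = P' \<and> Q = Q')"
proof
  assume "Par P Q = Par P' Q'"
  hence "ralpha (RPar (rep_agent P) (rep_agent Q)) (RPar (rep_agent P') (rep_agent Q'))" unfolding Par_def ralpha_abs_eq .
  hence "rinv (RPar (rep_agent P) (rep_agent Q)) (RPar (rep_agent P') (rep_agent Q'))" by (rule ralpha_rinv_p4)
  thus "P = P' \<and> Q = Q'" by (simp add: ralpha_abs_eq[symmetric])
qed auto

lemma Bang_eq[simp]: "(Bang (P::('t,'c,'a) agent) = Bang P') = (P = P')"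
proof
  assume "Bang P = Bang P'"
  hence "ralpha (RBang (rep_agent P)) (RBang (rep_agent P'))" unfolding Bang_def ralpha_abs_eq .
  hence "rinv (RBang (rep_agent P)) (RBang (rep_agent P'))" by (rule ralpha_rinv_p4)
  thus "P = P'" by (simp add: ralpha_abs_eq[symmetric])
qed auto

lemma Ass_eq[simp]: "(Ass \<Psi> = (Ass \<Psi>' :: ('t,'c,'a) agent)) = (\<Psi> = \<Psi>')"
proof
  assume "Ass \<Psi> = (Ass \<Psi>' :: ('t,'c,'a) agent)"
  hence "ralpha (RAss \<Psi> :: ('t,'c,'a) ragent) (RAss \<Psi>')" unfolding Ass_def ralpha_abs_eq .
  hence "rinv (RAss \<Psi> :: ('t,'c,'a) ragent) (RAss \<Psi>')" by (rule ralpha_rinv_p4)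
  thus "\<Psi> = \<Psi>'" by simp
qed auto

lemma Case_eq[simp]: "(Case cs = Case (cs'::('c \<times> ('t,'c,'a) agent) list)) = (cs = cs')"
proof
  assume "Case cs = Case cs'"
  hence "ralpha (RCase (map (map_prod id rep_agent) cs)) (RCase (map (map_prod id rep_agent) cs'))"
    unfolding Case_def ralpha_abs_eq .
  hence "rinv (RCase (map (map_prod id rep_agent) cs)) (RCase (map (map_prod id rep_agent) cs'))" by (rule ralpha_rinv_p4)
  hence "list_all2 (\<lambda>x y. (\<lambda>(\<phi>, p) (\<psi>, q). \<phi> = \<psi> \<and> ralpha p q) (map_prod id rep_agent x) (map_prod id rep_agent y)) cs cs'"
    by (simp add: list_all2_map1 list_all2_map2)
  hence "list_all2 (=) cs cs'"
    by (rule list_all2_mono) (auto simp: ralpha_abs_eq[symmetric])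
  thus "cs = cs'" by (simp add: list.rel_eq)
qed auto

lemma In_eq:
  assumes "In M x (P::('t,'c,'a) agent) = In M' y Q"
  shows "M = M'" "supp P - {x} = supp Q - {y}" "\<And>c. c \<notin> supp P - {x} \<Longrightarrow> swp x c P = swp y c Q"
proof -
  have "ralpha (RIn M x (rep_agent P)) (RIn M' y (rep_agent Q))" using assms unfolding In_def ralpha_abs_eq .
  hence r: "rinv (RIn M x (rep_agent P)) (RIn M' y (rep_agent Q))" by (rule ralpha_rinv_p4)
  thus "M = M'" by simp
  show "supp P - {x} = supp Q - {y}" using r by (simp add: supp_agent_p4)
  fix c assume "c \<notin> supp P - {x}"
  hence "ralpha (rswp x c (rep_agent P)) (rswp y c (rep_agent Q))" using r by (simp add: supp_agent_p4)
  thus "swp x c P = swp y c Q" unfolding swp_agent_def swp_ragent ralpha_abs_eq .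
qed

lemma Res_eq:
  assumes "Res x (P::('t,'c,'a) agent) = Res y Q"
  shows "supp P - {x} = supp Q - {y}" "\<And>c. c \<notin> supp P - {x} \<Longrightarrow> swp x c P = swp y c Q"
proof -
  have "ralpha (RRes x (rep_agent P)) (RRes y (rep_agent Q))" using assms unfolding Res_def ralpha_abs_eq .
  hence r: "rinv (RRes x (rep_agent P)) (RRes y (rep_agent Q))" by (rule ralpha_rinv_p4)
  show "supp P - {x} = supp Q - {y}" using r by (simp add: supp_agent_p4)
  fix c assume "c \<notin> supp P - {x}"
  hence "ralpha (rswp x c (rep_agent P)) (rswp y c (rep_agent Q))" using r by (simp add: supp_agent_p4)
  thus "swp x c P = swp y c Q" unfolding swp_agent_def swp_ragent ralpha_abs_eq .
qed

lemma rename_agent: "fresh y (P::('t,'c,'a) agent) \<Longrightarrow> \<exists>r. ralpha (rep_agent P) r \<and> fresh y r"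
proof -
  assume "fresh y P"
  obtain r where r: "ralpha (rep_agent P) r" "supp r \<inter> {y} \<subseteq> rfv (rep_agent P)"
    using rename_raw_p4[of "{y}" "rep_agent P"] by auto
  thus ?thesis using \<open>fresh y P\<close> by (auto simp: fresh_def supp_agent_p4)
qed

lemma In_alpha: "fresh y (P::('t,'c,'a) agent) \<Longrightarrow> In M x P = In M y (swp x y P)"
proof -
  assume "fresh y P"
  then obtain r where r: "ralpha (rep_agent P) r" "fresh y r" using rename_agent by blast
  have "ralpha (RIn M x (rep_agent P)) (RIn M x r)" using r(1) by (rule al_cin)
  moreover have "ralpha (RIn M x r) (RIn M y (swp x y r))" using r(2) by (rule al_in)
  moreover have "ralpha (rep_agent (swp x y P)) (swp x y r)"
    using al_trans[OF rep_swp ralpha_eqvt_p4[OF r(1)]] by simp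
  ultimately show ?thesis unfolding In_def ralpha_abs_eq by (blast intro: al_trans al_cin al_sym)
qed

lemma Res_alpha: "fresh y (P::('t,'c,'a) agent) \<Longrightarrow> Res x P = Res y (swp x y P)"
proof -
  assume "fresh y P"
  then obtain r where r: "ralpha (rep_agent P) r" "fresh y r" using rename_agent by blast
  have "ralpha (RRes x (rep_agent P)) (RRes x r)" using r(1) by (rule al_cres)
  moreover have "ralpha (RRes x r) (RRes y (swp x y r))" using r(2) by (rule al_res)
  moreover have "ralpha (rep_agent (swp x y P)) (swp x y r)"
    using al_trans[OF rep_swp ralpha_eqvt_p4[OF r(1)]] by simp
  ultimately show ?thesis unfolding Res_def ralpha_abs_eq by (blast intro: al_trans al_cres al_sym)
qed

lemma asize_swp[simp]: "asize (swp a b (P::('t,'c,'a) agent)) = asize P"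
  unfolding asize_def using ralpha_size[OF rep_swp] by simp

end

lemma swp_list_length[simp]: "length (swp a b xs) = length xs"
  by (simp add: swp_list_def)
lemma swp_list_nth[simp]: "i < length xs \<Longrightarrow> swp a b xs ! i = swp a b (xs ! i)"
  by (simp add: swp_list_def)
lemma swp_list_set: "set (swp a b xs) = swp a b ` set xs"
  by (simp add: swp_list_def)

lemma perm_swaps_single[simp]: "perm_swaps [(b, a)] X = swp b a X"
  by (simp add: perm_swaps_def)

context
  fixes sb :: "'x::pt \<Rightarrow> name list \<Rightarrow> 't::pt list \<Rightarrow> 'x"
  assumes OK: "subst_ok sb" and NTx: "nominal_type TYPE('x)" and NTt: "nominal_type TYPE('t)"
begin

lemma sb_eqvt: "swp a b (sb X [x] [L]) = sb (swp a b X) [swap_name a b x] [swp a b L]"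
proof -
  have "\<forall>a b X xs Ts. swp a b (sb X xs Ts) = sb (swp a b X) (swp a b xs) (swp a b Ts)"
    using OK unfolding subst_ok_def by blast
  from this[rule_format, of a b X "[x]" "[L]"] show ?thesis by simp
qed

lemma sb_id: "fresh x X \<Longrightarrow> sb X [x] [L] = X"
proof -
  assume f: "fresh x X"
  have "\<forall>X xs Ts. distinct xs \<and> length xs = length Ts \<and> fresh_star (set xs) X \<longrightarrow> sb X xs Ts = X"
    using OK unfolding subst_ok_def by blast
  from this[rule_format, of "[x]" "[L]" X] show ?thesis using f by (simp add: fresh_star_def)
qed

lemma sb_alpha: "fresh x X \<Longrightarrow> sb (swp z x X) [x] [L] = sb X [z] [L]"
proof (cases "x = z")
  case True thus ?thesis by (simp only: True swp_id[OF NTx])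
next
  case False
  assume fx: "fresh x X"
  have c3: "\<forall>X xs bs Ts. distinct xs \<and> distinct bs \<and> length xs = length Ts \<and> length bs = length xs \<and>
         fresh_star (set bs) X \<and> set bs \<inter> set xs = {}
         \<longrightarrow> sb X xs Ts = sb (perm_swaps (zip bs xs) X) bs Ts" using OK unfolding subst_ok_def by blast
  have "sb X [z] [L] = sb (perm_swaps (zip [x] [z]) X) [x] [L]"
    using c3[rule_format, of "[z]" "[x]" "[L]" X] False fx by (simp add: fresh_star_def)
  thus ?thesis using swp_sym[OF NTx, of x z X] by simp
qed

lemma sb_fresh1: "fresh y L \<Longrightarrow> y \<noteq> x \<Longrightarrow> fresh y X \<Longrightarrow> fresh y (sb X [x] [L])"
proof -
  assume a: "fresh y L" "y \<noteq> x" "fresh y X"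
  have "{d. swp y d (sb X [x] [L]) \<noteq> sb X [x] [L]} \<subseteq> supp X \<union> supp L \<union> {x, y}"
  proof
    fix d assume d: "d \<in> {d. swp y d (sb X [x] [L]) \<noteq> sb X [x] [L]}"
    show "d \<in> supp X \<union> supp L \<union> {x, y}"
    proof (rule ccontr)
      assume "d \<notin> supp X \<union> supp L \<union> {x, y}"
      hence dd: "fresh d X" "fresh d L" "d \<noteq> x" "d \<noteq> y" by (auto simp: fresh_def)
      have "swp y d X = X" using fresh_swp_id[OF NTx] a(3) dd(1) by blast
      moreover have "swp y d L = L" using fresh_swp_id[OF NTt] a(1) dd(2) by blast
      moreover have "swap_name y d x = x" using a(2) dd(3) by simp
      ultimately show False using d sb_eqvt[of y d X x L] by simp
    qed
  qed
  hence "finite {d. swp y d (sb X [x] [L]) \<noteq> sb X [x] [L]}"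
    by (rule finite_subset) (simp add: finite_supp[OF NTx] finite_supp[OF NTt])
  thus ?thesis by (simp add: fresh_def2)
qed

lemma sb_fresh: "fresh y L \<Longrightarrow> y = x \<or> fresh y X \<Longrightarrow> fresh y (sb X [x] [L])"
proof -
  assume a: "fresh y L" "y = x \<or> fresh y X"
  show ?thesis
  proof (cases "y = x")
    case False thus ?thesis using a sb_fresh1 by blast
  next
    case True
    obtain w where w: "w \<notin> {x}" "fresh w (X, L)"
      using obtain_fresh[OF nominal_prod[OF NTx NTt], of "{x}" "(X, L)"] by auto
    have "sb X [x] [L] = sb (swp x w X) [w] [L]"
      using sb_alpha[of w X x L] w by simp
    moreover have "fresh x (swp x w X)"
      using w fresh_eqvt2[OF NTx, of x x w X] by simp
    ultimately show ?thesis using sb_fresh1[of y L w "swp x w X"] a True w by auto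
  qed
qed

end

lemma fst_swp[simp]: "fst (swp a b p) = swp a b (fst p)" by (simp add: swp_prod_def)
lemma snd_swp[simp]: "snd (swp a b p) = swp a b (snd p)" by (simp add: swp_prod_def)

context
  fixes S :: "('t::pt,'c::pt,'a::pt) psi"
  assumes PC: "psi_calculus S"
begin

lemma NTt[simp]: "nominal_type TYPE('t)" using PC unfolding psi_calculus_def by blast
lemma NTc[simp]: "nominal_type TYPE('c)" using PC unfolding psi_calculus_def by blast
lemma NTa[simp]: "nominal_type TYPE('a)" using PC unfolding psi_calculus_def by blast
lemma OKT: "subst_ok (subT S)" using PC unfolding psi_calculus_def by blast
lemma OKC: "subst_ok (subC S)" using PC unfolding psi_calculus_def by blast
lemma OKA: "subst_ok (subA S)" using PC unfolding psi_calculus_def by blast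

lemmas NTr_p6[simp] = nominal_ragent[OF NTt NTc NTa]
lemmas NTag_p6[simp] = nominal_agent[OF NTt NTc NTa]

lemmas subT_eqvt = sb_eqvt[OF OKT NTt NTt]
lemmas subT_id = sb_id[OF OKT NTt NTt]
lemmas subT_alpha = sb_alpha[OF OKT NTt NTt]
lemmas subT_fresh = sb_fresh[OF OKT NTt NTt]
lemmas subC_eqvt = sb_eqvt[OF OKC NTc NTt]
lemmas subC_id = sb_id[OF OKC NTc NTt]
lemmas subC_alpha = sb_alpha[OF OKC NTc NTt]
lemmas subC_fresh = sb_fresh[OF OKC NTc NTt]
lemmas subA_eqvt = sb_eqvt[OF OKA NTa NTt]
lemmas subA_id = sb_id[OF OKA NTa NTt]
lemmas subA_alpha = sb_alpha[OF OKA NTa NTt]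
lemmas subA_fresh = sb_fresh[OF OKA NTa NTt]

lemmas In_alpha_p6 = In_alpha[OF NTt NTc NTa]
lemmas Res_alpha_p6 = Res_alpha[OF NTt NTc NTa]
lemmas In_eq_p6 = In_eq[OF NTt NTc NTa]
lemmas Res_eq_p6 = Res_eq[OF NTt NTc NTa]

lemma fresh_Out[simp]: "fresh a (Out M N (P::('t,'c,'a) agent)) = (fresh a M \<and> fresh a N \<and> fresh a P)"
  by (simp add: fresh_def)
lemma fresh_In[simp]: "fresh a (In M x (P::('t,'c,'a) agent)) = (fresh a M \<and> (a = x \<or> fresh a P))"
  by (auto simp: fresh_def)
lemma fresh_Res[simp]: "fresh a (Res x (P::('t,'c,'a) agent)) = (a = x \<or> fresh a P)"
  by (auto simp: fresh_def)
lemma fresh_Par[simp]: "fresh a (Par P (Q::('t,'c,'a) agent)) = (fresh a P \<and> fresh a Q)"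
  by (simp add: fresh_def)
lemma fresh_Bang[simp]: "fresh a (Bang (P::('t,'c,'a) agent)) = fresh a P"
  by (simp add: fresh_def)
lemma fresh_Ass[simp]: "fresh a (Ass \<Psi> :: ('t,'c,'a) agent) = fresh a \<Psi>"
  by (simp add: fresh_def)
lemma fresh_Case[simp]: "fresh a (Case (cs::('c \<times> ('t,'c,'a) agent) list)) = (\<forall>(\<phi>, P)\<in>set cs. fresh a \<phi> \<and> fresh a P)"
  by (auto simp: fresh_def)
lemma fresh_resl[simp]: "fresh a (resl as (P::('t,'c,'a) agent)) = (a \<in> set as \<or> fresh a P)"
  by (auto simp: fresh_def)

lemma asubst_eqvt: "asubst S P x L P' \<Longrightarrow> asubst S (swp a b P) (swap_name a b x) (swp a b L) (swp a b P')"
proof (induction rule: asubst.induct)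
  case (1 P x L P' M N)
  thus ?case by (simp add: subT_eqvt asubst.intros(1))
next
  case (2 P x L P' y M)
  have "swap_name a b y \<noteq> swap_name a b x" using 2 by simp
  moreover have "fresh (swap_name a b y) (swp a b L)" using 2 by simp
  ultimately show ?case using 2 by (simp add: subT_eqvt asubst.intros(2))
next
  case (3 cs' cs x L)
  show ?case
    by (simp, rule asubst.intros(3)) (use 3 in \<open>simp_all add: subC_eqvt\<close>)
next
  case (4 P x L P' y)
  have "swap_name a b y \<noteq> swap_name a b x" using 4 by simp
  moreover have "fresh (swap_name a b y) (swp a b L)" using 4 by simp
  ultimately show ?case using 4 by (simp add: asubst.intros(4))
next
  case (5 P x L P' Q Q')
  thus ?case by (simp add: asubst.intros(5))
next
  case (6 P x L P')
  thus ?case by (simp add: asubst.intros(6))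
next
  case (7 \<Psi> x L)
  thus ?case by (simp add: subA_eqvt asubst.intros(7))
qed

lemma asubst_ex: "\<exists>P'. asubst S P x L P'"
proof (induction "asize P" arbitrary: P rule: less_induct)
  case less
  show ?case
  proof (cases P rule: agent_exhaust)
    case (Out M N P0)
    then obtain P0' where "asubst S P0 x L P0'" using less by auto
    thus ?thesis using Out by (blast intro: asubst.intros)
  next
    case (In M y P0)
    obtain w where w: "w \<notin> {x}" "fresh w (L, P0)"
      using obtain_fresh[OF nominal_prod[OF NTt NTag_p6], of "{x}" "(L, P0)"] by auto
    have e: "P = In M w (swp y w P0)" using In In_alpha_p6 w by simp
    obtain P0' where "asubst S (swp y w P0) x L P0'" using less[of "swp y w P0"] In by auto
    hence "asubst S (In M w (swp y w P0)) x L (In (subT S M [x] [L]) w P0')" using w by (intro asubst.intros(2)) auto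
    thus ?thesis using e by blast
  next
    case (Case cs)
    have ex: "\<And>\<phi> Q. (\<phi>, Q) \<in> set cs \<Longrightarrow> \<exists>Q'. asubst S Q x L Q'"
      using less Case asize_case by blast
    define cs' where "cs' = map (\<lambda>(\<phi>, Q). (subC S \<phi> [x] [L], SOME Q'. asubst S Q x L Q')) cs"
    have "asubst S (Case cs) x L (Case cs')"
    proof (rule asubst.intros(3))
      show "length cs' = length cs" by (simp add: cs'_def)
      show "\<forall>i<length cs. fst (cs' ! i) = subC S (fst (cs ! i)) [x] [L] \<and> asubst S (snd (cs ! i)) x L (snd (cs' ! i))"
      proof (intro allI impI)
        fix i assume i: "i < length cs"
        obtain \<phi> Q where q: "cs ! i = (\<phi>, Q)" by (cases "cs ! i")
        have "(\<phi>, Q) \<in> set cs" using i q by (metis nth_mem)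
        hence "asubst S Q x L (SOME Q'. asubst S Q x L Q')" using ex by (blast intro: someI_ex)
        thus "fst (cs' ! i) = subC S (fst (cs ! i)) [x] [L] \<and> asubst S (snd (cs ! i)) x L (snd (cs' ! i))"
          using i q by (simp add: cs'_def)
      qed
    qed
    thus ?thesis using Case by blast
  next
    case (Res y P0)
    obtain w where w: "w \<notin> {x}" "fresh w (L, P0)"
      using obtain_fresh[OF nominal_prod[OF NTt NTag_p6], of "{x}" "(L, P0)"] by auto
    have e: "P = Res w (swp y w P0)" using Res Res_alpha_p6 w by simp
    obtain P0' where "asubst S (swp y w P0) x L P0'" using less[of "swp y w P0"] Res by auto
    hence "asubst S (Res w (swp y w P0)) x L (Res w P0')" using w by (intro asubst.intros(4)) auto
    thus ?thesis using e by blast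
  next
    case (Par P1 P2)
    obtain P1' where "asubst S P1 x L P1'" using less[of P1] Par by auto
    moreover obtain P2' where "asubst S P2 x L P2'" using less[of P2] Par by auto
    ultimately show ?thesis using Par by (blast intro: asubst.intros(5))
  next
    case (Bang P0)
    obtain P0' where "asubst S P0 x L P0'" using less Bang by auto
    thus ?thesis using Bang by (blast intro: asubst.intros(6))
  next
    case (Ass \<Psi>)
    thus ?thesis by (blast intro: asubst.intros(7))
  qed
qed

end

context
  fixes S :: "('t::pt,'c::pt,'a::pt) psi"
  assumes PC: "psi_calculus S"
begin

lemmas NTt_p7[simp] = NTt[OF PC]
lemmas NTc_p7[simp] = NTc[OF PC]
lemmas NTa_p7[simp] = NTa[OF PC]
lemmas NTr_p7[simp] = nominal_ragent[OF NTt_p7 NTc_p7 NTa_p7]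
lemmas NTag_p7[simp] = nominal_agent[OF NTt_p7 NTc_p7 NTa_p7]
lemmas subT_eqvt_p7 = subT_eqvt[OF PC]
lemmas subT_id_p7 = subT_id[OF PC]
lemmas subT_alpha_p7 = subT_alpha[OF PC]
lemmas subT_fresh_p7 = subT_fresh[OF PC]
lemmas subC_eqvt_p7 = subC_eqvt[OF PC]
lemmas subC_id_p7 = subC_id[OF PC]
lemmas subC_alpha_p7 = subC_alpha[OF PC]
lemmas subC_fresh_p7 = subC_fresh[OF PC]
lemmas subA_eqvt_p7 = subA_eqvt[OF PC]
lemmas subA_id_p7 = subA_id[OF PC]
lemmas subA_alpha_p7 = subA_alpha[OF PC]
lemmas subA_fresh_p7 = subA_fresh[OF PC]
lemmas In_alpha_p7 = In_alpha_p6[OF PC]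
lemmas Res_alpha_p7 = Res_alpha_p6[OF PC]
lemmas In_eq_p7 = In_eq_p6[OF PC]
lemmas Res_eq_p7 = Res_eq_p6[OF PC]
lemmas asubst_eqvt_p7 = asubst_eqvt[OF PC]
lemmas asubst_ex_p7 = asubst_ex[OF PC]

lemma asubst_swp_fix:
  assumes "asubst S P x L P'" "fresh a L" "fresh b L" "a \<noteq> x" "b \<noteq> x"
  shows "asubst S (swp a b P) x L (swp a b P')"
proof -
  have "swp a b L = L" using assms fresh_swp_id[OF NTt_p7] by blast
  thus ?thesis using asubst_eqvt_p7[OF assms(1), of a b] assms by simp
qed

lemma asubst_Out_inv: "asubst S (Out M N P) x L R \<Longrightarrow> \<exists>P'. R = Out (subT S M [x] [L]) (subT S N [x] [L]) P' \<and> asubst S P x L P'"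
  by (erule asubst.cases; simp)

lemma asubst_In_inv: "asubst S (In M y P) x L R \<Longrightarrow>
   \<exists>y2 Q Q'. In M y P = In M y2 Q \<and> R = In (subT S M [x] [L]) y2 Q' \<and> asubst S Q x L Q' \<and> y2 \<noteq> x \<and> fresh y2 L"
  apply (erule asubst.cases; simp)
  apply (frule In_eq_p7(1))
  apply blast
  done

lemma asubst_Res_inv: "asubst S (Res y P) x L R \<Longrightarrow>
   \<exists>y2 Q Q'. Res y P = Res y2 Q \<and> R = Res y2 Q' \<and> asubst S Q x L Q' \<and> y2 \<noteq> x \<and> fresh y2 L"
  by (erule asubst.cases; simp) blast

lemma asubst_Case_inv: "asubst S (Case cs) x L R \<Longrightarrow>
   \<exists>cs'. R = Case cs' \<and> length cs' = length cs \<and> (\<forall>i<length cs. fst (cs' ! i) = subC S (fst (cs ! i)) [x] [L] \<and> asubst S (snd (cs ! i)) x L (snd (cs' ! i)))"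
  by (erule asubst.cases; simp)

lemma asubst_Par_inv: "asubst S (Par P Q) x L R \<Longrightarrow> \<exists>P' Q'. R = Par P' Q' \<and> asubst S P x L P' \<and> asubst S Q x L Q'"
  by (erule asubst.cases; simp)

lemma asubst_Bang_inv: "asubst S (Bang P) x L R \<Longrightarrow> \<exists>P'. R = Bang P' \<and> asubst S P x L P'"
  by (erule asubst.cases; simp)

lemma asubst_Ass_inv: "asubst S (Ass \<Psi>) x L R \<Longrightarrow> R = Ass (subA S \<Psi> [x] [L])"
  by (erule asubst.cases; simp)

lemma asubst_unique: "asubst S P x L P1 \<Longrightarrow> asubst S P x L P2 \<Longrightarrow> P1 = P2"
proof (induction arbitrary: P2 rule: asubst.induct)
  case (1 P x L P' M N)
  obtain Q' where "P2 = Out (subT S M [x] [L]) (subT S N [x] [L]) Q'" "asubst S P x L Q'"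
    using asubst_Out_inv[OF 1(3)] by blast
  thus ?case using "1.IH" by simp
next
  case (2 P x L P' y M)
  obtain y2 Q Q' where h: "In M y P = In M y2 Q" "P2 = In (subT S M [x] [L]) y2 Q'" "asubst S Q x L Q'" "y2 \<noteq> x" "fresh y2 L"
    using asubst_In_inv[OF 2(5)] by blast
  obtain c where c: "c \<notin> {x, y, y2}" "fresh c (L, P, Q, P', Q')"
    using obtain_fresh[of "{x, y, y2}" "(L, P, Q, P', Q')"] by auto
  have e: "swp y c P = swp y2 c Q" using In_eq_p7(3)[OF h(1)] c by (auto simp: fresh_def)
  have "asubst S (swp y2 c Q) x L (swp y2 c Q')" using asubst_swp_fix[OF h(3)] h c by auto
  hence "asubst S (swp y c P) x L (swp y2 c Q')" using e by simp
  hence "asubst S (swp y c (swp y c P)) x L (swp y c (swp y2 c Q'))"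
    by (rule asubst_swp_fix) (use c \<open>fresh y L\<close> \<open>y \<noteq> x\<close> in auto)
  hence "asubst S P x L (swp y c (swp y2 c Q'))" by simp
  hence P': "P' = swp y c (swp y2 c Q')" using "2.IH" by blast
  have "In (subT S M [x] [L]) y P' = In (subT S M [x] [L]) c (swp y c P')" using c by (intro In_alpha_p7) auto
  also have "\<dots> = In (subT S M [x] [L]) c (swp y2 c Q')" using P' by simp
  also have "\<dots> = In (subT S M [x] [L]) y2 Q'" using c by (intro In_alpha_p7[symmetric]) auto
  finally show ?case using h by simp
next
  case (3 cs' cs x L)
  obtain cs2 where h: "P2 = Case cs2" "length cs2 = length cs"
    "\<forall>i<length cs. fst (cs2 ! i) = subC S (fst (cs ! i)) [x] [L] \<and> asubst S (snd (cs ! i)) x L (snd (cs2 ! i))"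
    using asubst_Case_inv[OF 3(3)] by blast
  have "cs' = cs2"
  proof (rule nth_equalityI)
    show "length cs' = length cs2" using h 3 by simp
    fix i assume "i < length cs'"
    hence i: "i < length cs" using 3 by simp
    have "fst (cs' ! i) = fst (cs2 ! i)" using h(3) 3(2) i by simp
    moreover have "snd (cs' ! i) = snd (cs2 ! i)" using h(3) 3(2) i by blast
    ultimately show "cs' ! i = cs2 ! i" by (rule prod_eqI)
  qed
  thus ?case using h by simp
next
  case (4 P x L P' y)
  obtain y2 Q Q' where h: "Res y P = Res y2 Q" "P2 = Res y2 Q'" "asubst S Q x L Q'" "y2 \<noteq> x" "fresh y2 L"
    using asubst_Res_inv[OF 4(5)] by blast
  obtain c where c: "c \<notin> {x, y, y2}" "fresh c (L, P, Q, P', Q')"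
    using obtain_fresh[of "{x, y, y2}" "(L, P, Q, P', Q')"] by auto
  have e: "swp y c P = swp y2 c Q" using Res_eq_p7(2)[OF h(1)] c by (auto simp: fresh_def)
  have "asubst S (swp y2 c Q) x L (swp y2 c Q')" using asubst_swp_fix[OF h(3)] h c by auto
  hence "asubst S (swp y c P) x L (swp y2 c Q')" using e by simp
  hence "asubst S (swp y c (swp y c P)) x L (swp y c (swp y2 c Q'))"
    by (rule asubst_swp_fix) (use c \<open>fresh y L\<close> \<open>y \<noteq> x\<close> in auto)
  hence "asubst S P x L (swp y c (swp y2 c Q'))" by simp
  hence P': "P' = swp y c (swp y2 c Q')" using "4.IH" by blast
  have "Res y P' = Res c (swp y c P')" using c by (intro Res_alpha_p7) auto
  also have "\<dots> = Res c (swp y2 c Q')" using P' by simp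
  also have "\<dots> = Res y2 Q'" using c by (intro Res_alpha_p7[symmetric]) auto
  finally show ?case using h by simp
next
  case (5 P x L P' Q Q')
  obtain P'' Q'' where "P2 = Par P'' Q''" "asubst S P x L P''" "asubst S Q x L Q''"
    using asubst_Par_inv[OF 5(5)] by blast
  thus ?case using "5.IH" by simp
next
  case (6 P x L P')
  obtain P'' where "P2 = Bang P''" "asubst S P x L P''"
    using asubst_Bang_inv[OF 6(3)] by blast
  thus ?case using "6.IH" by simp
next
  case (7 \<Psi> x L)
  thus ?case using asubst_Ass_inv by simp
qed

end

context
  fixes S :: "('t::pt,'c::pt,'a::pt) psi"
  assumes PC: "psi_calculus S"
begin

lemmas NTt_p8[simp] = NTt_p7[OF PC]
lemmas NTc_p8[simp] = NTc_p7[OF PC]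
lemmas NTa_p8[simp] = NTa_p7[OF PC]
lemmas NTr_p8[simp] = nominal_ragent[OF NTt_p8 NTc_p8 NTa_p8]
lemmas NTag_p8[simp] = nominal_agent[OF NTt_p8 NTc_p8 NTa_p8]
lemmas fresh_ag[simp] = fresh_Out[OF PC] fresh_In[OF PC] fresh_Res[OF PC] fresh_Par[OF PC] fresh_Bang[OF PC]
  fresh_Ass[OF PC] fresh_Case[OF PC] fresh_resl[OF PC]
lemmas subT_eqvt_p8 = subT_eqvt_p7[OF PC]
lemmas subT_id_p8 = subT_id_p7[OF PC]
lemmas subT_alpha_p8 = subT_alpha_p7[OF PC]
lemmas subT_fresh_p8 = subT_fresh_p7[OF PC]
lemmas subC_eqvt_p8 = subC_eqvt_p7[OF PC]
lemmas subC_id_p8 = subC_id_p7[OF PC]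
lemmas subC_alpha_p8 = subC_alpha_p7[OF PC]
lemmas subC_fresh_p8 = subC_fresh_p7[OF PC]
lemmas subA_eqvt_p8 = subA_eqvt_p7[OF PC]
lemmas subA_id_p8 = subA_id_p7[OF PC]
lemmas subA_alpha_p8 = subA_alpha_p7[OF PC]
lemmas subA_fresh_p8 = subA_fresh_p7[OF PC]
lemmas In_alpha_p8 = In_alpha_p7[OF PC]
lemmas Res_alpha_p8 = Res_alpha_p7[OF PC]
lemmas asubst_eqvt_p8 = asubst_eqvt_p7[OF PC]
lemmas asubst_ex_p8 = asubst_ex_p7[OF PC]
lemmas asubst_unique_p8 = asubst_unique[OF PC]

lemma subst_asubst: "asubst S P x L (subst_agent S P x L)"
  unfolding subst_agent_def
  by (rule theI') (use asubst_ex_p8 asubst_unique_p8 in blast)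

lemma subst_eq: "asubst S P x L P' \<Longrightarrow> subst_agent S P x L = P'"
  using subst_asubst asubst_unique_p8 by blast

lemma subst_Out[simp]: "subst_agent S (Out M N P) x L = Out (subT S M [x] [L]) (subT S N [x] [L]) (subst_agent S P x L)"
  by (rule subst_eq, rule asubst.intros(1), rule subst_asubst)
lemma subst_In: "y \<noteq> x \<Longrightarrow> fresh y L \<Longrightarrow> subst_agent S (In M y P) x L = In (subT S M [x] [L]) y (subst_agent S P x L)"
  by (rule subst_eq, rule asubst.intros(2), rule subst_asubst)
lemma subst_Res: "y \<noteq> x \<Longrightarrow> fresh y L \<Longrightarrow> subst_agent S (Res y P) x L = Res y (subst_agent S P x L)"
  by (rule subst_eq, rule asubst.intros(4), rule subst_asubst)
lemma subst_Par[simp]: "subst_agent S (Par P Q) x L = Par (subst_agent S P x L) (subst_agent S Q x L)"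
  by (rule subst_eq, rule asubst.intros(5), rule subst_asubst, rule subst_asubst)
lemma subst_Bang[simp]: "subst_agent S (Bang P) x L = Bang (subst_agent S P x L)"
  by (rule subst_eq, rule asubst.intros(6), rule subst_asubst)
lemma subst_Ass[simp]: "subst_agent S (Ass \<Psi>) x L = Ass (subA S \<Psi> [x] [L])"
  by (rule subst_eq, rule asubst.intros(7))
lemma subst_Case: "subst_agent S (Case cs) x L = Case (map (\<lambda>(\<phi>, P). (subC S \<phi> [x] [L], subst_agent S P x L)) cs)"
  by (rule subst_eq, rule asubst.intros(3)) (auto simp: split_def subst_asubst)

lemma subst_eqvt: "swp a b (subst_agent S P x L) = subst_agent S (swp a b P) (swap_name a b x) (swp a b L)"
  by (rule subst_eq[symmetric], rule asubst_eqvt_p8, rule subst_asubst)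

lemma asubst_fresh: "asubst S P x L P' \<Longrightarrow> fresh y L \<Longrightarrow> y = x \<or> fresh y P \<Longrightarrow> fresh y P'"
proof (induction rule: asubst.induct)
  case (1 P x L P' M N) thus ?case using subT_fresh_p8 by auto
next
  case (2 P x L P' y' M) thus ?case using subT_fresh_p8 by auto
next
  case (3 cs' cs x L)
  show ?case unfolding fresh_Case[OF PC]
  proof (intro ballI, clarify)
    fix \<phi> Q assume m: "(\<phi>, Q) \<in> set cs'"
    then obtain i where i: "i < length cs'" "cs' ! i = (\<phi>, Q)" by (auto simp: in_set_conv_nth)
    have i2: "i < length cs" using i 3 by simp
    have mem: "cs ! i \<in> set cs" using i2 by simp
    have f: "y = x \<or> (fresh y (fst (cs ! i)) \<and> fresh y (snd (cs ! i)))"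
      using 3(4) mem by (cases "cs ! i") (auto simp: fresh_Case[OF PC])
    have "\<phi> = subC S (fst (cs ! i)) [x] [L]" using 3(2) i i2 by (metis fst_conv)
    hence "fresh y \<phi>" using subC_fresh_p8[OF 3(3)] f by blast
    moreover have "fresh y Q" using 3(2) i i2 f 3(3) by (metis snd_conv)
    ultimately show "fresh y \<phi> \<and> fresh y Q" by simp
  qed
next
  case (4 P x L P' y') thus ?case by auto
next
  case (5 P x L P' Q Q') thus ?case by auto
next
  case (6 P x L P') thus ?case by auto
next
  case (7 \<Psi> x L) thus ?case using subA_fresh_p8 by auto
qed

lemma subst_fresh: "fresh y L \<Longrightarrow> y = x \<or> fresh y P \<Longrightarrow> fresh y (subst_agent S P x L)"
  using asubst_fresh[OF subst_asubst] by blast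

lemma asubst_id: "asubst S P x L P' \<Longrightarrow> fresh x P \<Longrightarrow> P' = P"
proof (induction rule: asubst.induct)
  case (3 cs' cs x L)
  have "cs' = cs"
  proof (rule nth_equalityI)
    show "length cs' = length cs" using 3 by simp
    fix i assume "i < length cs'"
    hence i: "i < length cs" using 3 by simp
    have mem: "cs ! i \<in> set cs" using i by simp
    have f: "fresh x (fst (cs ! i))" "fresh x (snd (cs ! i))"
      using 3(3) mem by (cases "cs ! i"; auto simp: fresh_Case[OF PC])+
    have "fst (cs' ! i) = fst (cs ! i)" using 3(2) i f subC_id_p8 by metis
    moreover have "snd (cs' ! i) = snd (cs ! i)" using 3(2) i f by blast
    ultimately show "cs' ! i = cs ! i" by (rule prod_eqI)
  qed
  thus ?case by simp
qed (auto simp: subT_id_p8 subA_id_p8)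

lemma subst_id: "fresh x P \<Longrightarrow> subst_agent S P x L = P"
  using asubst_id[OF subst_asubst] by blast

lemma subst_alpha_aux: "x \<noteq> z \<Longrightarrow> fresh x P \<Longrightarrow> subst_agent S (swp z x P) x L = subst_agent S P z L"
proof (induction "asize P" arbitrary: P rule: less_induct)
  case less
  show ?case
  proof (cases P rule: agent_exhaust)
    case (Out M N P0)
    thus ?thesis using less by (auto simp: subT_alpha_p8)
  next
    case (In M y P0)
    obtain w where w: "w \<notin> {x, z}" "fresh w (L, P0)"
      using obtain_fresh[of "{x, z}" "(L, P0)"] by auto
    define P1 where "P1 = swp y w P0"
    have e: "P = In M w P1" using In In_alpha_p8 w P1_def by simp
    have fx: "fresh x M" "fresh x P1" using less(3) e w by auto
    have "subst_agent S (swp z x P) x L = subst_agent S (In (swp z x M) w (swp z x P1)) x L"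
      using e w by simp
    also have "\<dots> = In (subT S (swp z x M) [x] [L]) w (subst_agent S (swp z x P1) x L)"
      using w by (intro subst_In) auto
    also have "\<dots> = In (subT S M [z] [L]) w (subst_agent S P1 z L)"
      using fx less(1)[of P1] less(2) e subT_alpha_p8 by simp
    also have "\<dots> = subst_agent S P z L" using e w by (simp add: subst_In)
    finally show ?thesis .
  next
    case (Case cs)
    have "\<And>\<phi> Q. (\<phi>, Q) \<in> set cs \<Longrightarrow> subC S (swp z x \<phi>) [x] [L] = subC S \<phi> [z] [L] \<and> subst_agent S (swp z x Q) x L = subst_agent S Q z L"
    proof -
      fix \<phi> Q assume m: "(\<phi>, Q) \<in> set cs"
      have "fresh x \<phi>" "fresh x Q" using less(3) Case m by (auto simp: fresh_Case[OF PC])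
      thus "subC S (swp z x \<phi>) [x] [L] = subC S \<phi> [z] [L] \<and> subst_agent S (swp z x Q) x L = subst_agent S Q z L"
        using less(1)[of Q] less(2) asize_case[OF m] Case subC_alpha_p8 by auto
    qed
    thus ?thesis using Case by (auto simp: subst_Case swp_list_def)
  next
    case (Res y P0)
    obtain w where w: "w \<notin> {x, z}" "fresh w (L, P0)"
      using obtain_fresh[of "{x, z}" "(L, P0)"] by auto
    define P1 where "P1 = swp y w P0"
    have e: "P = Res w P1" using Res Res_alpha_p8 w P1_def by simp
    have fx: "fresh x P1" using less(3) e w by auto
    have "subst_agent S (swp z x P) x L = subst_agent S (Res w (swp z x P1)) x L"
      using e w by simp
    also have "\<dots> = Res w (subst_agent S (swp z x P1) x L)"
      using w by (intro subst_Res) auto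
    also have "\<dots> = Res w (subst_agent S P1 z L)"
      using fx less(1)[of P1] less(2) e by simp
    also have "\<dots> = subst_agent S P z L" using e w by (simp add: subst_Res)
    finally show ?thesis .
  next
    case (Par P1 P2)
    thus ?thesis using less(1)[of P1] less(1)[of P2] less(2,3) by auto
  next
    case (Bang P0)
    thus ?thesis using less by auto
  next
    case (Ass \<Psi>)
    thus ?thesis using less by (auto simp: subA_alpha_p8)
  qed
qed

lemma subst_alpha: "fresh x P \<Longrightarrow> subst_agent S (swp z x P) x L = subst_agent S P z L"
  by (cases "x = z") (auto simp: subst_alpha_aux)

end

lemma set_swp_names: "set (swp a b (xs::name list)) = swap_name a b ` set xs"
  by (simp add: swp_names)

context
  fixes S :: "('t::pt,'c::pt,'a::pt) psi"
  assumes PC: "psi_calculus S"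
begin

declare PC[simp]
lemmas NTt_p9[simp] = NTt_p8[OF PC]
lemmas NTc_p9[simp] = NTc_p8[OF PC]
lemmas NTa_p9[simp] = NTa_p8[OF PC]
lemmas NTr_p9[simp] = nominal_ragent[OF NTt_p9 NTc_p9 NTa_p9]
lemmas NTag_p9[simp] = nominal_agent[OF NTt_p9 NTc_p9 NTa_p9]
lemmas NTact[simp] = nominal_act[OF NTt_p9]
lemmas subst_eqvt_p9 = subst_eqvt[OF PC]
lemmas subst_fresh_p9 = subst_fresh[OF PC]
lemmas supp_abs_p9 = supp_abs_p4[OF NTt_p9 NTc_p9 NTa_p9]
lemmas swp_abs_p9 = swp_abs_p4[OF NTt_p9 NTc_p9 NTa_p9]
lemmas rfv_supp_p9 = rfv_supp_p4[OF NTt_p9 NTc_p9 NTa_p9]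

lemma PC_chan: "\<forall>a b M N. swp a b (chan_eq S M N) = chan_eq S (swp a b M) (swp a b N)"
  using PC unfolding psi_calculus_def by (elim conjE) assumption
lemma PC_acomp: "\<forall>a b \<Psi> \<Psi>'. swp a b (acomp S \<Psi> \<Psi>') = acomp S (swp a b \<Psi>) (swp a b \<Psi>')"
  using PC unfolding psi_calculus_def by (elim conjE) assumption
lemma PC_aunit: "\<forall>a b. swp a b (aunit S) = aunit S"
  using PC unfolding psi_calculus_def by (elim conjE) assumption
lemma PC_ent: "\<forall>a b \<Psi> \<phi>. entails S \<Psi> \<phi> \<longrightarrow> entails S (swp a b \<Psi>) (swp a b \<phi>)"
  using PC unfolding psi_calculus_def by (elim conjE) assumption

lemma chan_eq_eqvt[simp]: "swp a b (chan_eq S M N) = chan_eq S (swp a b M) (swp a b N)"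
  using PC_chan by blast
lemma acomp_eqvt[simp]: "swp a b (acomp S \<Psi> \<Psi>') = acomp S (swp a b \<Psi>) (swp a b \<Psi>')"
  using PC_acomp by blast
lemma aunit_eqvt[simp]: "swp a b (aunit S) = aunit S"
  using PC_aunit by blast
lemma entails_eqvt: "entails S \<Psi> \<phi> \<Longrightarrow> entails S (swp a b \<Psi>) (swp a b \<phi>)"
  using PC_ent by blast

lemma rframe_eqvt: "rframe S r bs \<Psi> \<Longrightarrow> rframe S (rswp a b r) (swp a b bs) (swp a b \<Psi>)"
proof (induction rule: rframe.induct)
  case (7 P bs1 \<Psi>1 Q bs2 \<Psi>2)
  have "fresh_star (set (swp a b bs1)) (rswp a b Q)" "fresh_star (set (swp a b bs2)) (rswp a b P)"
    using 7 fresh_star_eqvt[OF NTr_p9] by (simp_all add: set_swp_names del: set_map)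
  moreover have "set (swp a b bs1) \<inter> set (swp a b bs2) = {}" using 7 by (auto simp: set_swp_names)
  ultimately show ?case using 7 by (simp add: rframe.intros(7))
qed (auto intro: rframe.intros simp: rswp_case_eq)

lemma frame_of_eqvt: "frame_of S P bs \<Psi> \<Longrightarrow> frame_of S (swp a b P) (swp a b bs) (swp a b \<Psi>)"
  unfolding frame_of_def using rframe_eqvt swp_abs_p9 by metis

lemma rframe_fresh: "rframe S r bs \<Psi> \<Longrightarrow> set bs \<inter> rfv r = {}"
proof (induction rule: rframe.induct)
  case (7 P bs1 \<Psi>1 Q bs2 \<Psi>2)
  have "set bs1 \<inter> rfv Q = {}" using 7(3) rfv_supp_p9 by (auto simp: fresh_star_supp)
  moreover have "set bs2 \<inter> rfv P = {}" using 7(4) rfv_supp_p9 by (auto simp: fresh_star_supp)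
  ultimately show ?case using 7 by auto
qed auto

lemma frame_of_fresh: "frame_of S P bs \<Psi> \<Longrightarrow> fresh_star (set bs) P"
  unfolding frame_of_def fresh_star_supp using rframe_fresh supp_abs_p9 by metis

lemma frame_rename:
  assumes "frame_of S P bs \<Psi>" "b \<in> set bs" "fresh c P"
  shows "frame_of S P (swp b c bs) (swp b c \<Psi>)"
proof -
  have "fresh b P" using frame_of_fresh[OF assms(1)] assms(2) by (simp add: fresh_star_def)
  hence "swp b c P = P" using assms(3) fresh_swp_id[OF NTag_p9] by blast
  thus ?thesis using frame_of_eqvt[OF assms(1), of b c] by simp
qed

end

lemma swap_image_Int[simp]: "swap_name a b ` A \<inter> swap_name a b ` B = swap_name a b ` (A \<inter> B)"
  by (rule image_Int[symmetric]) (auto simp: inj_on_def)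
lemma swap_image_mem[simp]: "(swap_name a b c \<in> swap_name a b ` A) = (c \<in> A)"
  by (auto simp: image_iff)

context
  fixes S :: "('t::pt,'c::pt,'a::pt) psi"
  assumes PC: "psi_calculus S"
begin

declare PC[simp]
lemmas NTt_p10[simp] = NTt_p9[OF PC]
lemmas NTc_p10[simp] = NTc_p9[OF PC]
lemmas NTa_p10[simp] = NTa_p9[OF PC]
lemmas NTr_p10[simp] = nominal_ragent[OF NTt_p10 NTc_p10 NTa_p10]
lemmas NTag_p10[simp] = nominal_agent[OF NTt_p10 NTc_p10 NTa_p10]
lemmas NTact_p10[simp] = nominal_act[OF NTt_p10]
lemmas fresh_ag_p10[simp] = fresh_Out[OF PC] fresh_In[OF PC] fresh_Res[OF PC] fresh_Par[OF PC] fresh_Bang[OF PC]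
  fresh_Ass[OF PC] fresh_Case[OF PC] fresh_resl[OF PC]
lemmas subst_eqvt_p10 = subst_eqvt_p9[OF PC]
lemmas subst_fresh_p10 = subst_fresh_p9[OF PC]
lemmas frame_of_eqvt_p10 = frame_of_eqvt[OF PC]
lemmas entails_eqvt_p10 = entails_eqvt[OF PC]

lemma fs_eqvt: assumes "nominal_type TYPE('x::pt)" "fresh_star (set bs) (X::'x)"
  shows "fresh_star (set (swp a b bs)) (swp a b X)"
  unfolding set_swp_names fresh_star_eqvt[OF assms(1)] by (rule assms(2))

lemma fsbn_eqvt: assumes "nominal_type TYPE('x::pt)" "fresh_star (bn \<alpha>) (X::'x)"
  shows "fresh_star (bn (swp a b \<alpha>)) (swp a b X)"
  unfolding bn_eqvt fresh_star_eqvt[OF assms(1)] by (rule assms(2))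

lemma ltrans_eqvt: "ltrans S \<Psi> P \<alpha> P' \<Longrightarrow> ltrans S (swp a b \<Psi>) (swp a b P) (swp a b \<alpha>) (swp a b P')"
proof (induction rule: ltrans.induct)
  case (l_in \<Psi> M K x P)
  show ?case using entails_eqvt_p10[OF l_in, of a b] by (simp add: ltrans.l_in)
next
  case (l_out \<Psi> M K N P)
  show ?case using entails_eqvt_p10[OF l_out, of a b] by (simp add: ltrans.l_out)
next
  case (l_case \<Psi> P \<alpha> P' \<phi> cs)
  have "(swp a b \<phi>, swp a b P) \<in> set (swp a b cs)" using l_case.hyps(2) by (force simp: swp_list_set)
  thus ?case using l_case.IH entails_eqvt_p10[OF l_case.hyps(3), of a b] by (simp add: ltrans.l_case)
next
  case (l_com1 P bsP \<Psi>P Q bsQ \<Psi>Q \<Psi> M K as N P' x Q')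
  have 1: "frame_of S (swp a b P) (swp a b bsP) (swp a b \<Psi>P)" using l_com1.hyps(1) by (rule frame_of_eqvt_p10)
  have 2: "frame_of S (swp a b Q) (swp a b bsQ) (swp a b \<Psi>Q)" using l_com1.hyps(2) by (rule frame_of_eqvt_p10)
  have 3: "fresh_star (set (swp a b bsP)) (swp a b \<Psi>, swp a b \<Psi>Q, swp a b P, swp a b Q, swp a b M, swp a b bsQ)"
    using fs_eqvt[OF _ l_com1.hyps(3), of a b] by simp
  have 4: "fresh_star (set (swp a b bsQ)) (swp a b \<Psi>, swp a b \<Psi>P, swp a b P, swp a b Q, swp a b K)"
    using fs_eqvt[OF _ l_com1.hyps(4), of a b] by simp
  have 5: "ltrans S (acomp S (swp a b \<Psi>Q) (swp a b \<Psi>)) (swp a b P) (AOut (swp a b M) (swp a b as) (swp a b N)) (swp a b P')"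
    using l_com1.IH(1) by simp
  have 6: "ltrans S (acomp S (swp a b \<Psi>P) (swp a b \<Psi>)) (swp a b Q) (AIn (swp a b K) (swap_name a b x)) (swp a b Q')"
    using l_com1.IH(2) by simp
  have 7: "entails S (acomp S (acomp S (swp a b \<Psi>) (swp a b \<Psi>P)) (swp a b \<Psi>Q)) (chan_eq S (swp a b M) (swp a b K))"
    using entails_eqvt_p10[OF l_com1.hyps(7), of a b] by simp
  have 8: "fresh_star (set (swp a b as)) (swp a b Q)" using fs_eqvt[OF _ l_com1.hyps(8), of a b] by simp
  from ltrans.l_com1[OF 1 2 3 4 5 6 7 8] show ?case by (simp add: subst_eqvt_p10)
next
  case (l_com2 P bsP \<Psi>P Q bsQ \<Psi>Q \<Psi> M K x P' as N Q')
  have 1: "frame_of S (swp a b P) (swp a b bsP) (swp a b \<Psi>P)" using l_com2.hyps(1) by (rule frame_of_eqvt_p10)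
  have 2: "frame_of S (swp a b Q) (swp a b bsQ) (swp a b \<Psi>Q)" using l_com2.hyps(2) by (rule frame_of_eqvt_p10)
  have 3: "fresh_star (set (swp a b bsP)) (swp a b \<Psi>, swp a b \<Psi>Q, swp a b P, swp a b Q, swp a b M, swp a b bsQ)"
    using fs_eqvt[OF _ l_com2.hyps(3), of a b] by simp
  have 4: "fresh_star (set (swp a b bsQ)) (swp a b \<Psi>, swp a b \<Psi>P, swp a b P, swp a b Q, swp a b K)"
    using fs_eqvt[OF _ l_com2.hyps(4), of a b] by simp
  have 5: "ltrans S (acomp S (swp a b \<Psi>Q) (swp a b \<Psi>)) (swp a b P) (AIn (swp a b M) (swap_name a b x)) (swp a b P')"
    using l_com2.IH(1) by simp
  have 6: "ltrans S (acomp S (swp a b \<Psi>P) (swp a b \<Psi>)) (swp a b Q) (AOut (swp a b K) (swp a b as) (swp a b N)) (swp a b Q')"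
    using l_com2.IH(2) by simp
  have 7: "entails S (acomp S (acomp S (swp a b \<Psi>) (swp a b \<Psi>P)) (swp a b \<Psi>Q)) (chan_eq S (swp a b M) (swp a b K))"
    using entails_eqvt_p10[OF l_com2.hyps(7), of a b] by simp
  have 8: "fresh_star (set (swp a b as)) (swp a b P)" using fs_eqvt[OF _ l_com2.hyps(8), of a b] by simp
  from ltrans.l_com2[OF 1 2 3 4 5 6 7 8] show ?case by (simp add: subst_eqvt_p10)
next
  case (l_par1 Q bsQ \<Psi>Q \<Psi> P \<alpha> P')
  have 1: "frame_of S (swp a b Q) (swp a b bsQ) (swp a b \<Psi>Q)" using l_par1.hyps(1) by (rule frame_of_eqvt_p10)
  have 2: "fresh_star (set (swp a b bsQ)) (swp a b \<Psi>, swp a b P, swp a b \<alpha>)"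
    using fs_eqvt[OF _ l_par1.hyps(2), of a b] by simp
  have 3: "ltrans S (acomp S (swp a b \<Psi>Q) (swp a b \<Psi>)) (swp a b P) (swp a b \<alpha>) (swp a b P')"
    using l_par1.IH by simp
  have 4: "fresh_star (bn (swp a b \<alpha>)) (swp a b Q)" using fsbn_eqvt[OF _ l_par1.hyps(4), of a b] by simp
  from ltrans.l_par1[OF 1 2 3 4] show ?case by simp
next
  case (l_par2 P bsP \<Psi>P \<Psi> Q \<alpha> Q')
  have 1: "frame_of S (swp a b P) (swp a b bsP) (swp a b \<Psi>P)" using l_par2.hyps(1) by (rule frame_of_eqvt_p10)
  have 2: "fresh_star (set (swp a b bsP)) (swp a b \<Psi>, swp a b Q, swp a b \<alpha>)"
    using fs_eqvt[OF _ l_par2.hyps(2), of a b] by simp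
  have 3: "ltrans S (acomp S (swp a b \<Psi>P) (swp a b \<Psi>)) (swp a b Q) (swp a b \<alpha>) (swp a b Q')"
    using l_par2.IH by simp
  have 4: "fresh_star (bn (swp a b \<alpha>)) (swp a b P)" using fsbn_eqvt[OF _ l_par2.hyps(4), of a b] by simp
  from ltrans.l_par2[OF 1 2 3 4] show ?case by simp
next
  case (l_scope \<Psi> P \<alpha> P' d)
  have "fresh (swap_name a b d) (swp a b \<alpha>)" "fresh (swap_name a b d) (swp a b \<Psi>)" using l_scope by simp_all
  from ltrans.l_scope[OF l_scope.IH this] show ?case by simp
next
  case (l_open \<Psi> P M as cs N P' d)
  have 1: "ltrans S (swp a b \<Psi>) (swp a b P) (AOut (swp a b M) (swp a b as @ swp a b cs) (swp a b N)) (swp a b P')"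
    using l_open.IH by simp
  have 2: "swap_name a b d \<notin> set (swp a b as)" "swap_name a b d \<notin> set (swp a b cs)"
    using l_open by (simp_all add: set_swp_names del: set_map)
  have 3: "fresh (swap_name a b d) (swp a b \<Psi>)" "fresh (swap_name a b d) (swp a b M)" using l_open by simp_all
  have 4: "swap_name a b d \<in> supp (swp a b N)" using l_open.hyps(6) supp_eqvt[OF NTt_p10] by simp
  from ltrans.l_open[OF 1 2 3 4] show ?case by simp
next
  case (l_rep \<Psi> P \<alpha> P')
  thus ?case by (simp add: ltrans.l_rep)
qed

lemma etrans_eqvt: "etrans S \<Psi> P \<alpha> P' \<Longrightarrow> etrans S (swp a b \<Psi>) (swp a b P) (swp a b \<alpha>) (swp a b P')"
proof (induction rule: etrans.induct)
  case (e_in \<Psi> M K x P N)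
  show ?case using entails_eqvt_p10[OF e_in, of a b] by (simp add: etrans.e_in subst_eqvt_p10)
next
  case (e_out \<Psi> M K N P)
  show ?case using entails_eqvt_p10[OF e_out, of a b] by (simp add: etrans.e_out)
next
  case (e_case \<Psi> P \<alpha> P' \<phi> cs)
  have "(swp a b \<phi>, swp a b P) \<in> set (swp a b cs)" using e_case.hyps(2) by (force simp: swp_list_set)
  thus ?case using e_case.IH entails_eqvt_p10[OF e_case.hyps(3), of a b] by (simp add: etrans.e_case)
next
  case (e_com1 P bsP \<Psi>P Q bsQ \<Psi>Q \<Psi> M K as N P' Q')
  have 1: "frame_of S (swp a b P) (swp a b bsP) (swp a b \<Psi>P)" using e_com1.hyps(1) by (rule frame_of_eqvt_p10)
  have 2: "frame_of S (swp a b Q) (swp a b bsQ) (swp a b \<Psi>Q)" using e_com1.hyps(2) by (rule frame_of_eqvt_p10)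
  have 3: "fresh_star (set (swp a b bsP)) (swp a b \<Psi>, swp a b \<Psi>Q, swp a b P, swp a b Q, swp a b M, swp a b bsQ)"
    using fs_eqvt[OF _ e_com1.hyps(3), of a b] by simp
  have 4: "fresh_star (set (swp a b bsQ)) (swp a b \<Psi>, swp a b \<Psi>P, swp a b P, swp a b Q, swp a b K)"
    using fs_eqvt[OF _ e_com1.hyps(4), of a b] by simp
  have 5: "etrans S (acomp S (swp a b \<Psi>Q) (swp a b \<Psi>)) (swp a b P) (AOut (swp a b M) (swp a b as) (swp a b N)) (swp a b P')"
    using e_com1.IH(1) by simp
  have 6: "etrans S (acomp S (swp a b \<Psi>P) (swp a b \<Psi>)) (swp a b Q) (AInE (swp a b K) (swp a b N)) (swp a b Q')"
    using e_com1.IH(2) by simp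
  have 7: "entails S (acomp S (acomp S (swp a b \<Psi>) (swp a b \<Psi>P)) (swp a b \<Psi>Q)) (chan_eq S (swp a b M) (swp a b K))"
    using entails_eqvt_p10[OF e_com1.hyps(7), of a b] by simp
  have 8: "fresh_star (set (swp a b as)) (swp a b Q)" using fs_eqvt[OF _ e_com1.hyps(8), of a b] by simp
  from etrans.e_com1[OF 1 2 3 4 5 6 7 8] show ?case by (simp add: subst_eqvt_p10)
next
  case (e_com2 P bsP \<Psi>P Q bsQ \<Psi>Q \<Psi> M K N P' as Q')
  have 1: "frame_of S (swp a b P) (swp a b bsP) (swp a b \<Psi>P)" using e_com2.hyps(1) by (rule frame_of_eqvt_p10)
  have 2: "frame_of S (swp a b Q) (swp a b bsQ) (swp a b \<Psi>Q)" using e_com2.hyps(2) by (rule frame_of_eqvt_p10)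
  have 3: "fresh_star (set (swp a b bsP)) (swp a b \<Psi>, swp a b \<Psi>Q, swp a b P, swp a b Q, swp a b M, swp a b bsQ)"
    using fs_eqvt[OF _ e_com2.hyps(3), of a b] by simp
  have 4: "fresh_star (set (swp a b bsQ)) (swp a b \<Psi>, swp a b \<Psi>P, swp a b P, swp a b Q, swp a b K)"
    using fs_eqvt[OF _ e_com2.hyps(4), of a b] by simp
  have 5: "etrans S (acomp S (swp a b \<Psi>Q) (swp a b \<Psi>)) (swp a b P) (AInE (swp a b M) (swp a b N)) (swp a b P')"
    using e_com2.IH(1) by simp
  have 6: "etrans S (acomp S (swp a b \<Psi>P) (swp a b \<Psi>)) (swp a b Q) (AOut (swp a b K) (swp a b as) (swp a b N)) (swp a b Q')"
    using e_com2.IH(2) by simp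
  have 7: "entails S (acomp S (acomp S (swp a b \<Psi>) (swp a b \<Psi>P)) (swp a b \<Psi>Q)) (chan_eq S (swp a b M) (swp a b K))"
    using entails_eqvt_p10[OF e_com2.hyps(7), of a b] by simp
  have 8: "fresh_star (set (swp a b as)) (swp a b P)" using fs_eqvt[OF _ e_com2.hyps(8), of a b] by simp
  from etrans.e_com2[OF 1 2 3 4 5 6 7 8] show ?case by (simp add: subst_eqvt_p10)
next
  case (e_par1 Q bsQ \<Psi>Q \<Psi> P \<alpha> P')
  have 1: "frame_of S (swp a b Q) (swp a b bsQ) (swp a b \<Psi>Q)" using e_par1.hyps(1) by (rule frame_of_eqvt_p10)
  have 2: "fresh_star (set (swp a b bsQ)) (swp a b \<Psi>, swp a b P, swp a b \<alpha>)"
    using fs_eqvt[OF _ e_par1.hyps(2), of a b] by simp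
  have 3: "etrans S (acomp S (swp a b \<Psi>Q) (swp a b \<Psi>)) (swp a b P) (swp a b \<alpha>) (swp a b P')"
    using e_par1.IH by simp
  have 4: "fresh_star (bn (swp a b \<alpha>)) (swp a b Q)" using fsbn_eqvt[OF _ e_par1.hyps(4), of a b] by simp
  from etrans.e_par1[OF 1 2 3 4] show ?case by simp
next
  case (e_par2 P bsP \<Psi>P \<Psi> Q \<alpha> Q')
  have 1: "frame_of S (swp a b P) (swp a b bsP) (swp a b \<Psi>P)" using e_par2.hyps(1) by (rule frame_of_eqvt_p10)
  have 2: "fresh_star (set (swp a b bsP)) (swp a b \<Psi>, swp a b Q, swp a b \<alpha>)"
    using fs_eqvt[OF _ e_par2.hyps(2), of a b] by simp
  have 3: "etrans S (acomp S (swp a b \<Psi>P) (swp a b \<Psi>)) (swp a b Q) (swp a b \<alpha>) (swp a b Q')"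
    using e_par2.IH by simp
  have 4: "fresh_star (bn (swp a b \<alpha>)) (swp a b P)" using fsbn_eqvt[OF _ e_par2.hyps(4), of a b] by simp
  from etrans.e_par2[OF 1 2 3 4] show ?case by simp
next
  case (e_scope \<Psi> P \<alpha> P' d)
  have "fresh (swap_name a b d) (swp a b \<alpha>)" "fresh (swap_name a b d) (swp a b \<Psi>)" using e_scope by simp_all
  from etrans.e_scope[OF e_scope.IH this] show ?case by simp
next
  case (e_open \<Psi> P M as cs N P' d)
  have 1: "etrans S (swp a b \<Psi>) (swp a b P) (AOut (swp a b M) (swp a b as @ swp a b cs) (swp a b N)) (swp a b P')"
    using e_open.IH by simp
  have 2: "swap_name a b d \<notin> set (swp a b as)" "swap_name a b d \<notin> set (swp a b cs)"
    using e_open by (simp_all add: set_swp_names del: set_map)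
  have 3: "fresh (swap_name a b d) (swp a b \<Psi>)" "fresh (swap_name a b d) (swp a b M)" using e_open by simp_all
  have 4: "swap_name a b d \<in> supp (swp a b N)" using e_open.hyps(6) supp_eqvt[OF NTt_p10] by simp
  from etrans.e_open[OF 1 2 3 4] show ?case by simp
next
  case (e_rep \<Psi> P \<alpha> P')
  thus ?case by (simp add: etrans.e_rep)
qed

lemma ltrans_in_fresh: "ltrans S \<Psi> P \<alpha> P' \<Longrightarrow> \<alpha> = AIn K x \<Longrightarrow> fresh a P \<Longrightarrow> a \<noteq> x \<Longrightarrow> fresh a P'"
proof (induction arbitrary: K x rule: ltrans.induct)
  case (l_case \<Psi> P \<alpha> P' \<phi> cs)
  thus ?case by fastforce
qed auto

lemma etrans_in_fresh: "etrans S \<Psi> P \<alpha> P' \<Longrightarrow> \<alpha> = AInE K N \<Longrightarrow> fresh a P \<Longrightarrow> fresh a N \<Longrightarrow> fresh a P'"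
proof (induction arbitrary: K N rule: etrans.induct)
  case (e_in \<Psi> M K' x P N')
  thus ?case using subst_fresh_p10 by auto
next
  case (e_case \<Psi> P \<alpha> P' \<phi> cs)
  thus ?case by fastforce
qed auto

lemma ltrans_no_inE: "ltrans S \<Psi> P \<alpha> P' \<Longrightarrow> \<alpha> \<noteq> AInE K N"
  by (induction rule: ltrans.induct) auto

lemma etrans_no_in: "etrans S \<Psi> P \<alpha> P' \<Longrightarrow> \<alpha> \<noteq> AIn K x"
  by (induction rule: etrans.induct) auto

end

lemma swap_set_card_aux:
  assumes "b \<in> A" "c \<notin> A" "c \<notin> B" "finite A"
  shows "swap_name b c ` A \<inter> B = (A \<inter> B) - {b}"
proof -
  have "swap_name b c ` A = (A - {b}) \<union> {c}"
  proof
    show "swap_name b c ` A \<subseteq> A - {b} \<union> {c}" using assms by (auto simp: swap_name_def)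
    show "A - {b} \<union> {c} \<subseteq> swap_name b c ` A"
    proof
      fix e assume "e \<in> A - {b} \<union> {c}"
      thus "e \<in> swap_name b c ` A"
      proof
        assume "e \<in> A - {b}" thus ?thesis using assms by (intro image_eqI[of _ _ e]) (auto simp: swap_name_def)
      next
        assume "e \<in> {c}" thus ?thesis using assms by (intro image_eqI[of _ _ b]) (auto simp: swap_name_def)
      qed
    qed
  qed
  thus ?thesis using assms by auto
qed

lemma fresh_act[simp]:
  "fresh a (AIn K x) = (fresh a K \<and> a \<noteq> x)"
  "fresh a (AInE K N) = (fresh a K \<and> fresh a N)"
  "fresh a (AOut M as N) = (fresh a M \<and> a \<notin> set as \<and> fresh a N)"
  "fresh a (ATau :: 't::pt act)"
  by (auto simp: fresh_def)

context
  fixes S :: "('t::pt,'c::pt,'a::pt) psi"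
  assumes PC: "psi_calculus S"
begin

declare PC[simp]
lemmas NTt_p11[simp] = NTt_p10[OF PC]
lemmas NTc_p11[simp] = NTc_p10[OF PC]
lemmas NTa_p11[simp] = NTa_p10[OF PC]
lemmas NTr_p11[simp] = nominal_ragent[OF NTt_p11 NTc_p11 NTa_p11]
lemmas NTag_p11[simp] = nominal_agent[OF NTt_p11 NTc_p11 NTa_p11]
lemmas NTact_p11[simp] = nominal_act[OF NTt_p11]
lemmas fresh_ag_p11[simp] = fresh_Out[OF PC] fresh_In[OF PC] fresh_Res[OF PC] fresh_Par[OF PC] fresh_Bang[OF PC]
  fresh_Ass[OF PC] fresh_Case[OF PC] fresh_resl[OF PC]
lemmas subst_eqvt_p11 = subst_eqvt_p10[OF PC]
lemmas subst_fresh_p11 = subst_fresh_p10[OF PC]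
lemmas subst_id_p11 = subst_id[OF PC]
lemmas subst_alpha_p11 = subst_alpha[OF PC]
lemmas subst_Res_p11 = subst_Res[OF PC]
lemmas frame_of_eqvt_p11 = frame_of_eqvt_p10[OF PC]
lemmas frame_rename_p11 = frame_rename[OF PC]
lemmas frame_of_fresh_p11 = frame_of_fresh[OF PC]
lemmas entails_eqvt_p11 = entails_eqvt_p10[OF PC]
lemmas ltrans_eqvt_p11 = ltrans_eqvt[OF PC]
lemmas etrans_eqvt_p11 = etrans_eqvt[OF PC]
lemmas ltrans_in_fresh_p11 = ltrans_in_fresh[OF PC]
lemmas etrans_in_fresh_p11 = etrans_in_fresh[OF PC]
lemmas In_alpha_p11 = In_alpha_p8[OF PC]
lemmas Res_alpha_p11 = Res_alpha_p8[OF PC]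

lemma frame_avoid_aux:
  "card (set bs \<inter> supp N) = n \<Longrightarrow> frame_of S Q bs \<Psi>Q \<Longrightarrow> fresh_star (set bs) (\<Psi>, P, K, x, P1) \<Longrightarrow>
   (\<forall>N'. etrans S (acomp S \<Psi>Q \<Psi>) P (AInE K N') (subst_agent S P1 x N')) \<Longrightarrow>
   \<exists>bs' \<Psi>Q'. frame_of S Q bs' \<Psi>Q' \<and> fresh_star (set bs') (\<Psi>, P, AInE K N) \<and>
     etrans S (acomp S \<Psi>Q' \<Psi>) P (AInE K N) (subst_agent S P1 x N)"
proof (induction n arbitrary: bs \<Psi>Q)
  case 0
  hence "set bs \<inter> supp N = {}" by simp
  hence "fresh_star (set bs) (\<Psi>, P, AInE K N)" using "0.prems"(3) by (auto simp: fresh_star_def fresh_def)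
  thus ?case using "0.prems" by blast
next
  case (Suc m)
  then obtain b where b: "b \<in> set bs" "b \<in> supp N" by (metis card.empty disjoint_iff nat.distinct(1))
  obtain c where c: "c \<notin> {x, b}" "fresh c (\<Psi>, P, K, P1, N, Q, \<Psi>Q, bs)"
    using obtain_fresh[of "{x, b}" "(\<Psi>, P, K, P1, N, Q, \<Psi>Q, bs)"] by auto
  have fb: "fresh b \<Psi>" "fresh b P" "fresh b K" "b \<noteq> x" "fresh b P1"
    using Suc.prems(3) b(1) by (auto simp: fresh_star_def)
  have fr: "frame_of S Q (swp b c bs) (swp b c \<Psi>Q)"
    using frame_rename_p11[OF Suc.prems(2) b(1)] c by simp
  have cbs: "c \<notin> set bs" using c by simp
  have card: "card (set (swp b c bs) \<inter> supp N) = m"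
  proof -
    have "set (swp b c bs) \<inter> supp N = (set bs \<inter> supp N) - {b}"
      unfolding set_swp_names using swap_set_card_aux[OF b(1) cbs] c by (simp add: fresh_def)
    thus ?thesis using Suc.prems(1) b by simp
  qed
  have fs: "fresh_star (set (swp b c bs)) (\<Psi>, P, K, x, P1)"
  proof -
    have "set (swp b c bs) \<subseteq> (set bs - {b}) \<union> {c}"
      unfolding set_swp_names using b cbs by (auto simp: swap_name_def)
    thus ?thesis using Suc.prems(3) c by (auto simp: fresh_star_def)
  qed
  have et: "\<forall>N'. etrans S (acomp S (swp b c \<Psi>Q) \<Psi>) P (AInE K N') (subst_agent S P1 x N')"
  proof
    fix N'
    have "etrans S (acomp S \<Psi>Q \<Psi>) P (AInE K (swp b c N')) (subst_agent S P1 x (swp b c N'))"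
      using Suc.prems(4) by blast
    from etrans_eqvt_p11[OF this, of b c]
    have "etrans S (acomp S (swp b c \<Psi>Q) (swp b c \<Psi>)) (swp b c P) (AInE (swp b c K) N') (subst_agent S (swp b c P1) x N')"
      using fb c by (simp add: subst_eqvt_p11)
    moreover have "swp b c \<Psi> = \<Psi>" "swp b c P = P" "swp b c K = K" "swp b c P1 = P1"
      using fb c fresh_swp_id[OF NTa_p11] fresh_swp_id[OF NTag_p11] fresh_swp_id[OF NTt_p11] by auto
    ultimately show "etrans S (acomp S (swp b c \<Psi>Q) \<Psi>) P (AInE K N') (subst_agent S P1 x N')" by simp
  qed
  show ?case using Suc.IH[OF card fr fs et] .
qed


lemma swap_in_trick:
  assumes tr: "ltrans S \<Psi> P (AIn K c) T" and sb: "subst_agent S T c N = P'"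
    and fx: "fresh x \<Psi>" "fresh x P" "fresh x K" "fresh x N" "fresh x P'"
    and fc: "fresh c \<Psi>" "fresh c P" "fresh c K" "fresh c N" "fresh c P'"
  shows "ltrans S \<Psi> P (AIn K x) (swp x c T) \<and> subst_agent S (swp x c T) x N = P'"
proof -
  have e: "swp x c \<Psi> = \<Psi>" "swp x c P = P" "swp x c K = K" "swp x c N = N" "swp x c P' = P'"
    using fx fc fresh_swp_id[OF NTa_p11] fresh_swp_id[OF NTag_p11] fresh_swp_id[OF NTt_p11] by auto
  have "ltrans S (swp x c \<Psi>) (swp x c P) (swp x c (AIn K c)) (swp x c T)" by (rule ltrans_eqvt_p11[OF tr])
  hence 1: "ltrans S \<Psi> P (AIn K x) (swp x c T)" using e by simp
  have "swp x c (subst_agent S T c N) = subst_agent S (swp x c T) x N" using subst_eqvt_p11[of x c T c N] e by simp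
  hence "subst_agent S (swp x c T) x N = P'" using sb e by simp
  thus ?thesis using 1 by simp
qed

lemma late_to_early: "ltrans S \<Psi> P \<alpha> P' \<Longrightarrow>
   (\<forall>K x. \<alpha> = AIn K x \<longrightarrow> (\<forall>N. etrans S \<Psi> P (AInE K N) (subst_agent S P' x N))) \<and>
   ((\<forall>K x. \<alpha> \<noteq> AIn K x) \<longrightarrow> etrans S \<Psi> P \<alpha> P')"
proof (induction rule: ltrans.induct)
  case (l_in \<Psi> M K x P) thus ?case by (auto intro: etrans.e_in)
next
  case (l_out \<Psi> M K N P) thus ?case by (auto intro: etrans.e_out)
next
  case (l_case \<Psi> P \<alpha> P' \<phi> cs) thus ?case by (auto intro: etrans.e_case)
next
  case (l_com1 P bsP \<Psi>P Q bsQ \<Psi>Q \<Psi> M K as N P' x Q')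
  have 1: "etrans S (acomp S \<Psi>Q \<Psi>) P (AOut M as N) P'" using l_com1.IH(1) by auto
  have 2: "etrans S (acomp S \<Psi>P \<Psi>) Q (AInE K N) (subst_agent S Q' x N)" using l_com1.IH(2) by auto
  show ?case using etrans.e_com1[OF l_com1.hyps(1-4) 1 2 l_com1.hyps(7,8)] by auto
next
  case (l_com2 P bsP \<Psi>P Q bsQ \<Psi>Q \<Psi> M K x P' as N Q')
  have 1: "etrans S (acomp S \<Psi>Q \<Psi>) P (AInE M N) (subst_agent S P' x N)" using l_com2.IH(1) by auto
  have 2: "etrans S (acomp S \<Psi>P \<Psi>) Q (AOut K as N) Q'" using l_com2.IH(2) by auto
  show ?case using etrans.e_com2[OF l_com2.hyps(1-4) 1 2 l_com2.hyps(7,8)] by auto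
next
  case (l_par1 Q bsQ \<Psi>Q \<Psi> P \<alpha> P')
  show ?case
  proof (intro conjI allI impI)
    fix K x and N :: 't assume \<alpha>: "\<alpha> = AIn K x"
    have fsP': "fresh_star (set bsQ) P'"
      using l_par1.hyps(2) ltrans_in_fresh_p11[OF l_par1.hyps(3) \<alpha>] \<alpha> by (auto simp: fresh_star_def)
    have fs: "fresh_star (set bsQ) (\<Psi>, P, K, x, P')" using l_par1.hyps(2) \<alpha> fsP' by (auto simp: fresh_star_def)
    have ih: "\<forall>N'. etrans S (acomp S \<Psi>Q \<Psi>) P (AInE K N') (subst_agent S P' x N')" using l_par1.IH \<alpha> by auto
    obtain bs' \<Psi>Q' where o: "frame_of S Q bs' \<Psi>Q'" "fresh_star (set bs') (\<Psi>, P, AInE K N)"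
      "etrans S (acomp S \<Psi>Q' \<Psi>) P (AInE K N) (subst_agent S P' x N)"
      using frame_avoid_aux[OF refl l_par1.hyps(1) fs ih] by blast
    have "etrans S \<Psi> (Par P Q) (AInE K N) (Par (subst_agent S P' x N) Q)"
      using etrans.e_par1[OF o(1) o(2) o(3)] by simp
    moreover have "fresh x Q" using l_par1.hyps(4) \<alpha> by simp
    ultimately show "etrans S \<Psi> (Par P Q) (AInE K N) (subst_agent S (Par P' Q) x N)" by (simp add: subst_id_p11)
  next
    assume "\<forall>K x. \<alpha> \<noteq> AIn K x"
    hence "etrans S (acomp S \<Psi>Q \<Psi>) P \<alpha> P'" using l_par1.IH by blast
    thus "etrans S \<Psi> (Par P Q) \<alpha> (Par P' Q)" using etrans.e_par1[OF l_par1.hyps(1,2) _ l_par1.hyps(4)] by blast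
  qed
next
  case (l_par2 P bsP \<Psi>P \<Psi> Q \<alpha> Q')
  show ?case
  proof (intro conjI allI impI)
    fix K x and N :: 't assume \<alpha>: "\<alpha> = AIn K x"
    have fsQ': "fresh_star (set bsP) Q'"
      using l_par2.hyps(2) ltrans_in_fresh_p11[OF l_par2.hyps(3) \<alpha>] \<alpha> by (auto simp: fresh_star_def)
    have fs: "fresh_star (set bsP) (\<Psi>, Q, K, x, Q')" using l_par2.hyps(2) \<alpha> fsQ' by (auto simp: fresh_star_def)
    have ih: "\<forall>N'. etrans S (acomp S \<Psi>P \<Psi>) Q (AInE K N') (subst_agent S Q' x N')" using l_par2.IH \<alpha> by auto
    obtain bs' \<Psi>P' where o: "frame_of S P bs' \<Psi>P'" "fresh_star (set bs') (\<Psi>, Q, AInE K N)"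
      "etrans S (acomp S \<Psi>P' \<Psi>) Q (AInE K N) (subst_agent S Q' x N)"
      using frame_avoid_aux[OF refl l_par2.hyps(1) fs ih] by blast
    have "etrans S \<Psi> (Par P Q) (AInE K N) (Par P (subst_agent S Q' x N))"
      using etrans.e_par2[OF o(1) o(2) o(3)] by simp
    moreover have "fresh x P" using l_par2.hyps(4) \<alpha> by simp
    ultimately show "etrans S \<Psi> (Par P Q) (AInE K N) (subst_agent S (Par P Q') x N)" by (simp add: subst_id_p11)
  next
    assume "\<forall>K x. \<alpha> \<noteq> AIn K x"
    hence "etrans S (acomp S \<Psi>P \<Psi>) Q \<alpha> Q'" using l_par2.IH by blast
    thus "etrans S \<Psi> (Par P Q) \<alpha> (Par P Q')" using etrans.e_par2[OF l_par2.hyps(1,2) _ l_par2.hyps(4)] by blast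
  qed
next
  case (l_scope \<Psi> P \<alpha> P' b)
  show ?case
  proof (intro conjI allI impI)
    fix K x and N :: 't assume \<alpha>: "\<alpha> = AIn K x"
    have fb: "b \<noteq> x" "fresh b K" "fresh b \<Psi>" using l_scope.hyps(2,3) \<alpha> by auto
    have "\<exists>c. c \<notin> {b, x} \<and> fresh c (K, \<Psi>, P, P', N)" by (rule obtain_fresh) simp_all
    then obtain c where c: "c \<notin> {b, x}" "fresh c (K, \<Psi>, P, P', N)" by blast
    have "etrans S \<Psi> P (AInE K (swp b c N)) (subst_agent S P' x (swp b c N))" using l_scope.IH \<alpha> by auto
    from etrans_eqvt_p11[OF this, of b c]
    have "etrans S (swp b c \<Psi>) (swp b c P) (AInE (swp b c K) N) (subst_agent S (swp b c P') x N)"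
      using fb c by (simp add: subst_eqvt_p11)
    moreover have "swp b c \<Psi> = \<Psi>" "swp b c K = K"
      using fb c fresh_swp_id[OF NTa_p11] fresh_swp_id[OF NTt_p11] by auto
    ultimately have e: "etrans S \<Psi> (swp b c P) (AInE K N) (subst_agent S (swp b c P') x N)" by simp
    have "fresh c (AInE K N)" using c by simp
    from etrans.e_scope[OF e this] c
    have "etrans S \<Psi> (Res c (swp b c P)) (AInE K N) (Res c (subst_agent S (swp b c P') x N))" by simp
    moreover have "Res c (swp b c P) = Res b P" using Res_alpha_p11[of c P b] c by simp
    moreover have "Res c (subst_agent S (swp b c P') x N) = subst_agent S (Res b P') x N"
    proof -
      have "Res c (subst_agent S (swp b c P') x N) = subst_agent S (Res c (swp b c P')) x N"
        using c by (simp add: subst_Res_p11)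
      also have "Res c (swp b c P') = Res b P'" using Res_alpha_p11[of c P' b] c by simp
      finally show ?thesis .
    qed
    ultimately show "etrans S \<Psi> (Res b P) (AInE K N) (subst_agent S (Res b P') x N)" by simp
  next
    assume "\<forall>K x. \<alpha> \<noteq> AIn K x"
    hence "etrans S \<Psi> P \<alpha> P'" using l_scope.IH by blast
    thus "etrans S \<Psi> (Res b P) \<alpha> (Res b P')" using etrans.e_scope l_scope.hyps(2,3) by blast
  qed
next
  case (l_open \<Psi> P M as cs N P' b)
  thus ?case by (auto intro: etrans.e_open)
next
  case (l_rep \<Psi> P \<alpha> P')
  thus ?case by (auto intro: etrans.e_rep)
qed

end

context
  fixes S :: "('t::pt,'c::pt,'a::pt) psi"
  assumes PC: "psi_calculus S"
begin

declare PC[simp]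
lemmas NTt_p12[simp] = NTt_p11[OF PC]
lemmas NTc_p12[simp] = NTc_p11[OF PC]
lemmas NTa_p12[simp] = NTa_p11[OF PC]
lemmas NTr_p12[simp] = nominal_ragent[OF NTt_p12 NTc_p12 NTa_p12]
lemmas NTag_p12[simp] = nominal_agent[OF NTt_p12 NTc_p12 NTa_p12]
lemmas NTact_p12[simp] = nominal_act[OF NTt_p12]
lemmas fresh_ag_p12[simp] = fresh_Out[OF PC] fresh_In[OF PC] fresh_Res[OF PC] fresh_Par[OF PC] fresh_Bang[OF PC]
  fresh_Ass[OF PC] fresh_Case[OF PC] fresh_resl[OF PC]
lemmas subst_eqvt_p12 = subst_eqvt_p11[OF PC]
lemmas subst_fresh_p12 = subst_fresh_p11[OF PC]
lemmas subst_id_p12 = subst_id_p11[OF PC]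
lemmas subst_alpha_p12 = subst_alpha_p11[OF PC]
lemmas subst_Res_p12 = subst_Res_p11[OF PC]
lemmas etrans_in_fresh_p12 = etrans_in_fresh_p11[OF PC]
lemmas In_alpha_p12 = In_alpha_p11[OF PC]
lemmas swap_in_trick_p12 = swap_in_trick[OF PC]

lemma early_to_late: "etrans S \<Psi> P \<alpha> P' \<Longrightarrow>
   (\<forall>K N. \<alpha> = AInE K N \<longrightarrow> (\<forall>x. fresh x P \<longrightarrow> (\<exists>P1. ltrans S \<Psi> P (AIn K x) P1 \<and> subst_agent S P1 x N = P'))) \<and>
   ((\<forall>K N. \<alpha> \<noteq> AInE K N) \<longrightarrow> ltrans S \<Psi> P \<alpha> P')"
proof (induction rule: etrans.induct)
  case (e_in \<Psi> M K z P N)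
  show ?case
  proof (intro conjI allI impI)
    fix K' N' x assume a: "AInE K N = AInE K' N'" and fx: "fresh x (In M z P)"
    hence KN: "K' = K" "N' = N" by simp_all
    show "\<exists>P1. ltrans S \<Psi> (In M z P) (AIn K' x) P1 \<and> subst_agent S P1 x N' = subst_agent S P z N"
    proof (cases "x = z")
      case True thus ?thesis using KN e_in ltrans.l_in by blast
    next
      case False
      hence f: "fresh x P" "fresh x M" using fx by auto
      have e: "In M z P = In M x (swp z x P)" using In_alpha_p12[of x P M z] f by simp
      have "ltrans S \<Psi> (In M x (swp z x P)) (AIn K x) (swp z x P)" using e_in by (rule ltrans.l_in)
      moreover have "subst_agent S (swp z x P) x N = subst_agent S P z N" using f(1) by (rule subst_alpha_p12)
      ultimately show ?thesis using e KN by auto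
    qed
  qed auto
next
  case (e_out \<Psi> M K N P) thus ?case by (auto intro: ltrans.l_out)
next
  case (e_case \<Psi> P \<alpha> P' \<phi> cs)
  show ?case
  proof (intro conjI allI impI)
    fix K N x assume a: "\<alpha> = AInE K N" and fx: "fresh x (Case cs)"
    have "fresh x P" using fx e_case.hyps(2) by auto
    then obtain P1 where "ltrans S \<Psi> P (AIn K x) P1" "subst_agent S P1 x N = P'" using e_case.IH a by blast
    thus "\<exists>P1. ltrans S \<Psi> (Case cs) (AIn K x) P1 \<and> subst_agent S P1 x N = P'"
      using ltrans.l_case e_case.hyps(2,3) by blast
  next
    assume "\<forall>K N. \<alpha> \<noteq> AInE K N"
    thus "ltrans S \<Psi> (Case cs) \<alpha> P'" using e_case.IH e_case.hyps(2,3) ltrans.l_case by blast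
  qed
next
  case (e_com1 P bsP \<Psi>P Q bsQ \<Psi>Q \<Psi> M K as N P' Q')
  have 1: "ltrans S (acomp S \<Psi>Q \<Psi>) P (AOut M as N) P'" using e_com1.IH(1) by auto
  have "\<exists>x. x \<notin> {} \<and> fresh x Q" by (rule obtain_fresh) simp_all
  then obtain x where "fresh x Q" by blast
  then obtain Q1 where 2: "ltrans S (acomp S \<Psi>P \<Psi>) Q (AIn K x) Q1" and q: "subst_agent S Q1 x N = Q'"
    using e_com1.IH(2) by blast
  show ?case using ltrans.l_com1[OF e_com1.hyps(1-4) 1 2 e_com1.hyps(7,8)] q by auto
next
  case (e_com2 P bsP \<Psi>P Q bsQ \<Psi>Q \<Psi> M K N P' as Q')
  have 2: "ltrans S (acomp S \<Psi>P \<Psi>) Q (AOut K as N) Q'" using e_com2.IH(2) by auto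
  have "\<exists>x. x \<notin> {} \<and> fresh x P" by (rule obtain_fresh) simp_all
  then obtain x where "fresh x P" by blast
  then obtain P1 where 1: "ltrans S (acomp S \<Psi>Q \<Psi>) P (AIn M x) P1" and q: "subst_agent S P1 x N = P'"
    using e_com2.IH(1) by blast
  show ?case using ltrans.l_com2[OF e_com2.hyps(1-4) 1 2 e_com2.hyps(7,8)] q by auto
next
  case (e_par1 Q bsQ \<Psi>Q \<Psi> P \<alpha> P')
  show ?case
  proof (intro conjI allI impI)
    fix K N x assume a: "\<alpha> = AInE K N" and fx: "fresh x (Par P Q)"
    have fs: "fresh_star (set bsQ) (\<Psi>, P, AInE K N)" using e_par1.hyps(2) a by simp
    have ih: "\<forall>x. fresh x P \<longrightarrow> (\<exists>P1. ltrans S (acomp S \<Psi>Q \<Psi>) P (AIn K x) P1 \<and> subst_agent S P1 x N = P')"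
      using e_par1.IH a by blast
    have mk: "\<And>y. y \<notin> set bsQ \<Longrightarrow> fresh y P \<Longrightarrow> fresh y Q \<Longrightarrow>
       \<exists>T. ltrans S \<Psi> (Par P Q) (AIn K y) T \<and> subst_agent S T y N = Par P' Q"
    proof -
      fix y assume y: "y \<notin> set bsQ" "fresh y P" "fresh y Q"
      then obtain P1 where p1: "ltrans S (acomp S \<Psi>Q \<Psi>) P (AIn K y) P1" "subst_agent S P1 y N = P'" using ih by blast
      have "fresh_star (set bsQ) (\<Psi>, P, AIn K y)" using fs y by (auto simp: fresh_star_def)
      moreover have "fresh_star (bn (AIn K y)) Q" using y by simp
      ultimately have "ltrans S \<Psi> (Par P Q) (AIn K y) (Par P1 Q)" using ltrans.l_par1[OF e_par1.hyps(1) _ p1(1)] by blast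
      moreover have "subst_agent S (Par P1 Q) y N = Par P' Q" using p1(2) y subst_id_p12 by simp
      ultimately show "\<exists>T. ltrans S \<Psi> (Par P Q) (AIn K y) T \<and> subst_agent S T y N = Par P' Q" by blast
    qed
    show "\<exists>P1. ltrans S \<Psi> (Par P Q) (AIn K x) P1 \<and> subst_agent S P1 x N = Par P' Q"
    proof (cases "x \<in> set bsQ")
      case False thus ?thesis using mk fx by simp
    next
      case True
      have "\<exists>c. c \<notin> {x} \<and> fresh c (\<Psi>, P, Q, K, N, P', bsQ)" by (rule obtain_fresh) simp_all
      then obtain c where c: "c \<notin> {x}" "fresh c (\<Psi>, P, Q, K, N, P', bsQ)" by blast
      obtain T where T: "ltrans S \<Psi> (Par P Q) (AIn K c) T" "subst_agent S T c N = Par P' Q"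
        using mk[of c] c by auto
      have fxs: "fresh x \<Psi>" "fresh x K" "fresh x N" using fs True by (auto simp: fresh_star_def)
      have "fresh x P'" using etrans_in_fresh_p12[OF e_par1.hyps(3) a] fx fxs by simp
      hence "ltrans S \<Psi> (Par P Q) (AIn K x) (swp x c T) \<and> subst_agent S (swp x c T) x N = Par P' Q"
        using swap_in_trick_p12[OF T] fx fxs c by simp
      thus ?thesis by blast
    qed
  next
    assume "\<forall>K N. \<alpha> \<noteq> AInE K N"
    hence "ltrans S (acomp S \<Psi>Q \<Psi>) P \<alpha> P'" using e_par1.IH by blast
    thus "ltrans S \<Psi> (Par P Q) \<alpha> (Par P' Q)" using ltrans.l_par1[OF e_par1.hyps(1,2) _ e_par1.hyps(4)] by blast
  qed
next
  case (e_par2 P bsP \<Psi>P \<Psi> Q \<alpha> Q')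
  show ?case
  proof (intro conjI allI impI)
    fix K N x assume a: "\<alpha> = AInE K N" and fx: "fresh x (Par P Q)"
    have fs: "fresh_star (set bsP) (\<Psi>, Q, AInE K N)" using e_par2.hyps(2) a by simp
    have ih: "\<forall>x. fresh x Q \<longrightarrow> (\<exists>Q1. ltrans S (acomp S \<Psi>P \<Psi>) Q (AIn K x) Q1 \<and> subst_agent S Q1 x N = Q')"
      using e_par2.IH a by blast
    have mk: "\<And>y. y \<notin> set bsP \<Longrightarrow> fresh y P \<Longrightarrow> fresh y Q \<Longrightarrow>
       \<exists>T. ltrans S \<Psi> (Par P Q) (AIn K y) T \<and> subst_agent S T y N = Par P Q'"
    proof -
      fix y assume y: "y \<notin> set bsP" "fresh y P" "fresh y Q"
      then obtain Q1 where q1: "ltrans S (acomp S \<Psi>P \<Psi>) Q (AIn K y) Q1" "subst_agent S Q1 y N = Q'" using ih by blast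
      have "fresh_star (set bsP) (\<Psi>, Q, AIn K y)" using fs y by (auto simp: fresh_star_def)
      moreover have "fresh_star (bn (AIn K y)) P" using y by simp
      ultimately have "ltrans S \<Psi> (Par P Q) (AIn K y) (Par P Q1)" using ltrans.l_par2[OF e_par2.hyps(1) _ q1(1)] by blast
      moreover have "subst_agent S (Par P Q1) y N = Par P Q'" using q1(2) y subst_id_p12 by simp
      ultimately show "\<exists>T. ltrans S \<Psi> (Par P Q) (AIn K y) T \<and> subst_agent S T y N = Par P Q'" by blast
    qed
    show "\<exists>P1. ltrans S \<Psi> (Par P Q) (AIn K x) P1 \<and> subst_agent S P1 x N = Par P Q'"
    proof (cases "x \<in> set bsP")
      case False thus ?thesis using mk fx by simp
    next
      case True
      have "\<exists>c. c \<notin> {x} \<and> fresh c (\<Psi>, P, Q, K, N, Q', bsP)" by (rule obtain_fresh) simp_all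
      then obtain c where c: "c \<notin> {x}" "fresh c (\<Psi>, P, Q, K, N, Q', bsP)" by blast
      obtain T where T: "ltrans S \<Psi> (Par P Q) (AIn K c) T" "subst_agent S T c N = Par P Q'"
        using mk[of c] c by auto
      have fxs: "fresh x \<Psi>" "fresh x K" "fresh x N" using fs True by (auto simp: fresh_star_def)
      have "fresh x Q'" using etrans_in_fresh_p12[OF e_par2.hyps(3) a] fx fxs by simp
      hence "ltrans S \<Psi> (Par P Q) (AIn K x) (swp x c T) \<and> subst_agent S (swp x c T) x N = Par P Q'"
        using swap_in_trick_p12[OF T] fx fxs c by simp
      thus ?thesis by blast
    qed
  next
    assume "\<forall>K N. \<alpha> \<noteq> AInE K N"
    hence "ltrans S (acomp S \<Psi>P \<Psi>) Q \<alpha> Q'" using e_par2.IH by blast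
    thus "ltrans S \<Psi> (Par P Q) \<alpha> (Par P Q')" using ltrans.l_par2[OF e_par2.hyps(1,2) _ e_par2.hyps(4)] by blast
  qed
next
  case (e_scope \<Psi> P \<alpha> P' b)
  show ?case
  proof (intro conjI allI impI)
    fix K N x assume a: "\<alpha> = AInE K N" and fx: "fresh x (Res b P)"
    have fb: "fresh b K" "fresh b N" "fresh b \<Psi>" using e_scope.hyps(2,3) a by auto
    have ih: "\<forall>x. fresh x P \<longrightarrow> (\<exists>P1. ltrans S \<Psi> P (AIn K x) P1 \<and> subst_agent S P1 x N = P')"
      using e_scope.IH a by blast
    have mk: "\<And>y. y \<noteq> b \<Longrightarrow> fresh y P \<Longrightarrow>
       \<exists>T. ltrans S \<Psi> (Res b P) (AIn K y) T \<and> subst_agent S T y N = Res b P'"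
    proof -
      fix y assume y: "y \<noteq> b" "fresh y P"
      then obtain P1 where p1: "ltrans S \<Psi> P (AIn K y) P1" "subst_agent S P1 y N = P'" using ih by blast
      have "fresh b (AIn K y)" using fb y by simp
      hence "ltrans S \<Psi> (Res b P) (AIn K y) (Res b P1)" using ltrans.l_scope[OF p1(1)] fb by blast
      moreover have "subst_agent S (Res b P1) y N = Res b P'" using p1(2) y fb subst_Res_p12 by simp
      ultimately show "\<exists>T. ltrans S \<Psi> (Res b P) (AIn K y) T \<and> subst_agent S T y N = Res b P'" by blast
    qed
    show "\<exists>P1. ltrans S \<Psi> (Res b P) (AIn K x) P1 \<and> subst_agent S P1 x N = Res b P'"
    proof (cases "x = b")
      case False thus ?thesis using mk fx by simp
    next
      case True
      have "\<exists>c. c \<notin> {b} \<and> fresh c (\<Psi>, P, K, N, P')" by (rule obtain_fresh) simp_all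
      then obtain c where c: "c \<notin> {b}" "fresh c (\<Psi>, P, K, N, P')" by blast
      obtain T where T: "ltrans S \<Psi> (Res b P) (AIn K c) T" "subst_agent S T c N = Res b P'"
        using mk[of c] c by auto
      have "ltrans S \<Psi> (Res b P) (AIn K b) (swp b c T) \<and> subst_agent S (swp b c T) b N = Res b P'"
        using swap_in_trick_p12[OF T] fb c by simp
      thus ?thesis using True by blast
    qed
  next
    assume "\<forall>K N. \<alpha> \<noteq> AInE K N"
    hence "ltrans S \<Psi> P \<alpha> P'" using e_scope.IH by blast
    thus "ltrans S \<Psi> (Res b P) \<alpha> (Res b P')" using ltrans.l_scope e_scope.hyps(2,3) by blast
  qed
next
  case (e_open \<Psi> P M as cs N P' b)
  thus ?case by (auto intro: ltrans.l_open)
next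
  case (e_rep \<Psi> P \<alpha> P')
  show ?case
  proof (intro conjI allI impI)
    fix K N x assume a: "\<alpha> = AInE K N" and fx: "fresh x (Bang P)"
    have "fresh x (Par P (Bang P))" using fx by simp
    then obtain P1 where "ltrans S \<Psi> (Par P (Bang P)) (AIn K x) P1" "subst_agent S P1 x N = P'"
      using e_rep.IH a by blast
    thus "\<exists>P1. ltrans S \<Psi> (Bang P) (AIn K x) P1 \<and> subst_agent S P1 x N = P'" using ltrans.l_rep by blast
  next
    assume "\<forall>K N. \<alpha> \<noteq> AInE K N"
    thus "ltrans S \<Psi> (Bang P) \<alpha> P'" using e_rep.IH ltrans.l_rep by blast
  qed
qed

end

theorem lemma2:
  fixes S :: "('t::pt, 'c::pt, 'a::pt) psi"
    and R :: "('a \<times> ('t, 'c, 'a) agent \<times> ('t, 'c, 'a) agent) set"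
  assumes "psi_calculus S"
    and "\<forall>(\<Psi>, P, Q) \<in> R. wf_agent P \<and> wf_agent Q"
  shows "late_bisim S R \<longleftrightarrow> early_bisim S R"
proof -
  note PC = assms(1)
  note l2e = late_to_early[OF PC]
  note e2l = early_to_late[OF PC]
  have NTt_p12: "nominal_type TYPE('t)" by (rule NTt_p12[OF PC])
  have NTc_p12: "nominal_type TYPE('c)" by (rule NTc_p12[OF PC])
  have NTa_p12: "nominal_type TYPE('a)" by (rule NTa_p12[OF PC])
  note NTag_p12 = nominal_agent[OF NTt_p12 NTc_p12 NTa_p12]
  show ?thesis
  proof
    assume L: "late_bisim S R"
    show "early_bisim S R"
      unfolding early_bisim_def
    proof (intro allI impI conjI)
      fix \<Psi> P Q assume r: "(\<Psi>, P, Q) \<in> R"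
      have LL: "static_eq S \<Psi> P Q \<and> (\<Psi>, Q, P) \<in> R \<and> (\<forall>\<Psi>'. (acomp S \<Psi> \<Psi>', P, Q) \<in> R) \<and>
        (\<forall>\<alpha> P'. fresh_star (bn \<alpha>) \<Psi> \<and> fresh_star (bn \<alpha>) Q \<longrightarrow>
        (case \<alpha> of
           AIn M x \<Rightarrow> ltrans S \<Psi> P \<alpha> P' \<longrightarrow>
              (\<forall>L. \<exists>Q'. ltrans S \<Psi> Q \<alpha> Q' \<and>
                   (\<Psi>, subst_agent S P' x L, subst_agent S Q' x L) \<in> R)
         | _ \<Rightarrow> ltrans S \<Psi> P \<alpha> P' \<longrightarrow> (\<exists>Q'. ltrans S \<Psi> Q \<alpha> Q' \<and> (\<Psi>, P', Q') \<in> R)))"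
        using L r unfolding late_bisim_def by blast
      show "static_eq S \<Psi> P Q" using LL by blast
      show "(\<Psi>, Q, P) \<in> R" using LL by blast
      show "\<And>\<Psi>'. (acomp S \<Psi> \<Psi>', P, Q) \<in> R" using LL by blast
      show "\<And>\<alpha> P'. fresh_star (bn \<alpha>) \<Psi> \<and> fresh_star (bn \<alpha>) Q \<Longrightarrow>
        etrans S \<Psi> P \<alpha> P' \<Longrightarrow> (\<exists>Q'. etrans S \<Psi> Q \<alpha> Q' \<and> (\<Psi>, P', Q') \<in> R)"
      proof -
        fix \<alpha> P' assume fb: "fresh_star (bn \<alpha>) \<Psi> \<and> fresh_star (bn \<alpha>) Q" and tr: "etrans S \<Psi> P \<alpha> P'"
        show "\<exists>Q'. etrans S \<Psi> Q \<alpha> Q' \<and> (\<Psi>, P', Q') \<in> R"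
        proof (cases \<alpha>)
          case (AInE K N)
          have "\<exists>x. x \<notin> {} \<and> fresh x (P, Q, \<Psi>)"
            by (rule obtain_fresh) (simp_all add: NTt_p12 NTc_p12 NTa_p12 NTag_p12)
          then obtain x where x: "fresh x P" "fresh x Q" "fresh x \<Psi>" by auto
          obtain P1 where P1: "ltrans S \<Psi> P (AIn K x) P1" "subst_agent S P1 x N = P'"
            using e2l[OF tr] AInE x by blast
          have "fresh_star (bn (AIn K x)) \<Psi> \<and> fresh_star (bn (AIn K x)) Q" using x by simp
          hence "\<forall>L. \<exists>Q'. ltrans S \<Psi> Q (AIn K x) Q' \<and> (\<Psi>, subst_agent S P1 x L, subst_agent S Q' x L) \<in> R"
            using LL P1(1) by fastforce
          then obtain Q1 where Q1: "ltrans S \<Psi> Q (AIn K x) Q1" "(\<Psi>, subst_agent S P1 x N, subst_agent S Q1 x N) \<in> R"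
            by blast
          have "etrans S \<Psi> Q (AInE K N) (subst_agent S Q1 x N)" using l2e[OF Q1(1)] by blast
          thus ?thesis using Q1(2) P1(2) AInE by blast
        next
          case (AIn K x)
          thus ?thesis using etrans_no_in[OF PC tr] by blast
        next
          case (AOut M as N)
          have lt: "ltrans S \<Psi> P \<alpha> P'" using e2l[OF tr] AOut by blast
          obtain Q' where Q': "ltrans S \<Psi> Q \<alpha> Q'" "(\<Psi>, P', Q') \<in> R" using LL fb lt AOut by fastforce
          have "etrans S \<Psi> Q \<alpha> Q'" using l2e[OF Q'(1)] AOut by blast
          thus ?thesis using Q'(2) by blast
        next
          case ATau
          have lt: "ltrans S \<Psi> P \<alpha> P'" using e2l[OF tr] ATau by blast
          obtain Q' where Q': "ltrans S \<Psi> Q \<alpha> Q'" "(\<Psi>, P', Q') \<in> R" using LL fb lt ATau by fastforce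
          have "etrans S \<Psi> Q \<alpha> Q'" using l2e[OF Q'(1)] ATau by blast
          thus ?thesis using Q'(2) by blast
        qed
      qed
    qed
  next
    assume E: "early_bisim S R"
    show "late_bisim S R"
      unfolding late_bisim_def
    proof (intro allI impI conjI)
      fix \<Psi> P Q assume r: "(\<Psi>, P, Q) \<in> R"
      have EE: "static_eq S \<Psi> P Q \<and> (\<Psi>, Q, P) \<in> R \<and> (\<forall>\<Psi>'. (acomp S \<Psi> \<Psi>', P, Q) \<in> R) \<and>
        (\<forall>\<alpha> P'. fresh_star (bn \<alpha>) \<Psi> \<and> fresh_star (bn \<alpha>) Q \<longrightarrow>
          etrans S \<Psi> P \<alpha> P' \<longrightarrow> (\<exists>Q'. etrans S \<Psi> Q \<alpha> Q' \<and> (\<Psi>, P', Q') \<in> R))"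
        using E r unfolding early_bisim_def by blast
      show "static_eq S \<Psi> P Q" using EE by blast
      show "(\<Psi>, Q, P) \<in> R" using EE by blast
      show "\<And>\<Psi>'. (acomp S \<Psi> \<Psi>', P, Q) \<in> R" using EE by blast
      show "\<And>\<alpha> P'. fresh_star (bn \<alpha>) \<Psi> \<and> fresh_star (bn \<alpha>) Q \<Longrightarrow>
        (case \<alpha> of
           AIn M x \<Rightarrow> ltrans S \<Psi> P \<alpha> P' \<longrightarrow>
              (\<forall>L. \<exists>Q'. ltrans S \<Psi> Q \<alpha> Q' \<and>
                   (\<Psi>, subst_agent S P' x L, subst_agent S Q' x L) \<in> R)
         | _ \<Rightarrow> ltrans S \<Psi> P \<alpha> P' \<longrightarrow> (\<exists>Q'. ltrans S \<Psi> Q \<alpha> Q' \<and> (\<Psi>, P', Q') \<in> R))"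
      proof -
        fix \<alpha> :: "'t act" and P' assume fb: "fresh_star (bn \<alpha>) \<Psi> \<and> fresh_star (bn \<alpha>) Q"
        show "case \<alpha> of
           AIn M x \<Rightarrow> ltrans S \<Psi> P \<alpha> P' \<longrightarrow>
              (\<forall>L. \<exists>Q'. ltrans S \<Psi> Q \<alpha> Q' \<and>
                   (\<Psi>, subst_agent S P' x L, subst_agent S Q' x L) \<in> R)
         | _ \<Rightarrow> ltrans S \<Psi> P \<alpha> P' \<longrightarrow> (\<exists>Q'. ltrans S \<Psi> Q \<alpha> Q' \<and> (\<Psi>, P', Q') \<in> R)"
        proof (cases \<alpha>)
          case (AIn K x)
          have fx: "fresh x Q" using fb AIn by simp
          show ?thesis unfolding AIn act.case
          proof (intro impI allI)
            fix L assume tr: "ltrans S \<Psi> P (AIn K x) P'"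
            have "etrans S \<Psi> P (AInE K L) (subst_agent S P' x L)" using l2e[OF tr] by blast
            moreover have "fresh_star (bn (AInE K L)) \<Psi> \<and> fresh_star (bn (AInE K L)) Q" by simp
            ultimately obtain Q'' where Q'': "etrans S \<Psi> Q (AInE K L) Q''" "(\<Psi>, subst_agent S P' x L, Q'') \<in> R"
              using EE[THEN conjunct2, THEN conjunct2, THEN conjunct2, rule_format, of "AInE K L" "subst_agent S P' x L"] by blast
            obtain Q1 where Q1: "ltrans S \<Psi> Q (AIn K x) Q1" "subst_agent S Q1 x L = Q''"
              using e2l[OF Q''(1)] fx by blast
            show "\<exists>Q'. ltrans S \<Psi> Q (AIn K x) Q' \<and> (\<Psi>, subst_agent S P' x L, subst_agent S Q' x L) \<in> R"
              using Q1 Q''(2) by blast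
          qed
        next
          case (AInE K N)
          thus ?thesis using ltrans_no_inE[OF PC] by (simp, blast)
        next
          case (AOut M as N)
          show ?thesis unfolding AOut act.case
          proof
            assume tr: "ltrans S \<Psi> P (AOut M as N) P'"
            have "etrans S \<Psi> P (AOut M as N) P'" using l2e[OF tr] by blast
            then obtain Q' where Q': "etrans S \<Psi> Q (AOut M as N) Q'" "(\<Psi>, P', Q') \<in> R" using EE fb AOut by blast
            have "ltrans S \<Psi> Q (AOut M as N) Q'" using e2l[OF Q'(1)] by blast
            thus "\<exists>Q'. ltrans S \<Psi> Q (AOut M as N) Q' \<and> (\<Psi>, P', Q') \<in> R" using Q'(2) by blast
          qed
        next
          case ATau
          show ?thesis unfolding ATau act.case
          proof
            assume tr: "ltrans S \<Psi> P ATau P'"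
            have "etrans S \<Psi> P ATau P'" using l2e[OF tr] by blast
            then obtain Q' where Q': "etrans S \<Psi> Q ATau Q'" "(\<Psi>, P', Q') \<in> R" using EE fb ATau by blast
            have "ltrans S \<Psi> Q ATau Q'" using e2l[OF Q'(1)] by blast
            thus "\<exists>Q'. ltrans S \<Psi> Q ATau Q' \<and> (\<Psi>, P', Q') \<in> R" using Q'(2) by blast
          qed
        qed
      qed
    qed
  qed
qed


end
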